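(* For every $(a,b)\in\mathcal E$ there exists a direction $\theta$ in which the unfolded wind-tree surface $X_\infty=X_\infty(a,b)$ admits a strip decomposition.
   Context: $\mathcal E=\{(a,b)\in(0,1)^2:\ \frac1{1-a}=x+y\sqrt D,\ \frac1{1-b}=(1-x)+y\sqrt D,\ x,y\in\mathbb Q,\ D\in\mathbb Z_{>0}\}$. For the wind-tree table $T(a,b)$ ($\mathbb R^2$ minus the $\mathbb Z^2$-translates of $[0,a]\times[0,b]$), $X_\infty$ is the (infinite, $\mathbb Z^2$-periodic) translation surface obtained by unfolding: four copies of $T(a,b)$, indexed by the group generated by the horizontal and vertical reflections, glued along the sides of the obstacles so that billiard trajectories become straight-line flow; equivalently $X_\infty$ is the $\mathbb Z^2$-cover of the compact surface $X_{a,b}$ given by horizontal and vertical displacement. A strip is an isometrically embedded copy of $I\times\mathbb R$ ($I$ an open interval) in $X_\infty$; a strip decomposition in direction $\theta$ is a collection of pairwise disjoint strips whose lines $\{t\}\times\mathbb R$ are in direction $\theta$ and whose closures cover $X_\infty$. *)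

theory Defs
  imports "HOL-Analysis.Analysis"
begin

definition in_obst_int :: "real \<Rightarrow> real \<Rightarrow> real \<times> real \<Rightarrow> bool" where
  "in_obst_int a b p \<longleftrightarrow> (\<exists>m n::int. of_int m < fst p \<and> fst p < of_int m + a \<and>
                                      of_int n < snd p \<and> snd p < of_int n + b)"

definition table_cl :: "real \<Rightarrow> real \<Rightarrow> (real \<times> real) set" where
  "table_cl a b = {p. \<not> in_obst_int a b p}"

definition on_vside :: "real \<Rightarrow> real \<Rightarrow> real \<times> real \<Rightarrow> bool" where
  "on_vside a b p \<longleftrightarrow> (\<exists>m n::int. (fst p = of_int m \<or> fst p = of_int m + a) \<and>
                                   of_int n < snd p \<and> snd p < of_int n + b)"

definition on_hside :: "real \<Rightarrow> real \<Rightarrow> real \<times> real \<Rightarrow> bool" where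
  "on_hside a b p \<longleftrightarrow> (\<exists>m n::int. of_int m < fst p \<and> fst p < of_int m + a \<and>
                                   (snd p = of_int n \<or> snd p = of_int n + b))"

definition is_corner :: "real \<Rightarrow> real \<Rightarrow> real \<times> real \<Rightarrow> bool" where
  "is_corner a b p \<longleftrightarrow> (\<exists>m n::int. (fst p = of_int m \<or> fst p = of_int m + a) \<and>
                                    (snd p = of_int n \<or> snd p = of_int n + b))"

text \<open>Representatives of points of X_infinity: a copy index g (an element of the
  Klein four group generated by the horizontal and vertical reflections; fst g = True
  means the x-coordinate is reflected, snd g = True means the y-coordinate is reflected)
  together with a point of the closed table.\<close>
type_synonym wtrep = "(bool \<times> bool) \<times> (real \<times> real)"

definition XR :: "real \<Rightarrow> real \<Rightarrow> wtrep set" where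
  "XR a b = {z. snd z \<in> table_cl a b}"

text \<open>Gluing: a point on a vertical side in copy g is the same as that point in copy
  (reflection in x) g; similarly for horizontal sides; all four copies of an obstacle
  corner are glued to a single (cone) point.\<close>
definition wt_eq :: "real \<Rightarrow> real \<Rightarrow> wtrep \<Rightarrow> wtrep \<Rightarrow> bool" where
  "wt_eq a b z z' \<longleftrightarrow> snd z = snd z' \<and> snd z \<in> table_cl a b \<and>
     (fst z = fst z'
      \<or> (on_vside a b (snd z) \<and> fst z' = (\<not> fst (fst z), snd (fst z)))
      \<or> (on_hside a b (snd z) \<and> fst z' = (fst (fst z), \<not> snd (fst z)))
      \<or> is_corner a b (snd z))"

definition wt_class :: "real \<Rightarrow> real \<Rightarrow> wtrep \<Rightarrow> wtrep set" where
  "wt_class a b z = {z' \<in> XR a b. wt_eq a b z z'}"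

definition Xinf :: "real \<Rightarrow> real \<Rightarrow> wtrep set set" where
  "Xinf a b = wt_class a b ` XR a b"

definition Xtop :: "real \<Rightarrow> real \<Rightarrow> wtrep set topology" where
  "Xtop a b = topology (\<lambda>U. U \<subseteq> Xinf a b \<and>
      (\<forall>g. openin (top_of_set (table_cl a b)) {p \<in> table_cl a b. wt_class a b (g, p) \<in> U}))"

text \<open>Action of the copy index on displacement vectors: the translation chart of copy g
  is p \<mapsto> g p, so a developed displacement v corresponds to g v in table coordinates.\<close>
definition gmul :: "bool \<times> bool \<Rightarrow> real \<times> real \<Rightarrow> real \<times> real" where
  "gmul g v = ((if fst g then -1 else 1) * fst v, (if snd g then -1 else 1) * snd v)"

definition dirv :: "real \<Rightarrow> real \<times> real" where
  "dirv \<theta> = (cos \<theta>, sin \<theta>)"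

definition nrmv :: "real \<Rightarrow> real \<times> real" where
  "nrmv \<theta> = (- sin \<theta>, cos \<theta>)"

text \<open>A strip in direction theta: the image of an injective map Phi : I x R \<rightarrow> X_infinity
  (I a nonempty open interval) which is locally a Euclidean isometry in the translation
  charts of X_infinity, with linear part (t,s) \<mapsto> s1 t n + s2 s u (s1, s2 = +-1,
  u = (cos theta, sin theta), n = u rotated by pi/2), so that the lines {t} x R go
  in direction theta. Near a point on an obstacle side, the chart continues across the
  side into the reflected copy.\<close>
definition wt_strip :: "real \<Rightarrow> real \<Rightarrow> real \<Rightarrow> wtrep set set \<Rightarrow> bool" where
  "wt_strip a b \<theta> S \<longleftrightarrow>
    (\<exists>(I :: real set) (\<Phi> :: real \<times> real \<Rightarrow> wtrep set) (\<sigma>1 :: real) (\<sigma>2 :: real).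
       is_interval I \<and> open I \<and> I \<noteq> {} \<and> \<sigma>1 \<in> {-1, 1} \<and> \<sigma>2 \<in> {-1, 1} \<and>
       inj_on \<Phi> (I \<times> UNIV) \<and> \<Phi> ` (I \<times> UNIV) \<subseteq> Xinf a b \<and> S = \<Phi> ` (I \<times> UNIV) \<and>
       (\<forall>x0 \<in> I \<times> UNIV. \<exists>\<epsilon>>0. \<exists>g p0. \<Phi> x0 = wt_class a b (g, p0) \<and>
          (\<forall>x \<in> I \<times> UNIV. dist x x0 < \<epsilon> \<longrightarrow>
             (let q = p0 + gmul g ((\<sigma>1 * (fst x - fst x0)) *\<^sub>R nrmv \<theta>
                                   + (\<sigma>2 * (snd x - snd x0)) *\<^sub>R dirv \<theta>)
              in (q \<in> table_cl a b \<and> \<Phi> x = wt_class a b (g, q))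
               \<or> (on_vside a b p0 \<and> in_obst_int a b q \<and>
                  \<Phi> x = wt_class a b ((\<not> fst g, snd g), (2 * fst p0 - fst q, snd q)))
               \<or> (on_hside a b p0 \<and> in_obst_int a b q \<and>
                  \<Phi> x = wt_class a b ((fst g, \<not> snd g), (fst q, 2 * snd p0 - snd q)))))))"

definition wt_strip_decomp :: "real \<Rightarrow> real \<Rightarrow> real \<Rightarrow> wtrep set set set \<Rightarrow> bool" where
  "wt_strip_decomp a b \<theta> \<S> \<longleftrightarrow>
     (\<forall>S \<in> \<S>. wt_strip a b \<theta> S) \<and> pairwise disjnt \<S> \<and>
     (\<forall>z \<in> Xinf a b. \<exists>S \<in> \<S>. z \<in> Xtop a b closure_of S)"

definition wt_E :: "(real \<times> real) set" where
  "wt_E = {(a, b). 0 < a \<and> a < 1 \<and> 0 < b \<and> b < 1 \<and>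
     (\<exists>x y :: real. \<exists>D :: int. x \<in> \<rat> \<and> y \<in> \<rat> \<and> D > 0 \<and>
        1 / (1 - a) = x + y * sqrt (of_int D) \<and>
        1 / (1 - b) = (1 - x) + y * sqrt (of_int D))}"

end

theory Submission
  imports Defs
begin


definition II :: "real \<Rightarrow> real \<Rightarrow> bool" where
  "II A x \<longleftrightarrow> (\<exists>M::int. of_int M < x \<and> x < of_int M + A)"
definition EE :: "real \<Rightarrow> real \<Rightarrow> bool" where
  "EE A x \<longleftrightarrow> (\<exists>M::int. x = of_int M \<or> x = of_int M + A)"

lemma in_obst_iff: "in_obst_int a b p \<longleftrightarrow> II a (fst p) \<and> II b (snd p)"
  unfolding in_obst_int_def II_def by blast
lemma on_vside_iff: "on_vside a b p \<longleftrightarrow> EE a (fst p) \<and> II b (snd p)"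
  unfolding on_vside_def II_def EE_def by blast
lemma on_hside_iff: "on_hside a b p \<longleftrightarrow> II a (fst p) \<and> EE b (snd p)"
  unfolding on_hside_def II_def EE_def by blast
lemma is_corner_iff: "is_corner a b p \<longleftrightarrow> EE a (fst p) \<and> EE b (snd p)"
  unfolding is_corner_def EE_def by blast

definition rx :: "real \<Rightarrow> bool \<Rightarrow> real \<Rightarrow> real" where
  "rx A e x = (if e then A - x else x)"

lemma rx_rx[simp]: "rx A e (rx A e x) = x" by (simp add: rx_def)

lemma II_rx: "II A (rx A e x + of_int m) \<longleftrightarrow> II A x"
proof (cases e)
  case True
  have "II A (A - x + of_int m) \<longleftrightarrow> II A x"
    unfolding II_def
  proof
    assume "\<exists>M::int. of_int M < A - x + of_int m \<and> A - x + of_int m < of_int M + A"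
    then obtain M::int where "of_int M < A - x + of_int m" "A - x + of_int m < of_int M + A" by blast
    then show "\<exists>M::int. of_int M < x \<and> x < of_int M + A"
      by (intro exI[of _ "m - M"]) auto
  next
    assume "\<exists>M::int. of_int M < x \<and> x < of_int M + A"
    then obtain M::int where "of_int M < x" "x < of_int M + A" by blast
    then show "\<exists>M::int. of_int M < A - x + of_int m \<and> A - x + of_int m < of_int M + A"
      by (intro exI[of _ "m - M"]) auto
  qed
  then show ?thesis using True by (simp add: rx_def)
next
  case False
  have "II A (x + of_int m) \<longleftrightarrow> II A x"
    unfolding II_def
  proof
    assume "\<exists>M::int. of_int M < x + of_int m \<and> x + of_int m < of_int M + A"
    then obtain M::int where "of_int M < x + of_int m" "x + of_int m < of_int M + A" by blast
    then show "\<exists>M::int. of_int M < x \<and> x < of_int M + A"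
      by (intro exI[of _ "M - m"]) auto
  next
    assume "\<exists>M::int. of_int M < x \<and> x < of_int M + A"
    then obtain M::int where "of_int M < x" "x < of_int M + A" by blast
    then show "\<exists>M::int. of_int M < x + of_int m \<and> x + of_int m < of_int M + A"
      by (intro exI[of _ "M + m"]) auto
  qed
  then show ?thesis using False by (simp add: rx_def)
qed

lemma EE_rx: "EE A (rx A e x + of_int m) \<longleftrightarrow> EE A x"
proof (cases e)
  case True
  have "EE A (A - x + of_int m) \<longleftrightarrow> EE A x"
    unfolding EE_def
  proof
    assume "\<exists>M::int. A - x + of_int m = of_int M \<or> A - x + of_int m = of_int M + A"
    then obtain M::int where "A - x + of_int m = of_int M \<or> A - x + of_int m = of_int M + A" by blast
    then show "\<exists>M::int. x = of_int M \<or> x = of_int M + A"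
      by (intro exI[of _ "m - M"]) auto
  next
    assume "\<exists>M::int. x = of_int M \<or> x = of_int M + A"
    then obtain M::int where "x = of_int M \<or> x = of_int M + A" by blast
    then show "\<exists>M::int. A - x + of_int m = of_int M \<or> A - x + of_int m = of_int M + A"
      by (intro exI[of _ "m - M"]) auto
  qed
  then show ?thesis using True by (simp add: rx_def)
next
  case False
  have "EE A (x + of_int m) \<longleftrightarrow> EE A x"
    unfolding EE_def
  proof
    assume "\<exists>M::int. x + of_int m = of_int M \<or> x + of_int m = of_int M + A"
    then obtain M::int where "x + of_int m = of_int M \<or> x + of_int m = of_int M + A" by blast
    then show "\<exists>M::int. x = of_int M \<or> x = of_int M + A"
      by (intro exI[of _ "M - m"]) auto
  next
    assume "\<exists>M::int. x = of_int M \<or> x = of_int M + A"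
    then obtain M::int where "x = of_int M \<or> x = of_int M + A" by blast
    then show "\<exists>M::int. x + of_int m = of_int M \<or> x + of_int m = of_int M + A"
      by (intro exI[of _ "M + m"]) auto
  qed
  then show ?thesis using False by (simp add: rx_def)
qed

type_synonym tau = "(bool \<times> bool) \<times> (int \<times> int)"

definition Tp :: "real \<Rightarrow> real \<Rightarrow> tau \<Rightarrow> real \<times> real \<Rightarrow> real \<times> real" where
  "Tp a b \<tau> p = (rx a (fst (fst \<tau>)) (fst p) + of_int (fst (snd \<tau>)),
                 rx b (snd (fst \<tau>)) (snd p) + of_int (snd (snd \<tau>)))"

definition gx :: "bool \<times> bool \<Rightarrow> bool \<times> bool \<Rightarrow> bool \<times> bool" where
  "gx g e = ((fst g \<noteq> fst e), (snd g \<noteq> snd e))"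

definition Tz :: "real \<Rightarrow> real \<Rightarrow> tau \<Rightarrow> wtrep \<Rightarrow> wtrep" where
  "Tz a b \<tau> z = (gx (fst z) (fst \<tau>), Tp a b \<tau> (snd z))"

definition tinv :: "tau \<Rightarrow> tau" where
  "tinv \<tau> = (fst \<tau>, ((if fst (fst \<tau>) then fst (snd \<tau>) else - fst (snd \<tau>)),
                     (if snd (fst \<tau>) then snd (snd \<tau>) else - snd (snd \<tau>))))"

lemma Tp_inv[simp]: "Tp a b (tinv \<tau>) (Tp a b \<tau> p) = p"
  by (cases p) (auto simp: Tp_def tinv_def rx_def)
lemma Tp_inv2[simp]: "Tp a b \<tau> (Tp a b (tinv \<tau>) p) = p"
  by (cases p) (auto simp: Tp_def tinv_def rx_def)
lemma gx_gx[simp]: "gx (gx g e) e = g" by (cases g; cases e) (auto simp: gx_def)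
lemma fst_tinv[simp]: "fst (tinv \<tau>) = fst \<tau>" by (simp add: tinv_def)
lemma Tz_inv[simp]: "Tz a b (tinv \<tau>) (Tz a b \<tau> z) = z"
  by (cases z) (simp add: Tz_def)
lemma Tz_inv2[simp]: "Tz a b \<tau> (Tz a b (tinv \<tau>) z) = z"
  by (cases z) (simp add: Tz_def)

lemma obst_Tp[simp]: "in_obst_int a b (Tp a b \<tau> p) \<longleftrightarrow> in_obst_int a b p"
  by (simp add: in_obst_iff Tp_def II_rx)
lemma vside_Tp[simp]: "on_vside a b (Tp a b \<tau> p) \<longleftrightarrow> on_vside a b p"
  by (simp add: on_vside_iff Tp_def II_rx EE_rx)
lemma hside_Tp[simp]: "on_hside a b (Tp a b \<tau> p) \<longleftrightarrow> on_hside a b p"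
  by (simp add: on_hside_iff Tp_def II_rx EE_rx)
lemma corner_Tp[simp]: "is_corner a b (Tp a b \<tau> p) \<longleftrightarrow> is_corner a b p"
  by (simp add: is_corner_iff Tp_def II_rx EE_rx)
lemma table_Tp[simp]: "Tp a b \<tau> p \<in> table_cl a b \<longleftrightarrow> p \<in> table_cl a b"
  by (simp add: table_cl_def)

lemma Tp_inj[simp]: "Tp a b \<tau> p = Tp a b \<tau> p' \<longleftrightarrow> p = p'"
  by (metis Tp_inv)
lemma Tz_inj[simp]: "Tz a b \<tau> z = Tz a b \<tau> z' \<longleftrightarrow> z = z'"
  by (metis Tz_inv)

lemma gx_inj[simp]: "gx g e = gx g' e \<longleftrightarrow> g = g'"
  by (metis gx_gx)
lemma gx_flipx: "gx g' e = (\<not> fst (gx g e), snd (gx g e)) \<longleftrightarrow> g' = (\<not> fst g, snd g)"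
  by (cases g; cases g'; cases e) (auto simp: gx_def)
lemma gx_flipy: "gx g' e = (fst (gx g e), \<not> snd (gx g e)) \<longleftrightarrow> g' = (fst g, \<not> snd g)"
  by (cases g; cases g'; cases e) (auto simp: gx_def)
lemma wt_eq_Tz[simp]: "wt_eq a b (Tz a b \<tau> z) (Tz a b \<tau> z') \<longleftrightarrow> wt_eq a b z z'"
  unfolding wt_eq_def Tz_def by (simp only: fst_conv snd_conv Tp_inj table_Tp vside_Tp hside_Tp
     corner_Tp gx_inj gx_flipx gx_flipy)

lemma XR_Tz[simp]: "Tz a b \<tau> z \<in> XR a b \<longleftrightarrow> z \<in> XR a b"
  by (simp add: XR_def Tz_def)

lemma class_Tz: "wt_class a b (Tz a b \<tau> z) = Tz a b \<tau> ` wt_class a b z"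
proof -
  have "wt_class a b (Tz a b \<tau> z) = {z'. z' \<in> XR a b \<and> wt_eq a b (Tz a b \<tau> z) z'}"
    by (simp add: wt_class_def)
  also have "\<dots> = Tz a b \<tau> ` {z'. z' \<in> XR a b \<and> wt_eq a b z z'}"
  proof (rule set_eqI, rule iffI)
    fix w assume "w \<in> {z'. z' \<in> XR a b \<and> wt_eq a b (Tz a b \<tau> z) z'}"
    then have "wt_eq a b (Tz a b \<tau> z) (Tz a b \<tau> (Tz a b (tinv \<tau>) w))" "w \<in> XR a b" by auto
    then show "w \<in> Tz a b \<tau> ` {z'. z' \<in> XR a b \<and> wt_eq a b z z'}"
      by (intro image_eqI[of _ _ "Tz a b (tinv \<tau>) w"]) (simp_all only: wt_eq_Tz, auto)
  qed auto
  finally show ?thesis by (simp add: wt_class_def)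
qed

lemma Tp_gmul: "Tp a b \<tau> (p + gmul g v) = Tp a b \<tau> p + gmul (gx g (fst \<tau>)) v"
  by (cases p; cases v; cases g; cases \<tau>)
     (simp add: Tp_def gmul_def gx_def rx_def algebra_simps)

definition Tc :: "real \<Rightarrow> real \<Rightarrow> tau \<Rightarrow> wtrep set \<Rightarrow> wtrep set" where
  "Tc a b \<tau> C = Tz a b \<tau> ` C"

lemma Tc_class: "Tc a b \<tau> (wt_class a b z) = wt_class a b (Tz a b \<tau> z)"
  by (simp add: Tc_def class_Tz)

lemma Tc_inj: "Tc a b \<tau> C = Tc a b \<tau> C' \<Longrightarrow> C = C'"
  unfolding Tc_def by (metis image_inv_into_cancel inj_on_def Tz_inj subset_UNIV inj_on_image_eq_iff)

lemma Tc_Xinf: "C \<in> Xinf a b \<Longrightarrow> Tc a b \<tau> C \<in> Xinf a b"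
  unfolding Xinf_def by (auto simp: Tc_class)

lemma Tp_refl_x: "Tp a b \<tau> (2 * fst p0 - fst q, snd q) =
   (2 * fst (Tp a b \<tau> p0) - fst (Tp a b \<tau> q), snd (Tp a b \<tau> q))"
  by (simp add: Tp_def rx_def algebra_simps)
lemma Tp_refl_y: "Tp a b \<tau> (fst q, 2 * snd p0 - snd q) =
   (fst (Tp a b \<tau> q), 2 * snd (Tp a b \<tau> p0) - snd (Tp a b \<tau> q))"
  by (simp add: Tp_def rx_def algebra_simps)
lemma gx_fx: "gx (\<not> fst g, snd g) e = (\<not> fst (gx g e), snd (gx g e))"
  by (simp add: gx_def)
lemma gx_fy: "gx (fst g, \<not> snd g) e = (fst (gx g e), \<not> snd (gx g e))"
  by (simp add: gx_def)

lemma strip_Tc: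
  assumes "wt_strip a b \<theta> S"
  shows "wt_strip a b \<theta> (Tc a b \<tau> ` S)"
proof -
  obtain I \<Phi> \<sigma>1 \<sigma>2 where I: "is_interval I" "open I" "I \<noteq> {}" and sig: "\<sigma>1 \<in> {-1, 1}" "\<sigma>2 \<in> {-1, 1}"
    and inj: "inj_on \<Phi> (I \<times> (UNIV::real set))" and sub: "\<Phi> ` (I \<times> (UNIV::real set)) \<subseteq> Xinf a b" and S: "S = \<Phi> ` (I \<times> (UNIV::real set))"
    and loc: "\<forall>x0 \<in> I \<times> (UNIV::real set). \<exists>\<epsilon>>0. \<exists>g p0. \<Phi> x0 = wt_class a b (g, p0) \<and>
          (\<forall>x \<in> I \<times> (UNIV::real set). dist x x0 < \<epsilon> \<longrightarrow>
             (let q = p0 + gmul g ((\<sigma>1 * (fst x - fst x0)) *\<^sub>R nrmv \<theta>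
                                   + (\<sigma>2 * (snd x - snd x0)) *\<^sub>R dirv \<theta>)
              in (q \<in> table_cl a b \<and> \<Phi> x = wt_class a b (g, q))
               \<or> (on_vside a b p0 \<and> in_obst_int a b q \<and>
                  \<Phi> x = wt_class a b ((\<not> fst g, snd g), (2 * fst p0 - fst q, snd q)))
               \<or> (on_hside a b p0 \<and> in_obst_int a b q \<and>
                  \<Phi> x = wt_class a b ((fst g, \<not> snd g), (fst q, 2 * snd p0 - snd q)))))"
    using assms unfolding wt_strip_def by blast
  define \<Psi> where "\<Psi> = Tc a b \<tau> \<circ> \<Phi>"
  have "inj_on \<Psi> (I \<times> (UNIV::real set))"
    using inj unfolding \<Psi>_def inj_on_def by (auto dest: Tc_inj)
  moreover have "\<Psi> ` (I \<times> (UNIV::real set)) \<subseteq> Xinf a b"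
    using sub unfolding \<Psi>_def by (auto intro: Tc_Xinf)
  moreover have "Tc a b \<tau> ` S = \<Psi> ` (I \<times> (UNIV::real set))"
    unfolding S \<Psi>_def by (simp add: image_comp)
  moreover have "\<forall>x0 \<in> I \<times> (UNIV::real set). \<exists>\<epsilon>>0. \<exists>g p0. \<Psi> x0 = wt_class a b (g, p0) \<and>
          (\<forall>x \<in> I \<times> (UNIV::real set). dist x x0 < \<epsilon> \<longrightarrow>
             (let q = p0 + gmul g ((\<sigma>1 * (fst x - fst x0)) *\<^sub>R nrmv \<theta>
                                   + (\<sigma>2 * (snd x - snd x0)) *\<^sub>R dirv \<theta>)
              in (q \<in> table_cl a b \<and> \<Psi> x = wt_class a b (g, q))
               \<or> (on_vside a b p0 \<and> in_obst_int a b q \<and>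
                  \<Psi> x = wt_class a b ((\<not> fst g, snd g), (2 * fst p0 - fst q, snd q)))
               \<or> (on_hside a b p0 \<and> in_obst_int a b q \<and>
                  \<Psi> x = wt_class a b ((fst g, \<not> snd g), (fst q, 2 * snd p0 - snd q)))))"
  proof
    fix x0 assume x0: "x0 \<in> I \<times> (UNIV::real set)"
    obtain \<epsilon> g p0 where ep: "\<epsilon> > 0" and c0: "\<Phi> x0 = wt_class a b (g, p0)"
      and L: "\<forall>x \<in> I \<times> (UNIV::real set). dist x x0 < \<epsilon> \<longrightarrow>
             (let q = p0 + gmul g ((\<sigma>1 * (fst x - fst x0)) *\<^sub>R nrmv \<theta>
                                   + (\<sigma>2 * (snd x - snd x0)) *\<^sub>R dirv \<theta>)
              in (q \<in> table_cl a b \<and> \<Phi> x = wt_class a b (g, q))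
               \<or> (on_vside a b p0 \<and> in_obst_int a b q \<and>
                  \<Phi> x = wt_class a b ((\<not> fst g, snd g), (2 * fst p0 - fst q, snd q)))
               \<or> (on_hside a b p0 \<and> in_obst_int a b q \<and>
                  \<Phi> x = wt_class a b ((fst g, \<not> snd g), (fst q, 2 * snd p0 - snd q))))"
      using loc x0 by metis
    show "\<exists>\<epsilon>>0. \<exists>g p0. \<Psi> x0 = wt_class a b (g, p0) \<and>
          (\<forall>x \<in> I \<times> (UNIV::real set). dist x x0 < \<epsilon> \<longrightarrow>
             (let q = p0 + gmul g ((\<sigma>1 * (fst x - fst x0)) *\<^sub>R nrmv \<theta>
                                   + (\<sigma>2 * (snd x - snd x0)) *\<^sub>R dirv \<theta>)
              in (q \<in> table_cl a b \<and> \<Psi> x = wt_class a b (g, q))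
               \<or> (on_vside a b p0 \<and> in_obst_int a b q \<and>
                  \<Psi> x = wt_class a b ((\<not> fst g, snd g), (2 * fst p0 - fst q, snd q)))
               \<or> (on_hside a b p0 \<and> in_obst_int a b q \<and>
                  \<Psi> x = wt_class a b ((fst g, \<not> snd g), (fst q, 2 * snd p0 - snd q)))))"
    proof (intro exI conjI ballI impI)
      show "\<epsilon> > 0" by fact
      show "\<Psi> x0 = wt_class a b (gx g (fst \<tau>), Tp a b \<tau> p0)"
        using c0 by (simp add: \<Psi>_def Tc_class Tz_def)
      fix x assume x: "x \<in> I \<times> (UNIV::real set)" "dist x x0 < \<epsilon>"
      define d where "d = (\<sigma>1 * (fst x - fst x0)) *\<^sub>R nrmv \<theta> + (\<sigma>2 * (snd x - snd x0)) *\<^sub>R dirv \<theta>"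
      define q where "q = p0 + gmul g d"
      have qq: "Tp a b \<tau> p0 + gmul (gx g (fst \<tau>)) d = Tp a b \<tau> q"
        by (simp add: q_def Tp_gmul)
      have H: "(q \<in> table_cl a b \<and> \<Phi> x = wt_class a b (g, q))
               \<or> (on_vside a b p0 \<and> in_obst_int a b q \<and>
                  \<Phi> x = wt_class a b ((\<not> fst g, snd g), (2 * fst p0 - fst q, snd q)))
               \<or> (on_hside a b p0 \<and> in_obst_int a b q \<and>
                  \<Phi> x = wt_class a b ((fst g, \<not> snd g), (fst q, 2 * snd p0 - snd q)))"
        using L x unfolding Let_def d_def q_def by blast
      show "let q = Tp a b \<tau> p0 + gmul (gx g (fst \<tau>)) ((\<sigma>1 * (fst x - fst x0)) *\<^sub>R nrmv \<theta>
                                   + (\<sigma>2 * (snd x - snd x0)) *\<^sub>R dirv \<theta>)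
              in (q \<in> table_cl a b \<and> \<Psi> x = wt_class a b (gx g (fst \<tau>), q))
               \<or> (on_vside a b (Tp a b \<tau> p0) \<and> in_obst_int a b q \<and>
                  \<Psi> x = wt_class a b ((\<not> fst (gx g (fst \<tau>)), snd (gx g (fst \<tau>))), (2 * fst (Tp a b \<tau> p0) - fst q, snd q)))
               \<or> (on_hside a b (Tp a b \<tau> p0) \<and> in_obst_int a b q \<and>
                  \<Psi> x = wt_class a b ((fst (gx g (fst \<tau>)), \<not> snd (gx g (fst \<tau>))), (fst q, 2 * snd (Tp a b \<tau> p0) - snd q)))"
        unfolding Let_def d_def[symmetric] qq
        using H by (auto simp: \<Psi>_def Tc_class Tz_def Tp_refl_x Tp_refl_y gx_fx gx_fy)
    qed
  qed
  ultimately show ?thesis unfolding wt_strip_def using I sig by blast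
qed



definition trw :: "real \<Rightarrow> real \<Rightarrow> real" where
  "trw L v = (let j = \<lfloor>v / L\<rfloor> in if even j then v - of_int j * L else (of_int j + 1) * L - v)"
definition tro :: "real \<Rightarrow> real \<Rightarrow> bool" where
  "tro L v = odd \<lfloor>v / L\<rfloor>"

lemma floor_div_eq:
  assumes "L > 0" "of_int j * L \<le> v" "v < (of_int j + 1) * L"
  shows "\<lfloor>v / L\<rfloor> = j"
proof -
  have "of_int j \<le> v / L" using assms by (simp add: pos_le_divide_eq)
  moreover have "v / L < of_int j + 1" using assms by (simp add: pos_divide_less_eq)
  ultimately show ?thesis by (simp add: floor_eq_iff)
qed

lemma trw_piece:
  assumes "L > 0" "of_int j * L \<le> v" "v \<le> (of_int j + 1) * L"
  shows "trw L v = (if even j then v - of_int j * L else (of_int j + 1) * L - v)"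
proof (cases "v < (of_int j + 1) * L")
  case True
  then show ?thesis using floor_div_eq[OF assms(1,2) True] by (simp add: trw_def)
next
  case False
  then have v: "v = (of_int (j+1)) * L" using assms by simp
  have "\<lfloor>v / L\<rfloor> = j + 1" using v assms(1) by simp
  then show ?thesis using v by (auto simp: trw_def algebra_simps)
qed

lemma tro_piece:
  assumes "L > 0" "of_int j * L \<le> v" "v < (of_int j + 1) * L"
  shows "tro L v = odd j"
  using floor_div_eq[OF assms] by (simp add: tro_def)

lemma trw_range: "L > 0 \<Longrightarrow> 0 \<le> trw L v \<and> trw L v \<le> L"
proof -
  assume L: "L > 0"
  define j where "j = \<lfloor>v / L\<rfloor>"
  have "of_int j \<le> v / L" "v / L < of_int j + 1" unfolding j_def by linarith+
  then have "of_int j * L \<le> v" "v < (of_int j + 1) * L" using L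
    by (simp_all add: pos_le_divide_eq pos_divide_less_eq)
  then show ?thesis using trw_piece[OF L, of j v] L by (auto simp: algebra_simps)
qed

lemma table_free: "a \<le> x \<Longrightarrow> x \<le> 1 \<Longrightarrow> (x, y) \<in> table_cl a b"
proof -
  assume "a \<le> x" "x \<le> 1"
  then have "\<not> II a x" unfolding II_def
  proof (clarify)
    fix M :: int assume "a \<le> x" "x \<le> 1" "of_int M < x" "x < of_int M + a"
    then have "of_int M < (1::real)" "(0::real) < of_int M + 1" by linarith+
    then have "M = 0" by linarith
    then show False using \<open>a \<le> x\<close> \<open>x < of_int M + a\<close> by simp
  qed
  then show ?thesis by (simp add: table_cl_def in_obst_iff)
qed

lemma table_free_shift: "of_int m + a \<le> x \<Longrightarrow> x \<le> of_int m + 1 \<Longrightarrow> (x, y) \<in> table_cl a b"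
proof -
  assume "of_int m + a \<le> x" "x \<le> of_int m + 1"
  then have "(x - of_int m, y) \<in> table_cl a b" by (intro table_free) auto
  then have "Tp a b ((False,False),(m,0)) (x - of_int m, y) \<in> table_cl a b" by simp
  then show ?thesis by (simp add: Tp_def rx_def)
qed

lemma table_corr: "of_int n + b \<le> y \<Longrightarrow> y \<le> of_int n + 1 \<Longrightarrow> (x, y) \<in> table_cl a b"
proof -
  assume "of_int n + b \<le> y" "y \<le> of_int n + 1"
  then have "\<not> II b y" unfolding II_def
  proof (clarify)
    fix M :: int assume h: "of_int n + b \<le> y" "y \<le> of_int n + 1" "of_int M < y" "y < of_int M + b"
    then have "of_int M < of_int n + (1::real)" "of_int n < (of_int M::real)" by linarith+
    then have "M < n + 1" "n < M" by (metis of_int_1 of_int_add of_int_less_iff)+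
    then show False by linarith
  qed
  then show ?thesis by (simp add: table_cl_def in_obst_iff)
qed



lemma trw_fold:
  assumes L: "L > 0"
  shows "\<exists>j::int. of_int j * L \<le> v \<and> v < (of_int j + 1) * L \<and> trw L v = (if even j then v - of_int j * L else (of_int j + 1) * L - v) \<and> tro L v = odd j"
proof -
  define j where "j = \<lfloor>v / L\<rfloor>"
  have "of_int j \<le> v / L" "v / L < of_int j + 1" unfolding j_def by linarith+
  then have "of_int j * L \<le> v" "v < (of_int j + 1) * L" using L
    by (simp_all add: pos_le_divide_eq pos_divide_less_eq)
  then show ?thesis using trw_piece[OF L, of j v] tro_piece[OF L, of j v] by (intro exI[of _ j]) auto
qed

lemma trw_inj:
  assumes L: "L > 0" and e: "trw L v = trw L v'" and c: "tro L v = tro L v' \<or> trw L v = 0 \<or> trw L v = L"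
  shows "\<exists>k::int. v' = v + of_int k * L"
proof -
  obtain j where j: "of_int j * L \<le> v" "v < (of_int j + 1) * L" "trw L v = (if even j then v - of_int j * L else (of_int j + 1) * L - v)" "tro L v = odd j"
    using trw_fold[OF L] by blast
  obtain j' where j': "of_int j' * L \<le> v'" "v' < (of_int j' + 1) * L" "trw L v' = (if even j' then v' - of_int j' * L else (of_int j' + 1) * L - v')" "tro L v' = odd j'"
    using trw_fold[OF L] by blast
  show ?thesis
  proof (cases "tro L v = tro L v'")
    case True
    then have "even j = even j'" using j j' by simp
    then show ?thesis using e j j'
      by (cases "even j") (rule exI[of _ "j' - j"]; simp add: algebra_simps)+
  next
    case False
    then have z: "trw L v = 0 \<or> trw L v = L" using c by simp
    have "\<exists>k::int. v = of_int k * L" using z j L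
      by (cases "even j") (auto intro: exI[of _ j] exI[of _ "j+1"] simp: algebra_simps)
    then obtain k::int where k: "v = of_int k * L" by blast
    have "\<exists>k::int. v' = of_int k * L" using z j' L e
      by (cases "even j'") (auto intro: exI[of _ j'] exI[of _ "j'+1"] simp: algebra_simps)
    then obtain k'::int where k': "v' = of_int k' * L" by blast
    show ?thesis using k k' by (intro exI[of _ "k' - k"]) (simp add: algebra_simps)
  qed
qed

lemma int_small_zero: "\<bar>of_int k * (P::real)\<bar> < 1 \<Longrightarrow> P \<ge> 1 \<Longrightarrow> k = 0"
proof (rule ccontr)
  assume h: "\<bar>of_int k * P\<bar> < 1" "P \<ge> 1" "k \<noteq> 0"
  then have "\<bar>of_int k::real\<bar> \<ge> 1" by linarith
  then have "\<bar>of_int k::real\<bar> * P \<ge> 1 * 1" using h(2) by (intro mult_mono) auto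
  then have "\<bar>of_int k * P\<bar> \<ge> 1 * 1" using h(2) by (simp add: abs_mult)
  then show False using h(1) by simp
qed

locale wtp =
  fixes a b s c th :: real and pp qq :: int
  assumes a0: "0 < a" and a1: "a < 1" and b0: "0 < b" and b1: "b < 1"
    and pp1: "pp \<ge> 1" and qq_even: "even qq" and qq0: "qq > 0"
    and sp: "s * (1 - a) = of_int pp" and sq: "s * a = of_int qq * (1 - b)"
    and c0: "c > 0" and cs: "c * c * (1 + s * s) = 1"
    and cth: "cos th = c" and sth: "sin th = s * c"
begin

lemma s0: "s > 0"
proof -
  have "s * (1 - a) > 0" using sp pp1 by simp
  then show ?thesis using a1 by (simp add: zero_less_mult_iff)
qed

lemma nrm: "nrmv th = (- (s * c), c)" by (simp add: nrmv_def cth sth)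
lemma drv: "dirv th = (c, s * c)" by (simp add: dirv_def cth sth)

definition kap where "kap = c * (1 + s * s)"
lemma kap0: "kap > 0" using c0 s0 by (simp add: kap_def add_pos_nonneg)
lemma ckap: "c * kap = 1" using cs by (simp add: kap_def algebra_simps)

definition dvec :: "real \<times> real \<Rightarrow> real \<times> real \<Rightarrow> real \<times> real" where
  "dvec x x0 = ((1 * (fst x - fst x0)) *\<^sub>R nrmv th + (1 * (snd x - snd x0)) *\<^sub>R dirv th)"

lemma dvec_eq: "dvec x x0 = ((fst x - fst x0) * (- (s * c)) + (snd x - snd x0) * c,
                           (fst x - fst x0) * c + (snd x - snd x0) * (s * c))"
  by (simp add: dvec_def nrm drv)

lemma dvec_bound: "\<bar>fst (dvec x x0)\<bar> \<le> dist x x0 \<and> \<bar>snd (dvec x x0)\<bar> \<le> dist x x0"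
proof -
  define dt where "dt = fst x - fst x0"
  define du where "du = snd x - snd x0"
  have d: "dist x x0 = sqrt (dt^2 + du^2)"
    by (simp add: dist_prod_def dist_real_def dt_def du_def power2_abs)
  have "(fst (dvec x x0))^2 + (snd (dvec x x0))^2 = (dt^2 + du^2) * (c * c * (1 + s * s))"
    by (simp add: dvec_eq dt_def[symmetric] du_def[symmetric] power2_eq_square algebra_simps)
  then have e: "(fst (dvec x x0))^2 + (snd (dvec x x0))^2 = dt^2 + du^2" using cs by simp
  have "\<bar>fst (dvec x x0)\<bar> = sqrt ((fst (dvec x x0))^2)" by simp
  also have "\<dots> \<le> sqrt (dt^2 + du^2)" by (subst e[symmetric]) (rule real_sqrt_le_mono, simp)
  finally have 1: "\<bar>fst (dvec x x0)\<bar> \<le> dist x x0" using d by simp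
  have "\<bar>snd (dvec x x0)\<bar> = sqrt ((snd (dvec x x0))^2)" by simp
  also have "\<dots> \<le> sqrt (dt^2 + du^2)" by (subst e[symmetric]) (rule real_sqrt_le_mono, simp)
  finally have 2: "\<bar>snd (dvec x x0)\<bar> \<le> dist x x0" using d by simp
  show ?thesis using 1 2 by simp
qed

definition LOC :: "(real \<times> real \<Rightarrow> wtrep set) \<Rightarrow> (real \<times> real) set \<Rightarrow> real \<times> real \<Rightarrow> bool" where
  "LOC \<Phi> J x0 \<longleftrightarrow> (\<exists>\<epsilon>>0. \<exists>g p0. \<Phi> x0 = wt_class a b (g, p0) \<and>
          (\<forall>x \<in> J. dist x x0 < \<epsilon> \<longrightarrow>
             (let q = p0 + gmul g ((1 * (fst x - fst x0)) *\<^sub>R nrmv th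
                                   + (1 * (snd x - snd x0)) *\<^sub>R dirv th)
              in (q \<in> table_cl a b \<and> \<Phi> x = wt_class a b (g, q))
               \<or> (on_vside a b p0 \<and> in_obst_int a b q \<and>
                  \<Phi> x = wt_class a b ((\<not> fst g, snd g), (2 * fst p0 - fst q, snd q)))
               \<or> (on_hside a b p0 \<and> in_obst_int a b q \<and>
                  \<Phi> x = wt_class a b ((fst g, \<not> snd g), (fst q, 2 * snd p0 - snd q))))))"

definition LOCD :: "(real \<times> real \<Rightarrow> wtrep set) \<Rightarrow> bool \<times> bool \<Rightarrow> real \<times> real \<Rightarrow> real \<times> real \<Rightarrow> real \<times> real \<Rightarrow> bool" where
  "LOCD \<Phi> g pt x0 x \<longleftrightarrow>
       (pt + gmul g (dvec x x0) \<in> table_cl a b \<and> \<Phi> x = wt_class a b (g, pt + gmul g (dvec x x0)))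
     \<or> (on_vside a b pt \<and> in_obst_int a b (pt + gmul g (dvec x x0)) \<and>
        \<Phi> x = wt_class a b ((\<not> fst g, snd g), (2 * fst pt - fst (pt + gmul g (dvec x x0)), snd (pt + gmul g (dvec x x0)))))
     \<or> (on_hside a b pt \<and> in_obst_int a b (pt + gmul g (dvec x x0)) \<and>
        \<Phi> x = wt_class a b ((fst g, \<not> snd g), (fst (pt + gmul g (dvec x x0)), 2 * snd pt - snd (pt + gmul g (dvec x x0)))))"

lemma LOCI:
  assumes "e > 0" "\<Phi> x0 = wt_class a b (g, pt)"
    and "\<And>x. x \<in> J \<Longrightarrow> \<bar>fst (dvec x x0)\<bar> < e \<Longrightarrow> \<bar>snd (dvec x x0)\<bar> < e \<Longrightarrow> LOCD \<Phi> g pt x0 x"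
  shows "LOC \<Phi> J x0"
  unfolding LOC_def
proof (intro exI[of _ e] exI[of _ g] exI[of _ pt] conjI ballI impI)
  fix x assume x: "x \<in> J" "dist x x0 < e"
  have "\<bar>fst (dvec x x0)\<bar> < e" "\<bar>snd (dvec x x0)\<bar> < e" using dvec_bound[of x x0] x by auto
  then show "let q = pt + gmul g ((1 * (fst x - fst x0)) *\<^sub>R nrmv th + (1 * (snd x - snd x0)) *\<^sub>R dirv th)
              in (q \<in> table_cl a b \<and> \<Phi> x = wt_class a b (g, q))
               \<or> (on_vside a b pt \<and> in_obst_int a b q \<and>
                  \<Phi> x = wt_class a b ((\<not> fst g, snd g), (2 * fst pt - fst q, snd q)))
               \<or> (on_hside a b pt \<and> in_obst_int a b q \<and>
                  \<Phi> x = wt_class a b ((fst g, \<not> snd g), (fst q, 2 * snd pt - snd q)))"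
    using assms(3)[OF x(1)] unfolding Let_def dvec_def[symmetric] LOCD_def by blast
qed (use assms in auto)

lemma gmul_eq: "gmul g v = ((if fst g then -1 else 1) * fst v, (if snd g then -1 else 1) * snd v)"
  by (simp add: gmul_def)

end


context wtp begin

definition PC :: "real \<times> real \<Rightarrow> real \<times> real" where
  "PC x = (a - fst x * (s * c) + snd x * c, fst x * c + snd x * (s * c))"
definition Fc :: "real \<times> real \<Rightarrow> real \<times> real" where
  "Fc P = (a + trw (1 - a) (fst P - a), snd P)"
definition Gc :: "real \<times> real \<Rightarrow> bool \<times> bool" where
  "Gc P = (tro (1 - a) (fst P - a), False)"
definition Phic :: "real \<times> real \<Rightarrow> wtrep set" where
  "Phic x = wt_class a b (Gc (PC x), Fc (PC x))"
definition Ic :: "real set" where "Ic = {0<..<b * c}"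

lemma PC_dvec: "fst (PC x) = fst (PC x0) + fst (dvec x x0)" "snd (PC x) = snd (PC x0) + snd (dvec x x0)"
  by (simp_all add: PC_def dvec_eq algebra_simps)

lemma PC_lam: "snd (PC x) - s * (fst (PC x) - a) = fst x * kap"
  by (simp add: PC_def kap_def algebra_simps)

lemma Ic_lam: "fst x \<in> Ic \<Longrightarrow> 0 < fst x * kap \<and> fst x * kap < b"
proof -
  assume "fst x \<in> Ic"
  then have "0 < fst x" "fst x < b * c" by (auto simp: Ic_def)
  then have "fst x * kap < b * c * kap" using kap0 by simp
  then show ?thesis using \<open>0 < fst x\<close> kap0 ckap by (simp add: mult.assoc)
qed

lemma L1: "1 - a > 0" using a1 by simp

lemma Fc_table: "Fc P \<in> table_cl a b"
  using trw_range[OF L1, of "fst P - a"] by (cases P) (auto simp: Fc_def intro!: table_free)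

lemma spL: "s * (of_int j * (1 - a)) = of_int j * of_int pp"
proof -
  have "s * (of_int j * (1 - a)) = of_int j * (s * (1 - a))" by (simp add: algebra_simps)
  then show ?thesis using sp by simp
qed

lemma Phic_loc:
  assumes x0: "x0 \<in> Ic \<times> (UNIV :: real set)"
  shows "LOC Phic (Ic \<times> UNIV) x0"
proof -
  define L where "L = 1 - a"
  have L: "L > 0" using L1 L_def by simp
  define X0 where "X0 = fst (PC x0)"
  define Y0 where "Y0 = snd (PC x0)"
  obtain j where j: "of_int j * L \<le> X0 - a" "X0 - a < (of_int j + 1) * L"
    "trw L (X0 - a) = (if even j then X0 - a - of_int j * L else (of_int j + 1) * L - (X0 - a))"
    "tro L (X0 - a) = odd j" using trw_fold[OF L] by blast
  have lam0: "0 < Y0 - s * (X0 - a)" "Y0 - s * (X0 - a) < b"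
    using Ic_lam[of x0] x0 PC_lam[of x0] by (auto simp: X0_def Y0_def)
  have Gc0: "Gc (PC x0) = (odd j, False)" using j by (simp add: Gc_def X0_def L_def)
  have Fc0: "Fc (PC x0) = (a + (if even j then X0 - a - of_int j * L else (of_int j + 1) * L - (X0 - a)), Y0)"
    using j by (simp add: Fc_def X0_def Y0_def L_def)
  show ?thesis
  proof (cases "of_int j * L < X0 - a")
    case True
    define e where "e = min (X0 - a - of_int j * L) ((of_int j + 1) * L - (X0 - a))"
    have e: "e > 0" using True j by (simp add: e_def)
    show ?thesis
    proof (rule LOCI[OF e, where g = "(odd j, False)" and pt = "Fc (PC x0)"])
      show "Phic x0 = wt_class a b ((odd j, False), Fc (PC x0))" using Gc0 by (simp add: Phic_def)
      fix x assume x: "x \<in> Ic \<times> UNIV" "\<bar>fst (dvec x x0)\<bar> < e" "\<bar>snd (dvec x x0)\<bar> < e"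
      define dx where "dx = fst (dvec x x0)"
      define dy where "dy = snd (dvec x x0)"
      have X: "fst (PC x) = X0 + dx" "snd (PC x) = Y0 + dy"
        using PC_dvec[of x x0] by (simp_all add: X0_def Y0_def dx_def dy_def)
      have r: "of_int j * L \<le> X0 + dx - a" "X0 + dx - a < (of_int j + 1) * L"
        using x(2) by (auto simp: e_def dx_def)
      have FcX: "Fc (PC x) = (a + (if even j then X0 + dx - a - of_int j * L else (of_int j + 1) * L - (X0 + dx - a)), Y0 + dy)"
        using trw_piece[OF L r(1) less_imp_le[OF r(2)]] X by (simp add: Fc_def L_def)
      have GcX: "Gc (PC x) = (odd j, False)"
        using tro_piece[OF L r] X by (simp add: Gc_def L_def)
      have q: "Fc (PC x0) + gmul (odd j, False) (dvec x x0) = Fc (PC x)"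
        using FcX Fc0 by (simp add: gmul_eq dx_def[symmetric] dy_def[symmetric])
      show "LOCD Phic (odd j, False) (Fc (PC x0)) x0 x"
        unfolding LOCD_def q using Fc_table GcX by (simp add: Phic_def)
    qed
  next
    case False
    then have jx: "X0 - a = of_int j * L" using j by simp
    have Y0r: "0 < Y0 - of_int j * of_int pp" "Y0 - of_int j * of_int pp < b"
      using lam0 jx spL by (auto simp: L_def)
    define e where "e = min (min a L) (min (Y0 - of_int j * of_int pp) (of_int j * of_int pp + b - Y0))"
    have e: "e > 0" using Y0r a0 L by (simp add: e_def)
    define x0' where "x0' = (if even j then a else 1)"
    have Fc0': "Fc (PC x0) = (x0', Y0)" using Fc0 jx by (simp add: x0'_def L_def algebra_simps)
    have "EE a x0'" unfolding EE_def x0'_def by (cases "even j") (auto intro: exI[of _ 0] exI[of _ 1])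
    moreover have "II b Y0" unfolding II_def using Y0r by (intro exI[of _ "j * pp"]) auto
    ultimately have vs: "on_vside a b (x0', Y0)" by (simp add: on_vside_iff)
    show ?thesis
    proof (rule LOCI[OF e, where g = "(odd j, False)" and pt = "(x0', Y0)"])
      show "Phic x0 = wt_class a b ((odd j, False), (x0', Y0))" using Gc0 Fc0' by (simp add: Phic_def)
      fix x assume x: "x \<in> Ic \<times> UNIV" "\<bar>fst (dvec x x0)\<bar> < e" "\<bar>snd (dvec x x0)\<bar> < e"
      define dx where "dx = fst (dvec x x0)"
      define dy where "dy = snd (dvec x x0)"
      have X: "fst (PC x) = X0 + dx" "snd (PC x) = Y0 + dy"
        using PC_dvec[of x x0] by (simp_all add: X0_def Y0_def dx_def dy_def)
      have dxe: "\<bar>dx\<bar> < e" "\<bar>dy\<bar> < e" using x by (auto simp: dx_def dy_def)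
      show "LOCD Phic (odd j, False) (x0', Y0) x0 x"
      proof (cases "dx \<ge> 0")
        case True
        have r: "of_int j * L \<le> X0 + dx - a" "X0 + dx - a < (of_int j + 1) * L"
          using True dxe jx by (auto simp: e_def algebra_simps)
        have FcX: "Fc (PC x) = (a + (if even j then X0 + dx - a - of_int j * L else (of_int j + 1) * L - (X0 + dx - a)), Y0 + dy)"
          using trw_piece[OF L r(1) less_imp_le[OF r(2)]] X by (simp add: Fc_def L_def)
        have GcX: "Gc (PC x) = (odd j, False)"
          using tro_piece[OF L r] X by (simp add: Gc_def L_def)
        have q: "(x0', Y0) + gmul (odd j, False) (dvec x x0) = Fc (PC x)"
          using FcX jx by (simp add: gmul_eq dx_def[symmetric] dy_def[symmetric] x0'_def L_def algebra_simps)
        show ?thesis unfolding LOCD_def q using Fc_table GcX by (simp add: Phic_def)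
      next
        case False
        have r: "of_int (j - 1) * L \<le> X0 + dx - a" "X0 + dx - a < (of_int (j - 1) + 1) * L"
          using False dxe jx by (auto simp: e_def algebra_simps)
        have FcX: "Fc (PC x) = (a + (if even (j - 1) then X0 + dx - a - of_int (j - 1) * L else (of_int (j - 1) + 1) * L - (X0 + dx - a)), Y0 + dy)"
          using trw_piece[OF L r(1) less_imp_le[OF r(2)]] X by (simp add: Fc_def L_def)
        have GcX: "Gc (PC x) = (odd (j - 1), False)"
          using tro_piece[OF L r] X by (simp add: Gc_def L_def)
        define q where "q = (x0', Y0) + gmul (odd j, False) (dvec x x0)"
        have qe: "q = (if even j then a + dx else 1 - dx, Y0 + dy)"
          by (simp add: q_def gmul_eq dx_def[symmetric] dy_def[symmetric] x0'_def)
        have "II a (if even j then a + dx else 1 - dx)" unfolding II_def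
          using False dxe by (cases "even j") (auto simp: e_def intro: exI[of _ 0] exI[of _ 1])
        moreover have "II b (Y0 + dy)" unfolding II_def
          using dxe by (intro exI[of _ "j * pp"]) (auto simp: e_def)
        ultimately have obs: "in_obst_int a b q" by (simp add: in_obst_iff qe)
        have "Fc (PC x) = (2 * fst (x0', Y0) - fst q, snd q)"
          using FcX jx by (simp add: qe x0'_def L_def algebra_simps)
        moreover have "Gc (PC x) = (\<not> fst (odd j, False), snd (odd j, False))" using GcX by simp
        ultimately show ?thesis using vs obs unfolding LOCD_def q_def[symmetric] by (simp add: Phic_def)
      qed
    qed
  qed
qed

end


lemma class_eq_D:
  assumes "z' \<in> XR a b" "wt_class a b z = wt_class a b z'"
  shows "wt_eq a b z z'"
proof -
  have "z' \<in> wt_class a b z'" using assms(1) by (auto simp: wt_class_def wt_eq_def XR_def)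
  then have "z' \<in> wt_class a b z" using assms(2) by simp
  then show ?thesis by (simp add: wt_class_def)
qed

context wtp begin

lemma PC_inj: "PC x = PC x' \<Longrightarrow> x = x'"
proof -
  assume h: "PC x = PC x'"
  have "fst x * kap = fst x' * kap" using PC_lam[of x] PC_lam[of x'] h by metis
  then have t: "fst x = fst x'" using kap0 by (metis less_irrefl mult_right_cancel)
  have "fst (PC x) = fst (PC x')" using h by simp
  then have "snd x * c = snd x' * c" using t by (simp add: PC_def)
  then have "snd x = snd x'" using c0 by simp
  then show ?thesis using t by (simp add: prod_eq_iff)
qed

lemma EE_col: "a \<le> x \<Longrightarrow> x \<le> 1 \<Longrightarrow> EE a x \<Longrightarrow> x = a \<or> x = 1"
proof -
  assume h: "a \<le> x" "x \<le> 1" "EE a x"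
  then obtain M :: int where M: "x = of_int M \<or> x = of_int M + a" unfolding EE_def by blast
  show ?thesis
  proof (cases "x = of_int M")
    case True
    then have "(0::real) < of_int M" "of_int M \<le> (1::real)" using h a0 by auto
    then have "M = 1" by linarith
    then show ?thesis using True by simp
  next
    case False
    then have "x = of_int M + a" using M by simp
    then have "(0::real) \<le> of_int M" "of_int M < (1::real)" using h a0 a1 by auto
    then have "M = 0" by linarith
    then show ?thesis using \<open>x = of_int M + a\<close> by simp
  qed
qed

lemma not_II_col: "a \<le> x \<Longrightarrow> x \<le> 1 \<Longrightarrow> \<not> II a x"
  unfolding II_def
proof (clarify)
  fix M :: int assume h: "a \<le> x" "x \<le> 1" "of_int M < x" "x < of_int M + a"
  then have "of_int M < (1::real)" "(0::real) < of_int M" by linarith+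
  then have "M < 1" "0 < M" by simp_all
  then show False by simp
qed

lemma Phic_inj: "inj_on Phic (Ic \<times> UNIV)"
proof (rule inj_onI)
  fix x x' assume x: "x \<in> Ic \<times> UNIV" and x': "x' \<in> Ic \<times> UNIV" and e: "Phic x = Phic x'"
  define P where "P = PC x"
  define P' where "P' = PC x'"
  define L where "L = 1 - a"
  have L: "L > 0" using L1 by (simp add: L_def)
  have "wt_eq a b (Gc P, Fc P) (Gc P', Fc P')"
    using e Fc_table[of P'] unfolding Phic_def P_def P'_def by (intro class_eq_D) (auto simp: XR_def)
  then have F: "Fc P = Fc P'" and G: "Gc P = Gc P' \<or> on_vside a b (Fc P) \<or> on_hside a b (Fc P) \<or> is_corner a b (Fc P)"
    unfolding wt_eq_def by auto
  have rng: "a \<le> fst (Fc P)" "fst (Fc P) \<le> 1" using trw_range[OF L1, of "fst P - a"] by (auto simp: Fc_def)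
  have G': "tro L (fst P - a) = tro L (fst P' - a) \<or> trw L (fst P - a) = 0 \<or> trw L (fst P - a) = L"
  proof (cases "Gc P = Gc P'")
    case True then show ?thesis by (simp add: Gc_def L_def)
  next
    case False
    then have "EE a (fst (Fc P))" using G not_II_col[OF rng]
      by (auto simp: on_vside_iff on_hside_iff is_corner_iff)
    then have "fst (Fc P) = a \<or> fst (Fc P) = 1" using EE_col rng by blast
    then show ?thesis by (auto simp: Fc_def L_def)
  qed
  obtain k :: int where k: "fst P' - a = fst P - a + of_int k * L"
    using trw_inj[OF L _ G'] F by (auto simp: Fc_def L_def)
  have Y: "snd P = snd P'" using F by (simp add: Fc_def)
  have l1: "0 < snd P - s * (fst P - a)" "snd P - s * (fst P - a) < b"
    using Ic_lam[of x] x PC_lam[of x] by (auto simp: P_def)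
  have l2: "0 < snd P' - s * (fst P' - a)" "snd P' - s * (fst P' - a) < b"
    using Ic_lam[of x'] x' PC_lam[of x'] by (auto simp: P'_def)
  have e2: "s * (of_int k * L) = of_int k * of_int pp" using spL[of k] by (simp only: L_def)
  have e1: "snd P' - s * (fst P' - a) = snd P - s * (fst P - a) - s * (of_int k * L)"
    using Y k by (simp add: algebra_simps)
  then have "snd P' - s * (fst P' - a) = snd P - s * (fst P - a) - of_int k * of_int pp"
    unfolding e2 .
  then have "\<bar>of_int k * of_int pp\<bar> < (1::real)"
    using l1 l2 b1 by (simp add: abs_less_iff)
  then have "k = 0" using int_small_zero[of k "of_int pp"] pp1 by simp
  then have "P = P'" using k Y by (simp add: prod_eq_iff)
  then show "x = x'" using PC_inj by (simp add: P_def P'_def)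
qed

lemma Phic_Xinf: "Phic ` (Ic \<times> UNIV) \<subseteq> Xinf a b"
  unfolding Phic_def Xinf_def XR_def by (auto intro!: imageI simp: Fc_table)

lemma Phic_strip: "wt_strip a b th (Phic ` (Ic \<times> UNIV))"
  unfolding wt_strip_def
proof (intro exI[of _ Ic] exI[of _ Phic] exI[of _ 1] conjI)
  show "is_interval Ic" "open Ic" by (auto simp: Ic_def is_interval_oo)
  show "Ic \<noteq> {}" using mult_pos_pos[OF b0 c0] by (auto simp: Ic_def)
  show "\<forall>x0\<in>Ic \<times> UNIV. \<exists>\<epsilon>>0. \<exists>g p0. Phic x0 = wt_class a b (g, p0) \<and>
          (\<forall>x\<in>Ic \<times> UNIV. dist x x0 < \<epsilon> \<longrightarrow>
             (let q = p0 + gmul g ((1 * (fst x - fst x0)) *\<^sub>R nrmv th + (1 * (snd x - snd x0)) *\<^sub>R dirv th)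
              in (q \<in> table_cl a b \<and> Phic x = wt_class a b (g, q))
               \<or> (on_vside a b p0 \<and> in_obst_int a b q \<and> Phic x = wt_class a b ((\<not> fst g, snd g), 2 * fst p0 - fst q, snd q))
               \<or> (on_hside a b p0 \<and> in_obst_int a b q \<and> Phic x = wt_class a b ((fst g, \<not> snd g), fst q, 2 * snd p0 - snd q))))"
    using Phic_loc unfolding LOC_def by blast
qed (use Phic_inj Phic_Xinf in auto)

end


lemma EE_gen: "0 < A \<Longrightarrow> A < 1 \<Longrightarrow> of_int N + A \<le> y \<Longrightarrow> y \<le> of_int N + 1 \<Longrightarrow> EE A y \<Longrightarrow> y = of_int N + A \<or> y = of_int N + 1"
proof -
  assume h: "0 < A" "A < 1" "of_int N + A \<le> y" "y \<le> of_int N + 1" "EE A y"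
  then obtain M :: int where M: "y = of_int M \<or> y = of_int M + A" unfolding EE_def by blast
  show ?thesis
  proof (cases "y = of_int M")
    case True
    then have "(of_int N::real) < of_int M" "of_int M \<le> (of_int N + 1::real)" using h by auto
    then have "N < M" "M \<le> N + 1" by linarith+
    then have "M = N + 1" by linarith
    then show ?thesis using True by simp
  next
    case False
    then have y: "y = of_int M + A" using M by simp
    then have "(of_int N::real) \<le> of_int M" "of_int M < (of_int N + 1::real)" using h by auto
    then have "N \<le> M" "M < N + 1" by linarith+
    then have "M = N" by linarith
    then show ?thesis using y by simp
  qed
qed

lemma not_II_gen: "0 < A \<Longrightarrow> A < 1 \<Longrightarrow> of_int N + A \<le> y \<Longrightarrow> y \<le> of_int N + 1 \<Longrightarrow> \<not> II A y"
  unfolding II_def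
proof (clarify)
  fix M :: int assume h: "0 < A" "A < 1" "of_int N + A \<le> y" "y \<le> of_int N + 1" "of_int M < y" "y < of_int M + A"
  then have "(of_int M::real) < of_int N + 1" "(of_int N::real) < of_int M" by linarith+
  then have "M < N + 1" "N < M" by linarith+
  then show False by linarith
qed

lemma floor_in: "of_int m \<le> X \<Longrightarrow> X < of_int m + 1 \<Longrightarrow> \<lfloor>X\<rfloor> = m"
  by (simp add: floor_eq_iff)

context wtp begin

definition hh where "hh = 1 - b"
lemma hh0: "hh > 0" using b1 by (simp add: hh_def)

definition PR :: "real \<times> real \<Rightarrow> real \<times> real" where
  "PR x = (- fst x * (s * c) + snd x * c, b + fst x * c + snd x * (s * c))"
definition FR :: "real \<times> real \<Rightarrow> real \<times> real" where
  "FR P = (let X = fst P; \<mu> = snd P - s * X; m = \<lfloor>X\<rfloor>; \<xi> = X - of_int m in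
     if \<xi> < a then (X, of_int m * of_int pp + b + trw hh (\<mu> - b + s * \<xi>))
     else (X, of_int m * of_int pp + \<mu> + s * (\<xi> - a)))"
definition GR :: "real \<times> real \<Rightarrow> bool \<times> bool" where
  "GR P = (False, fst P - of_int \<lfloor>fst P\<rfloor> < a \<and> tro hh (snd P - s * fst P - b + s * (fst P - of_int \<lfloor>fst P\<rfloor>)))"
definition Phir :: "real \<times> real \<Rightarrow> wtrep set" where
  "Phir x = wt_class a b (GR (PR x), FR (PR x))"
definition Ir :: "real set" where "Ir = {0<..<hh * c}"

lemma PR_dvec: "fst (PR x) = fst (PR x0) + fst (dvec x x0)" "snd (PR x) = snd (PR x0) + snd (dvec x x0)"
  by (simp_all add: PR_def dvec_eq algebra_simps)

lemma PR_mu: "snd (PR x) - s * fst (PR x) = b + fst x * kap"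
  by (simp add: PR_def kap_def algebra_simps)

lemma Ir_mu: "fst x \<in> Ir \<Longrightarrow> 0 < fst x * kap \<and> fst x * kap < hh"
proof -
  assume "fst x \<in> Ir"
  then have "0 < fst x" "fst x < hh * c" by (auto simp: Ir_def)
  then have "fst x * kap < hh * c * kap" using kap0 by simp
  then show ?thesis using \<open>0 < fst x\<close> kap0 ckap by (simp add: mult.assoc)
qed

lemma FR_corr: "fst P - of_int \<lfloor>fst P\<rfloor> < a \<Longrightarrow>
   FR P = (fst P, of_int \<lfloor>fst P\<rfloor> * of_int pp + b + trw hh (snd P - s * fst P - b + s * (fst P - of_int \<lfloor>fst P\<rfloor>)))"
  by (simp add: FR_def Let_def)
lemma FR_free: "\<not> fst P - of_int \<lfloor>fst P\<rfloor> < a \<Longrightarrow>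
   FR P = (fst P, of_int \<lfloor>fst P\<rfloor> * of_int pp + (snd P - s * fst P) + s * (fst P - of_int \<lfloor>fst P\<rfloor> - a))"
  by (simp add: FR_def Let_def)

lemma FR_table: "FR P \<in> table_cl a b"
proof (cases "fst P - of_int \<lfloor>fst P\<rfloor> < a")
  case True
  have "0 \<le> trw hh (snd P - s * fst P - b + s * (fst P - of_int \<lfloor>fst P\<rfloor>))"
       "trw hh (snd P - s * fst P - b + s * (fst P - of_int \<lfloor>fst P\<rfloor>)) \<le> hh"
    using trw_range[OF hh0] by blast+
  then show ?thesis unfolding FR_corr[OF True]
    by (intro table_corr[of "\<lfloor>fst P\<rfloor> * pp"]) (auto simp: hh_def)
next
  case False
  then show ?thesis unfolding FR_free[OF False]
    using False real_of_int_floor_add_one_ge[of "fst P"]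
    by (intro table_free_shift[of "\<lfloor>fst P\<rfloor>"]) linarith+
qed

lemma sqh: "s * a = of_int qq * hh" using sq by (simp add: hh_def)

end


context wtp begin

lemma FRm_corr: "of_int m \<le> fst P \<Longrightarrow> fst P < of_int m + a \<Longrightarrow>
   FR P = (fst P, of_int m * of_int pp + b + trw hh (snd P - s * fst P - b + s * (fst P - of_int m)))
   \<and> GR P = (False, tro hh (snd P - s * fst P - b + s * (fst P - of_int m)))"
proof -
  assume h: "of_int m \<le> fst P" "fst P < of_int m + a"
  then have f: "\<lfloor>fst P\<rfloor> = m" using a1 by (intro floor_in) auto
  show ?thesis using h by (simp add: FR_def GR_def Let_def f)
qed

lemma FRm_free: "of_int m + a \<le> fst P \<Longrightarrow> fst P < of_int m + 1 \<Longrightarrow>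
   FR P = (fst P, of_int m * of_int pp + (snd P - s * fst P) + s * (fst P - of_int m - a))
   \<and> GR P = (False, False)"
proof -
  assume h: "of_int m + a \<le> fst P" "fst P < of_int m + 1"
  then have f: "\<lfloor>fst P\<rfloor> = m" using a0 by (intro floor_in) auto
  show ?thesis using h by (simp add: FR_def GR_def Let_def f algebra_simps)
qed

lemma Phir_loc:
  assumes x0: "x0 \<in> Ir \<times> (UNIV :: real set)"
  shows "LOC Phir (Ir \<times> UNIV) x0"
proof -
  define X0 where "X0 = fst (PR x0)"
  define Y0 where "Y0 = snd (PR x0)"
  define m0 where "m0 = \<lfloor>X0\<rfloor>"
  define \<xi>0 where "\<xi>0 = X0 - of_int m0"
  define \<mu>0 where "\<mu>0 = Y0 - s * X0"
  have mu0: "b < \<mu>0" "\<mu>0 < 1" using Ir_mu[of x0] x0 PR_mu[of x0] by (auto simp: \<mu>0_def X0_def Y0_def hh_def)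
  have xi0: "0 \<le> \<xi>0" "\<xi>0 < 1" unfolding \<xi>0_def m0_def by linarith+
  have X0m: "X0 = of_int m0 + \<xi>0" by (simp add: \<xi>0_def)
  have PX: "\<And>x. fst (PR x) = X0 + fst (dvec x x0)" "\<And>x. snd (PR x) = Y0 + snd (dvec x x0)"
    using PR_dvec by (auto simp: X0_def Y0_def)
  have sp': "s * (1 - a) = of_int pp" by (rule sp)
  consider "a < \<xi>0" | "\<xi>0 = a" | "\<xi>0 = 0" | "0 < \<xi>0 \<and> \<xi>0 < a" using xi0 by linarith
  then show ?thesis
  proof cases
    case 1
    define e where "e = min (\<xi>0 - a) (1 - \<xi>0)"
    have e: "e > 0" using 1 xi0 by (simp add: e_def)
    have F0: "FR (PR x0) = (X0, of_int m0 * of_int pp + \<mu>0 + s * (\<xi>0 - a))" "GR (PR x0) = (False, False)"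
      using FRm_free[of m0 "PR x0"] 1 xi0 by (auto simp: X0m X0_def[symmetric] Y0_def[symmetric] \<mu>0_def algebra_simps)
    show ?thesis
    proof (rule LOCI[OF e, where g = "(False, False)" and pt = "FR (PR x0)"])
      show "Phir x0 = wt_class a b ((False, False), FR (PR x0))" using F0 by (simp add: Phir_def)
      fix x assume x: "x \<in> Ir \<times> UNIV" "\<bar>fst (dvec x x0)\<bar> < e" "\<bar>snd (dvec x x0)\<bar> < e"
      define dx where "dx = fst (dvec x x0)"
      define dy where "dy = snd (dvec x x0)"
      have d: "\<bar>dx\<bar> < e" "\<bar>dy\<bar> < e" using x by (auto simp: dx_def dy_def)
      have F: "FR (PR x) = (X0 + dx, of_int m0 * of_int pp + (Y0 + dy - s * (X0 + dx)) + s * (X0 + dx - of_int m0 - a))"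
              "GR (PR x) = (False, False)"
        using FRm_free[of m0 "PR x"] d by (auto simp: PX dx_def[symmetric] dy_def[symmetric] X0m e_def)
      have q: "FR (PR x0) + gmul (False, False) (dvec x x0) = FR (PR x)"
        using F F0 by (simp add: gmul_eq dx_def[symmetric] dy_def[symmetric] \<mu>0_def X0m algebra_simps)
      show "LOCD Phir (False, False) (FR (PR x0)) x0 x"
        unfolding LOCD_def q using FR_table[of "PR x"] F(2) by (intro disjI1) (simp add: Phir_def)
    qed
  next
    case 2
    define e where "e = min (min a (1 - a)) (min (\<mu>0 - b) (1 - \<mu>0))"
    have e: "e > 0" using mu0 a0 a1 by (simp add: e_def)
    have F0: "FR (PR x0) = (X0, of_int m0 * of_int pp + \<mu>0)" "GR (PR x0) = (False, False)"
      using FRm_free[of m0 "PR x0"] 2 a1 by (auto simp: X0m X0_def[symmetric] Y0_def[symmetric] \<mu>0_def algebra_simps)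
    show ?thesis
    proof (rule LOCI[OF e, where g = "(False, False)" and pt = "FR (PR x0)"])
      show "Phir x0 = wt_class a b ((False, False), FR (PR x0))" using F0 by (simp add: Phir_def)
      fix x assume x: "x \<in> Ir \<times> UNIV" "\<bar>fst (dvec x x0)\<bar> < e" "\<bar>snd (dvec x x0)\<bar> < e"
      define dx where "dx = fst (dvec x x0)"
      define dy where "dy = snd (dvec x x0)"
      have d: "\<bar>dx\<bar> < e" "\<bar>dy\<bar> < e" using x by (auto simp: dx_def dy_def)
      have FG: "FR (PR x) = (X0 + dx, of_int m0 * of_int pp + \<mu>0 + dy) \<and> GR (PR x) = (False, False)"
      proof (cases "dx \<ge> 0")
        case True
        have "FR (PR x) = (X0 + dx, of_int m0 * of_int pp + (Y0 + dy - s * (X0 + dx)) + s * (X0 + dx - of_int m0 - a))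
              \<and> GR (PR x) = (False, False)"
          using FRm_free[of m0 "PR x"] d True 2 by (auto simp: PX dx_def[symmetric] dy_def[symmetric] X0m e_def)
        then show ?thesis using 2 by (simp add: X0m \<mu>0_def algebra_simps)
      next
        case False
        define \<phi> where "\<phi> = (Y0 + dy - s * (X0 + dx) - b + s * (X0 + dx - of_int m0))"
        have FG1: "FR (PR x) = (X0 + dx, of_int m0 * of_int pp + b + trw hh \<phi>) \<and> GR (PR x) = (False, tro hh \<phi>)"
          using FRm_corr[of m0 "PR x"] d False 2 by (auto simp: PX dx_def[symmetric] dy_def[symmetric] X0m e_def \<phi>_def)
        have ph: "\<phi> = \<mu>0 - b + dy + of_int qq * hh"
          using 2 sqh by (simp add: \<phi>_def \<mu>0_def X0m algebra_simps)
        have r: "of_int qq * hh \<le> \<phi>" "\<phi> < (of_int qq + 1) * hh"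
          using ph d mu0 by (auto simp: e_def hh_def algebra_simps)
        have "trw hh \<phi> = \<phi> - of_int qq * hh" "tro hh \<phi> = False"
          using trw_piece[OF hh0 r(1) less_imp_le[OF r(2)]] tro_piece[OF hh0 r] qq_even by auto
        then show ?thesis using FG1 ph by simp
      qed
      have q: "FR (PR x0) + gmul (False, False) (dvec x x0) = FR (PR x)"
        using FG F0 by (simp add: gmul_eq dx_def[symmetric] dy_def[symmetric])
      show "LOCD Phir (False, False) (FR (PR x0)) x0 x"
        unfolding LOCD_def q using FR_table[of "PR x"] FG by (intro disjI1) (simp add: Phir_def)
    qed
  next
    case 3
    define e where "e = min (min a (1 - a)) (min (\<mu>0 - b) (1 - \<mu>0))"
    have e: "e > 0" using mu0 a0 a1 by (simp add: e_def)
    have r0: "of_int 0 * hh \<le> \<mu>0 - b" "\<mu>0 - b < (of_int 0 + 1) * hh" using mu0 by (auto simp: hh_def)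
    have F0: "FR (PR x0) = (X0, of_int m0 * of_int pp + \<mu>0)" "GR (PR x0) = (False, False)"
      using FRm_corr[of m0 "PR x0"] 3 a0 trw_piece[OF hh0 r0(1) less_imp_le[OF r0(2)]] tro_piece[OF hh0 r0]
      by (auto simp: X0m X0_def[symmetric] Y0_def[symmetric] \<mu>0_def algebra_simps)
    show ?thesis
    proof (rule LOCI[OF e, where g = "(False, False)" and pt = "FR (PR x0)"])
      show "Phir x0 = wt_class a b ((False, False), FR (PR x0))" using F0 by (simp add: Phir_def)
      fix x assume x: "x \<in> Ir \<times> UNIV" "\<bar>fst (dvec x x0)\<bar> < e" "\<bar>snd (dvec x x0)\<bar> < e"
      define dx where "dx = fst (dvec x x0)"
      define dy where "dy = snd (dvec x x0)"
      have d: "\<bar>dx\<bar> < e" "\<bar>dy\<bar> < e" using x by (auto simp: dx_def dy_def)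
      have FG: "FR (PR x) = (X0 + dx, of_int m0 * of_int pp + \<mu>0 + dy) \<and> GR (PR x) = (False, False)"
      proof (cases "dx \<ge> 0")
        case True
        define \<phi> where "\<phi> = (Y0 + dy - s * (X0 + dx) - b + s * (X0 + dx - of_int m0))"
        have FG1: "FR (PR x) = (X0 + dx, of_int m0 * of_int pp + b + trw hh \<phi>) \<and> GR (PR x) = (False, tro hh \<phi>)"
          using FRm_corr[of m0 "PR x"] d True 3 by (auto simp: PX dx_def[symmetric] dy_def[symmetric] X0m e_def \<phi>_def)
        have ph: "\<phi> = \<mu>0 - b + dy"
          using 3 by (simp add: \<phi>_def \<mu>0_def X0m algebra_simps)
        have r: "of_int 0 * hh \<le> \<phi>" "\<phi> < (of_int 0 + 1) * hh"
          using ph d mu0 by (auto simp: e_def hh_def algebra_simps)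
        have "trw hh \<phi> = \<phi>" "tro hh \<phi> = False"
          using trw_piece[OF hh0 r(1) less_imp_le[OF r(2)]] tro_piece[OF hh0 r] by auto
        then show ?thesis using FG1 ph by simp
      next
        case False
        have "FR (PR x) = (X0 + dx, of_int (m0 - 1) * of_int pp + (Y0 + dy - s * (X0 + dx)) + s * (X0 + dx - of_int (m0 - 1) - a))
              \<and> GR (PR x) = (False, False)"
          using FRm_free[of "m0 - 1" "PR x"] d False 3 by (auto simp: PX dx_def[symmetric] dy_def[symmetric] X0m e_def)
        moreover have "s * (X0 + dx - of_int (m0 - 1) - a) = of_int pp + s * dx"
          using 3 sp by (simp add: X0m algebra_simps)
        ultimately show ?thesis using 3 by (simp add: X0m \<mu>0_def algebra_simps)
      qed
      have q: "FR (PR x0) + gmul (False, False) (dvec x x0) = FR (PR x)"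
        using FG F0 by (simp add: gmul_eq dx_def[symmetric] dy_def[symmetric])
      show "LOCD Phir (False, False) (FR (PR x0)) x0 x"
        unfolding LOCD_def q using FR_table[of "PR x"] FG by (intro disjI1) (simp add: Phir_def)
    qed
  next
    case 4
    define \<phi>0 where "\<phi>0 = \<mu>0 - b + s * \<xi>0"
    obtain j where j: "of_int j * hh \<le> \<phi>0" "\<phi>0 < (of_int j + 1) * hh"
      "trw hh \<phi>0 = (if even j then \<phi>0 - of_int j * hh else (of_int j + 1) * hh - \<phi>0)"
      "tro hh \<phi>0 = odd j" using trw_fold[OF hh0] by blast
    define y0 where "y0 = of_int m0 * of_int pp + b + trw hh \<phi>0"
    have F0: "FR (PR x0) = (X0, y0)" "GR (PR x0) = (False, odd j)"
      using FRm_corr[of m0 "PR x0"] 4 j(4)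
      by (auto simp: X0m X0_def[symmetric] Y0_def[symmetric] \<mu>0_def \<phi>0_def y0_def algebra_simps)
    have Fx: "FR (PR x) = (X0 + fst (dvec x x0), of_int m0 * of_int pp + b + trw hh (\<phi>0 + snd (dvec x x0)))
        \<and> GR (PR x) = (False, tro hh (\<phi>0 + snd (dvec x x0)))"
      if "\<bar>fst (dvec x x0)\<bar> < min \<xi>0 (a - \<xi>0)" for x
    proof -
      have "FR (PR x) = (X0 + fst (dvec x x0), of_int m0 * of_int pp + b + trw hh (Y0 + snd (dvec x x0) - s * (X0 + fst (dvec x x0)) - b + s * (X0 + fst (dvec x x0) - of_int m0)))
        \<and> GR (PR x) = (False, tro hh (Y0 + snd (dvec x x0) - s * (X0 + fst (dvec x x0)) - b + s * (X0 + fst (dvec x x0) - of_int m0)))"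
        using FRm_corr[of m0 "PR x"] that by (auto simp: PX X0m)
      moreover have "Y0 + snd (dvec x x0) - s * (X0 + fst (dvec x x0)) - b + s * (X0 + fst (dvec x x0) - of_int m0) = \<phi>0 + snd (dvec x x0)"
        by (simp add: \<phi>0_def \<mu>0_def X0m algebra_simps)
      ultimately show ?thesis by simp
    qed
    show ?thesis
    proof (cases "of_int j * hh < \<phi>0")
      case True
      define e where "e = min (min \<xi>0 (a - \<xi>0)) (min (\<phi>0 - of_int j * hh) ((of_int j + 1) * hh - \<phi>0))"
      have e: "e > 0" using True j 4 by (simp add: e_def)
      show ?thesis
      proof (rule LOCI[OF e, where g = "(False, odd j)" and pt = "FR (PR x0)"])
        show "Phir x0 = wt_class a b ((False, odd j), FR (PR x0))" using F0 by (simp add: Phir_def)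
        fix x assume x: "x \<in> Ir \<times> UNIV" "\<bar>fst (dvec x x0)\<bar> < e" "\<bar>snd (dvec x x0)\<bar> < e"
        define dx where "dx = fst (dvec x x0)"
        define dy where "dy = snd (dvec x x0)"
        have d: "\<bar>dx\<bar> < e" "\<bar>dy\<bar> < e" using x by (auto simp: dx_def dy_def)
        have F1: "FR (PR x) = (X0 + dx, of_int m0 * of_int pp + b + trw hh (\<phi>0 + dy))
           \<and> GR (PR x) = (False, tro hh (\<phi>0 + dy))"
          using Fx[of x] d by (simp add: e_def dx_def dy_def)
        have r: "of_int j * hh \<le> \<phi>0 + dy" "\<phi>0 + dy < (of_int j + 1) * hh" using d by (auto simp: e_def)
        have T: "trw hh (\<phi>0 + dy) = (if even j then \<phi>0 + dy - of_int j * hh else (of_int j + 1) * hh - (\<phi>0 + dy))"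
             "tro hh (\<phi>0 + dy) = odd j"
          using trw_piece[OF hh0 r(1) less_imp_le[OF r(2)]] tro_piece[OF hh0 r] by auto
        have q: "FR (PR x0) + gmul (False, odd j) (dvec x x0) = FR (PR x)"
          using F1 F0 T j(3) by (simp add: gmul_eq dx_def[symmetric] dy_def[symmetric] y0_def algebra_simps)
        show "LOCD Phir (False, odd j) (FR (PR x0)) x0 x"
          unfolding LOCD_def q using FR_table[of "PR x"] F1 T by (intro disjI1) (simp add: Phir_def)
      qed
    next
      case False
      then have pj: "\<phi>0 = of_int j * hh" using j by simp
      define e where "e = min (min \<xi>0 (a - \<xi>0)) (min hh b)"
      have e: "e > 0" using hh0 b0 4 by (simp add: e_def)
      have y0e: "y0 = of_int m0 * of_int pp + b + (if even j then 0 else hh)"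
        using j(3) pj by (simp add: y0_def algebra_simps)
      have "II a X0" unfolding II_def using 4 by (intro exI[of _ m0]) (simp add: X0m)
      moreover have "EE b y0" unfolding EE_def y0e
        by (cases "even j") (auto simp: hh_def intro: exI[of _ "m0 * pp"] exI[of _ "m0 * pp + 1"])
      ultimately have hs: "on_hside a b (X0, y0)" by (simp add: on_hside_iff)
      show ?thesis
      proof (rule LOCI[OF e, where g = "(False, odd j)" and pt = "FR (PR x0)"])
        show "Phir x0 = wt_class a b ((False, odd j), FR (PR x0))" using F0 by (simp add: Phir_def)
        fix x assume x: "x \<in> Ir \<times> UNIV" "\<bar>fst (dvec x x0)\<bar> < e" "\<bar>snd (dvec x x0)\<bar> < e"
        define dx where "dx = fst (dvec x x0)"
        define dy where "dy = snd (dvec x x0)"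
        have d: "\<bar>dx\<bar> < e" "\<bar>dy\<bar> < e" using x by (auto simp: dx_def dy_def)
        have F1: "FR (PR x) = (X0 + dx, of_int m0 * of_int pp + b + trw hh (\<phi>0 + dy))
           \<and> GR (PR x) = (False, tro hh (\<phi>0 + dy))"
          using Fx[of x] d by (simp add: e_def dx_def dy_def)
        show "LOCD Phir (False, odd j) (FR (PR x0)) x0 x"
        proof (cases "dy \<ge> 0")
          case True
          have r: "of_int j * hh \<le> \<phi>0 + dy" "\<phi>0 + dy < (of_int j + 1) * hh" using d True pj by (auto simp: e_def algebra_simps)
          have T: "trw hh (\<phi>0 + dy) = (if even j then \<phi>0 + dy - of_int j * hh else (of_int j + 1) * hh - (\<phi>0 + dy))"
               "tro hh (\<phi>0 + dy) = odd j"
            using trw_piece[OF hh0 r(1) less_imp_le[OF r(2)]] tro_piece[OF hh0 r] by auto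
          have q: "FR (PR x0) + gmul (False, odd j) (dvec x x0) = FR (PR x)"
            using F1 F0 T j(3) by (simp add: gmul_eq dx_def[symmetric] dy_def[symmetric] y0_def algebra_simps)
          show ?thesis unfolding LOCD_def q using FR_table[of "PR x"] F1 T by (intro disjI1) (simp add: Phir_def)
        next
          case False
          have r: "of_int (j - 1) * hh \<le> \<phi>0 + dy" "\<phi>0 + dy < (of_int (j - 1) + 1) * hh" using d False pj by (auto simp: e_def algebra_simps)
          have T: "trw hh (\<phi>0 + dy) = (if even (j - 1) then \<phi>0 + dy - of_int (j - 1) * hh else (of_int (j - 1) + 1) * hh - (\<phi>0 + dy))"
               "tro hh (\<phi>0 + dy) = odd (j - 1)"
            using trw_piece[OF hh0 r(1) less_imp_le[OF r(2)]] tro_piece[OF hh0 r] by auto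
          define q where "q = FR (PR x0) + gmul (False, odd j) (dvec x x0)"
          have qe: "q = (X0 + dx, y0 + (if odd j then - dy else dy))"
            using F0 by (simp add: q_def gmul_eq dx_def[symmetric] dy_def[symmetric])
          have "II a (X0 + dx)" unfolding II_def using d 4 by (intro exI[of _ m0]) (auto simp: X0m e_def)
          moreover have "II b (y0 + (if odd j then - dy else dy))" unfolding II_def y0e
            using d False by (cases "even j") (auto simp: hh_def e_def intro: exI[of _ "m0 * pp"] exI[of _ "m0 * pp + 1"])
          ultimately have obs: "in_obst_int a b q" by (simp add: in_obst_iff qe)
          have "FR (PR x) = (fst q, 2 * snd (FR (PR x0)) - snd q)"
            using F1 F0 T qe pj by (auto simp: y0e hh_def algebra_simps)
          moreover have "GR (PR x) = (fst (False, odd j), \<not> snd (False, odd j))" using F1 T by simp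
          ultimately show ?thesis using hs obs F0 unfolding LOCD_def q_def[symmetric] by (simp add: Phir_def)
        qed
      qed
    qed
  qed
qed

end


context wtp begin

lemma PR_inj: "PR x = PR x' \<Longrightarrow> x = x'"
proof -
  assume h: "PR x = PR x'"
  have e1: "snd (PR x) - s * fst (PR x) = snd (PR x') - s * fst (PR x')" using h by simp
  have "fst x * kap = fst x' * kap" using e1 PR_mu[of x] PR_mu[of x'] by linarith
  then have t: "fst x = fst x'" using kap0 by (metis less_irrefl mult_right_cancel)
  have "fst (PR x) = fst (PR x')" using h by simp
  then have "snd x * c = snd x' * c" using t by (simp add: PR_def)
  then have "snd x = snd x'" using c0 by simp
  then show ?thesis using t by (simp add: prod_eq_iff)
qed

lemma small_mult_zero: "\<bar>of_int k * H\<bar> < (H::real) \<Longrightarrow> k = 0"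
proof (rule ccontr)
  assume h: "\<bar>of_int k * H\<bar> < H" "k \<noteq> 0"
  then have H: "H > 0" by (metis abs_ge_zero le_less_trans)
  have "\<bar>of_int k::real\<bar> \<ge> 1" using h by linarith
  then have "\<bar>of_int k::real\<bar> * H \<ge> 1 * H" using H by (intro mult_right_mono) auto
  then show False using h(1) by (simp add: abs_mult abs_of_pos[OF H])
qed

lemma Phir_inj: "inj_on Phir (Ir \<times> UNIV)"
proof (rule inj_onI)
  fix x x' assume x: "x \<in> Ir \<times> UNIV" and x': "x' \<in> Ir \<times> UNIV" and e: "Phir x = Phir x'"
  define P where "P = PR x"
  define P' where "P' = PR x'"
  have "wt_eq a b (GR P, FR P) (GR P', FR P')"
    using e FR_table[of P'] unfolding Phir_def P_def P'_def by (intro class_eq_D) (auto simp: XR_def)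
  then have F: "FR P = FR P'" and G: "GR P = GR P' \<or> on_vside a b (FR P) \<or> on_hside a b (FR P) \<or> is_corner a b (FR P)"
    unfolding wt_eq_def by auto
  have fst_FR: "\<And>P. fst (FR P) = fst P" by (simp add: FR_def Let_def)
  have X: "fst P = fst P'" using F fst_FR by metis
  define m where "m = \<lfloor>fst P\<rfloor>"
  define \<xi> where "\<xi> = fst P - of_int m"
  define \<mu> where "\<mu> = snd P - s * fst P"
  define \<mu>' where "\<mu>' = snd P' - s * fst P'"
  have mu: "b < \<mu>" "\<mu> < 1" using Ir_mu[of x] x PR_mu[of x] by (auto simp: \<mu>_def P_def hh_def)
  have mu': "b < \<mu>'" "\<mu>' < 1" using Ir_mu[of x'] x' PR_mu[of x'] by (auto simp: \<mu>'_def P'_def hh_def)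
  have m': "\<lfloor>fst P'\<rfloor> = m" using X by (simp add: m_def)
  have "\<mu> = \<mu>'"
  proof (cases "\<xi> < a")
    case False
    then show ?thesis using F FR_free[of P] FR_free[of P'] X by (simp add: m'[symmetric] m_def \<xi>_def \<mu>_def \<mu>'_def)
  next
    case True
    define \<phi> where "\<phi> = \<mu> - b + s * \<xi>"
    define \<phi>' where "\<phi>' = \<mu>' - b + s * \<xi>"
    have FP: "FR P = (fst P, of_int m * of_int pp + b + trw hh \<phi>)" "GR P = (False, tro hh \<phi>)"
      using FR_corr[of P] True by (simp_all add: GR_def m_def \<xi>_def \<mu>_def \<phi>_def)
    have FP': "FR P' = (fst P', of_int m * of_int pp + b + trw hh \<phi>')" "GR P' = (False, tro hh \<phi>')"
      using FR_corr[of P'] True X by (simp_all add: GR_def m'[symmetric] m_def \<xi>_def \<mu>'_def \<phi>'_def)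
    have tr: "trw hh \<phi> = trw hh \<phi>'" using F FP FP' by simp
    have yr: "of_int (m * pp) + b \<le> snd (FR P)" "snd (FR P) \<le> of_int (m * pp) + 1"
      using trw_range[OF hh0, of \<phi>] FP by (auto simp: hh_def)
    have cnd: "tro hh \<phi> = tro hh \<phi>' \<or> trw hh \<phi> = 0 \<or> trw hh \<phi> = hh"
    proof (cases "GR P = GR P'")
      case True then show ?thesis using FP FP' by simp
    next
      case False
      have "\<not> II b (snd (FR P))" using not_II_gen[OF b0 b1 yr] .
      then have "EE b (snd (FR P))" using G False by (auto simp: on_vside_iff on_hside_iff is_corner_iff)
      then have "snd (FR P) = of_int (m * pp) + b \<or> snd (FR P) = of_int (m * pp) + 1"
        using EE_gen[OF b0 b1 yr] by blast
      then show ?thesis using FP by (auto simp: hh_def)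
    qed
    obtain k :: int where k: "\<phi>' = \<phi> + of_int k * hh" using trw_inj[OF hh0 tr cnd] by blast
    then have kk: "\<mu>' - \<mu> = of_int k * hh" by (simp add: \<phi>_def \<phi>'_def)
    have "\<bar>\<mu>' - \<mu>\<bar> < hh" using mu mu' unfolding hh_def abs_less_iff by linarith
    then have "\<bar>of_int k * hh\<bar> < hh" using kk by simp
    then have "k = 0" by (rule small_mult_zero)
    then show ?thesis using k by (simp add: \<phi>_def \<phi>'_def)
  qed
  then have "snd P = snd P'" using X by (simp add: \<mu>_def \<mu>'_def)
  then have "P = P'" using X by (simp add: prod_eq_iff)
  then show "x = x'" using PR_inj by (simp add: P_def P'_def)
qed

lemma Phir_Xinf: "Phir ` (Ir \<times> UNIV) \<subseteq> Xinf a b"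
  unfolding Phir_def Xinf_def XR_def by (auto intro!: imageI simp: FR_table)

lemma Phir_strip: "wt_strip a b th (Phir ` (Ir \<times> UNIV))"
  unfolding wt_strip_def
proof (intro exI[of _ Ir] exI[of _ Phir] exI[of _ 1] conjI)
  show "is_interval Ir" "open Ir" by (auto simp: Ir_def is_interval_oo)
  show "Ir \<noteq> {}" using mult_pos_pos[OF hh0 c0] by (auto simp: Ir_def)
  show "\<forall>x0\<in>Ir \<times> UNIV. \<exists>\<epsilon>>0. \<exists>g p0. Phir x0 = wt_class a b (g, p0) \<and>
          (\<forall>x\<in>Ir \<times> UNIV. dist x x0 < \<epsilon> \<longrightarrow>
             (let q = p0 + gmul g ((1 * (fst x - fst x0)) *\<^sub>R nrmv th + (1 * (snd x - snd x0)) *\<^sub>R dirv th)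
              in (q \<in> table_cl a b \<and> Phir x = wt_class a b (g, q))
               \<or> (on_vside a b p0 \<and> in_obst_int a b q \<and> Phir x = wt_class a b ((\<not> fst g, snd g), 2 * fst p0 - fst q, snd q))
               \<or> (on_hside a b p0 \<and> in_obst_int a b q \<and> Phir x = wt_class a b ((fst g, \<not> snd g), fst q, 2 * snd p0 - snd q))))"
    using Phir_loc unfolding LOC_def by blast
qed (use Phir_inj Phir_Xinf in auto)

end


definition sg :: "bool \<Rightarrow> real" where "sg e = (if e then -1 else 1)"

lemma ceil_in: "of_int i < x \<Longrightarrow> x \<le> of_int i + 1 \<Longrightarrow> \<lceil>x\<rceil> - 1 = i"
proof -
  assume "of_int i < x" "x \<le> of_int i + 1"
  then have "\<lceil>x\<rceil> = i + 1" by (intro ceiling_unique) auto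
  then show ?thesis by simp
qed

context wtp begin

definition keyF :: "bool \<times> bool \<Rightarrow> int \<Rightarrow> real \<Rightarrow> real \<Rightarrow> bool \<times> (bool \<times> bool) \<times> int \<times> int" where
  "keyF g i \<xi> y = (let \<Lambda> = y - sg (fst g) * sg (snd g) * s * (\<xi> - a); n = \<lfloor>\<Lambda>\<rfloor> in
     if \<Lambda> - of_int n < b then (False, (False, snd g), i, n mod (2 * pp))
     else (True, g, 0, n + (if snd g then 1 else 0) - (if fst g = snd g then 1 else -1) * i * pp))"

definition keyC :: "bool \<times> bool \<Rightarrow> int \<Rightarrow> real \<Rightarrow> real \<Rightarrow> bool \<times> (bool \<times> bool) \<times> int \<times> int" where
  "keyC g i \<xi> y = (let r = \<lceil>y\<rceil> - 1; \<tau> = y - of_int r - b; \<psi> = (if snd g then 2 * hh - \<tau> else \<tau>);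
     \<xi>' = (if fst g then a - \<xi> else \<xi>); v = \<psi> - s * \<xi>'; \<rho> = v - 2 * hh * of_int \<lfloor>v / (2 * hh)\<rfloor>;
     e2 = (hh < \<rho>); M = (if fst g then - i else i) in
     (True, (fst g, e2), 0, if e2 then r + 1 + M * pp else r - M * pp))"

definition key :: "wtrep \<Rightarrow> bool \<times> (bool \<times> bool) \<times> int \<times> int" where
  "key z = (let x = fst (snd z); y = snd (snd z); i = \<lceil>x\<rceil> - 1; \<xi> = x - of_int i in
     if a \<le> \<xi> then keyF (fst z) i \<xi> y else keyC (fst z) i \<xi> y)"

lemma key_free: "of_int i + a \<le> x \<Longrightarrow> x \<le> of_int i + 1 \<Longrightarrow> key (g, (x, y)) = keyF g i (x - of_int i) y"
proof -
  assume h: "of_int i + a \<le> x" "x \<le> of_int i + 1"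
  then have "\<lceil>x\<rceil> - 1 = i" using a0 by (intro ceil_in) auto
  then show ?thesis using h by (simp add: key_def Let_def)
qed

lemma key_corr: "of_int i < x \<Longrightarrow> x < of_int i + a \<Longrightarrow> key (g, (x, y)) = keyC g i (x - of_int i) y"
proof -
  assume h: "of_int i < x" "x < of_int i + a"
  then have "\<lceil>x\<rceil> - 1 = i" using a1 by (intro ceil_in) auto
  then show ?thesis using h by (simp add: key_def Let_def)
qed

lemma Phic_desc:
  assumes "x \<in> Ic \<times> UNIV"
  shows "snd (Gc (PC x)) = False \<and> a \<le> fst (Fc (PC x)) \<and> fst (Fc (PC x)) \<le> 1 \<and>
    (\<exists>j::int. 2 * of_int pp * of_int j < snd (Fc (PC x)) - sg (fst (Gc (PC x))) * s * (fst (Fc (PC x)) - a)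
       \<and> snd (Fc (PC x)) - sg (fst (Gc (PC x))) * s * (fst (Fc (PC x)) - a) < 2 * of_int pp * of_int j + b)"
proof -
  define L where "L = 1 - a"
  have L: "L > 0" using L1 by (simp add: L_def)
  define X where "X = fst (PC x)"
  define Y where "Y = snd (PC x)"
  have lam: "0 < Y - s * (X - a)" "Y - s * (X - a) < b"
    using Ic_lam[of x] assms PC_lam[of x] by (auto simp: X_def Y_def)
  obtain J where J: "of_int J * L \<le> X - a" "X - a < (of_int J + 1) * L"
    "trw L (X - a) = (if even J then X - a - of_int J * L else (of_int J + 1) * L - (X - a))"
    "tro L (X - a) = odd J" using trw_fold[OF L] by blast
  have rng: "a \<le> fst (Fc (PC x))" "fst (Fc (PC x)) \<le> 1"
    using trw_range[OF L1, of "X - a"] by (auto simp: Fc_def X_def)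
  have ex: "\<exists>j::int. 2 * of_int pp * of_int j < snd (Fc (PC x)) - sg (fst (Gc (PC x))) * s * (fst (Fc (PC x)) - a)
       \<and> snd (Fc (PC x)) - sg (fst (Gc (PC x))) * s * (fst (Fc (PC x)) - a) < 2 * of_int pp * of_int j + b"
  proof (cases "even J")
    case True
    then obtain j where j: "J = 2 * j" by (rule evenE)
    have tw: "trw L (X - a) = X - a - of_int J * L" using J True by simp
    have F1: "fst (Fc (PC x)) = a + (X - a - of_int J * L)" using tw by (simp add: Fc_def X_def L_def)
    have F2: "snd (Fc (PC x)) = Y" by (simp add: Fc_def Y_def)
    have G1: "fst (Gc (PC x)) = False" using J True by (simp add: Gc_def X_def L_def)
    have "snd (Fc (PC x)) - sg (fst (Gc (PC x))) * s * (fst (Fc (PC x)) - a) = Y - s * (X - a) + s * (of_int J * L)"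
      unfolding F1 F2 G1 by (simp add: sg_def algebra_simps)
    also have "s * (of_int J * L) = 2 * of_int pp * of_int j" using spL[of J] j by (simp add: L_def)
    finally show ?thesis using lam by (intro exI[of _ j]) simp
  next
    case False
    then have "even (J + 1)" by simp
    then obtain j where j: "J + 1 = 2 * j" by (rule evenE)
    have tw: "trw L (X - a) = (of_int J + 1) * L - (X - a)" using J False by simp
    have F1: "fst (Fc (PC x)) = a + ((of_int J + 1) * L - (X - a))" using tw by (simp add: Fc_def X_def L_def)
    have F2: "snd (Fc (PC x)) = Y" by (simp add: Fc_def Y_def)
    have G1: "fst (Gc (PC x)) = True" using J False by (simp add: Gc_def X_def L_def)
    have "snd (Fc (PC x)) - sg (fst (Gc (PC x))) * s * (fst (Fc (PC x)) - a) = Y - s * (X - a) + s * ((of_int J + 1) * L)"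
      unfolding F1 F2 G1 by (simp add: sg_def algebra_simps)
    also have "s * ((of_int J + 1) * L) = (of_int J + 1) * (s * (1 - a))" by (simp add: L_def algebra_simps)
    also have "\<dots> = 2 * of_int pp * of_int j"
    proof -
      have jj: "(of_int J + 1::real) = 2 * of_int j" using j by (metis of_int_1 of_int_add of_int_mult of_int_numeral)
      show ?thesis unfolding jj sp by simp
    qed
    finally show ?thesis using lam by (intro exI[of _ j]) simp
  qed
  show ?thesis using rng ex by (simp add: Gc_def)
qed

lemma key_col:
  assumes "a \<le> x0" "x0 \<le> 1" "2 * of_int pp * of_int j < y0 - sg f * s * (x0 - a)"
    "y0 - sg f * s * (x0 - a) < 2 * of_int pp * of_int j + b" "0 \<le> k" "k < 2 * pp"
  shows "key (Tz a b ((False, e2), (m, k)) ((f, False), (x0, y0))) = (False, (False, e2), m, k)"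
proof -
  have T: "Tz a b ((False, e2), (m, k)) ((f, False), (x0, y0)) = ((f, e2), (x0 + of_int m, rx b e2 y0 + of_int k))"
    by (simp add: Tz_def Tp_def gx_def rx_def)
  have K: "key ((f, e2), (x0 + of_int m, rx b e2 y0 + of_int k)) = keyF (f, e2) m x0 (rx b e2 y0 + of_int k)"
    using key_free[of m "x0 + of_int m"] assms by simp
  define \<Lambda> where "\<Lambda> = rx b e2 y0 + of_int k - sg f * sg e2 * s * (x0 - a)"
  have L: "of_int (2 * pp * (if e2 then - j else j) + k) < \<Lambda> \<and> \<Lambda> < of_int (2 * pp * (if e2 then - j else j) + k) + b"
    using assms(3,4) by (cases e2) (auto simp: \<Lambda>_def rx_def sg_def algebra_simps)
  have fl: "\<lfloor>\<Lambda>\<rfloor> = 2 * pp * (if e2 then - j else j) + k" using L b1 by (intro floor_unique) auto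
  have fr: "\<Lambda> - of_int \<lfloor>\<Lambda>\<rfloor> < b" using L fl by simp
  have md: "(2 * pp * (if e2 then - j else j) + k) mod (2 * pp) = k"
    using assms(5,6) by simp
  have K2: "keyF (f, e2) m x0 (rx b e2 y0 + of_int k) = (if \<Lambda> - of_int \<lfloor>\<Lambda>\<rfloor> < b then (False, (False, e2), m, \<lfloor>\<Lambda>\<rfloor> mod (2 * pp))
     else (True, (f, e2), 0, \<lfloor>\<Lambda>\<rfloor> + (if e2 then 1 else 0) - (if f = e2 then 1 else -1) * m * pp))"
    unfolding keyF_def Let_def \<Lambda>_def by simp
  show ?thesis unfolding T K K2 using fr fl md by simp
qed

end


lemma mod_rep:
  assumes H: "H > 0" and R: "0 \<le> R" "R < 2 * H" and v: "v = R + 2 * H * of_int N"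
  shows "v - 2 * H * of_int \<lfloor>v / (2 * H)\<rfloor> = R"
proof -
  have "v / (2 * H) = of_int N + R / (2 * H)" using H v by (simp add: field_simps)
  moreover have "0 \<le> R / (2 * H)" "R / (2 * H) < 1" using H R by (auto simp: divide_simps)
  ultimately have "\<lfloor>v / (2 * H)\<rfloor> = N" by (intro floor_unique) auto
  then show ?thesis using v by simp
qed

context wtp begin

lemma Phir_desc:
  assumes x: "x \<in> Ir \<times> UNIV"
  defines "X \<equiv> fst (PR x)" and "\<mu> \<equiv> snd (PR x) - s * fst (PR x)"
  shows "b < \<mu> \<and> \<mu> < 1 \<and>
    ((of_int \<lfloor>X\<rfloor> < X \<and> X < of_int \<lfloor>X\<rfloor> + a \<and>
       FR (PR x) = (X, of_int \<lfloor>X\<rfloor> * of_int pp + b + trw hh (\<mu> - b + s * (X - of_int \<lfloor>X\<rfloor>)))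
     \<and> GR (PR x) = (False, tro hh (\<mu> - b + s * (X - of_int \<lfloor>X\<rfloor>))))
   \<or> (\<exists>I::int. of_int I + a \<le> X \<and> X \<le> of_int I + 1 \<and> GR (PR x) = (False, False) \<and>
        FR (PR x) = (X, of_int I * of_int pp + \<mu> + s * (X - of_int I - a))))"
proof -
  have mu: "b < \<mu>" "\<mu> < 1" using Ir_mu[of x] x PR_mu[of x] by (auto simp: \<mu>_def hh_def)
  define m where "m = \<lfloor>X\<rfloor>"
  have mX: "of_int m \<le> X" "X < of_int m + 1" unfolding m_def by linarith+
  consider "X = of_int m" | "of_int m < X \<and> X < of_int m + a" | "of_int m + a \<le> X" using mX by linarith
  then show ?thesis
  proof cases
    case 1
    have r0: "of_int 0 * hh \<le> \<mu> - b" "\<mu> - b < (of_int 0 + 1) * hh" using mu by (auto simp: hh_def)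
    have T: "trw hh (\<mu> - b) = \<mu> - b" "tro hh (\<mu> - b) = False"
      using trw_piece[OF hh0 r0(1) less_imp_le[OF r0(2)]] tro_piece[OF hh0 r0] by auto
    have F: "FR (PR x) = (X, of_int m * of_int pp + b + trw hh (\<mu> - b)) \<and> GR (PR x) = (False, tro hh (\<mu> - b))"
      using FRm_corr[of m "PR x"] 1 a0 by (simp add: X_def \<mu>_def)
    have "s * (X - of_int (m - 1) - a) = of_int pp" using 1 sp by simp
    then have "FR (PR x) = (X, of_int (m - 1) * of_int pp + \<mu> + s * (X - of_int (m - 1) - a))"
      using F T by (simp add: algebra_simps)
    moreover have "of_int (m - 1) + a \<le> X" "X \<le> of_int (m - 1) + 1" using 1 a1 by auto
    ultimately show ?thesis using mu F T by (intro conjI disjI2 exI[of _ "m - 1"]) simp_all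
  next
    case 2
    then show ?thesis using mu FRm_corr[of m "PR x"] by (simp add: X_def \<mu>_def m_def)
  next
    case 3
    have "FR (PR x) = (X, of_int m * of_int pp + \<mu> + s * (X - of_int m - a)) \<and> GR (PR x) = (False, False)"
      using FRm_free[of m "PR x"] 3 mX by (simp add: X_def \<mu>_def)
    then show ?thesis using mu 3 mX by (intro conjI disjI2 exI[of _ m]) auto
  qed
qed

lemma key_cf:
  assumes x0: "of_int I + a \<le> x0" "x0 \<le> of_int I + 1" and mu: "b < \<mu>" "\<mu> < 1"
    and y0: "y0 = of_int I * of_int pp + \<mu> + s * (x0 - of_int I - a)"
  shows "key (Tz a b (e, (0, k)) ((False, False), (x0, y0))) = (True, e, 0, k)"
proof -
  obtain e1 e2 where e: "e = (e1, e2)" by (cases e)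
  define i where "i = (if e1 then - I - 1 else I)"
  define x where "x = rx a e1 x0"
  define y where "y = rx b e2 y0 + of_int k"
  have T: "Tz a b (e, (0, k)) ((False, False), (x0, y0)) = (e, (x, y))"
    by (simp add: Tz_def Tp_def gx_def e x_def y_def)
  have xi: "of_int i + a \<le> x" "x \<le> of_int i + 1" using x0 by (auto simp: i_def x_def rx_def)
  define \<Lambda> where "\<Lambda> = y - sg e1 * sg e2 * s * (x - of_int i - a)"
  define N where "N = (if e2 then k - (if e1 then I + 1 else I) * pp - 1 else (if e1 then I + 1 else I) * pp + k)"
  define \<beta> where "\<beta> = (if e2 then 1 + b - \<mu> else \<mu>)"
  have LN: "\<Lambda> = of_int N + \<beta>"
    using y0 sp by (cases e1; cases e2) (auto simp: \<Lambda>_def N_def \<beta>_def x_def y_def i_def rx_def sg_def algebra_simps)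
  have be: "b < \<beta>" "\<beta> < 1" using mu by (auto simp: \<beta>_def)
  have fl: "\<lfloor>\<Lambda>\<rfloor> = N" using LN be b0 by (intro floor_unique) auto
  have nb: "\<not> \<Lambda> - of_int \<lfloor>\<Lambda>\<rfloor> < b" using fl LN be by simp
  have kk: "N + (if e2 then 1 else 0) - (if e1 = e2 then 1 else -1) * i * pp = k"
    by (cases e1; cases e2) (auto simp: N_def i_def algebra_simps)
  have "key (e, (x, y)) = keyF e i (x - of_int i) y" using key_free[OF xi] .
  also have "\<dots> = (True, e, 0, k)"
    unfolding keyF_def Let_def e fst_conv snd_conv
    using nb fl kk by (simp add: \<Lambda>_def[symmetric] e)
  finally show ?thesis using T by simp
qed

end


context wtp begin

lemma key_cc:
  assumes x0: "of_int M < x0" "x0 < of_int M + a" and mu: "b < \<mu>" "\<mu> < 1"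
    and ph: "\<phi> = \<mu> - b + s * (x0 - of_int M)"
    and y0: "y0 = of_int M * of_int pp + b + trw hh \<phi>"
  shows "key (Tz a b (e, (0, k)) ((False, tro hh \<phi>), (x0, y0))) = (True, e, 0, k)"
proof -
  obtain e1 e2 where e: "e = (e1, e2)" by (cases e)
  obtain j where j: "of_int j * hh \<le> \<phi>" "\<phi> < (of_int j + 1) * hh"
    "trw hh \<phi> = (if even j then \<phi> - of_int j * hh else (of_int j + 1) * hh - \<phi>)"
    "tro hh \<phi> = odd j" using trw_fold[OF hh0] by blast
  define i where "i = (if e1 then - M else M)"
  define x where "x = rx a e1 x0"
  define y where "y = rx b e2 y0 + of_int k"
  define g where "g = (e1, odd j \<noteq> e2)"
  have T: "Tz a b (e, (0, k)) ((False, tro hh \<phi>), (x0, y0)) = (g, (x, y))"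
    using j(4) by (simp add: Tz_def Tp_def gx_def e x_def y_def g_def)
  have xi: "of_int i < x" "x < of_int i + a" using x0 by (auto simp: i_def x_def rx_def)
  have xi': "(if fst g then a - (x - of_int i) else x - of_int i) = x0 - of_int M"
    by (simp add: g_def x_def i_def rx_def)
  have tr: "0 \<le> trw hh \<phi>" "trw hh \<phi> \<le> hh" using trw_range[OF hh0] by auto
  define r where "r = (if e2 then k - M * pp - 1 else M * pp + k)"
  have ry: "of_int r < y" "y \<le> of_int r + 1" using tr b0 b1 y0
    by (cases e2; auto simp: r_def y_def rx_def hh_def algebra_simps)+
  have rr: "\<lceil>y\<rceil> - 1 = r" using ceil_in[OF ry] .
  define \<tau> where "\<tau> = y - of_int r - b"
  have tau: "\<tau> = (if e2 then hh - trw hh \<phi> else trw hh \<phi>)"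
    using y0 by (cases e2) (auto simp: \<tau>_def r_def y_def rx_def hh_def algebra_simps)
  define \<psi> where "\<psi> = (if snd g then 2 * hh - \<tau> else \<tau>)"
  define v where "v = \<psi> - s * (x0 - of_int M)"
  define R where "R = (if e2 then \<mu> - b + hh else \<mu> - b)"
  have Rr: "0 \<le> R" "R < 2 * hh" "hh < R \<longleftrightarrow> e2" using mu by (auto simp: R_def hh_def)
  have vR: "\<exists>N::int. v = R + 2 * hh * of_int N"
  proof (cases "even j")
    case True
    then obtain j2 where j2: "j = 2 * j2" by (rule evenE)
    show ?thesis
    proof (cases e2)
      case True
      then have "v = R + 2 * hh * of_int (- j2)"
        using j(3) \<open>even j\<close> j2 by (simp add: v_def \<psi>_def g_def tau R_def ph algebra_simps)
      then show ?thesis by blast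
    next
      case False
      then have "v = R + 2 * hh * of_int (- j2)"
        using j(3) \<open>even j\<close> j2 by (simp add: v_def \<psi>_def g_def tau R_def ph algebra_simps)
      then show ?thesis by blast
    qed
  next
    case False
    then have "even (j + 1)" by simp
    then obtain j2 where j2: "j + 1 = 2 * j2" by (rule evenE)
    have jj: "of_int j = 2 * of_int j2 - (1::real)" using j2 by (metis add_diff_cancel_right' of_int_1 of_int_add of_int_mult of_int_numeral)
    show ?thesis
    proof (cases e2)
      case True
      then have "v = R + 2 * hh * of_int (- j2)"
        using j(3) False jj by (simp add: v_def \<psi>_def g_def tau R_def ph algebra_simps)
      then show ?thesis by blast
    next
      case False
      then have "v = R + 2 * hh * of_int (- j2 + 1)"
        using j(3) \<open>odd j\<close> jj by (simp add: v_def \<psi>_def g_def tau R_def ph algebra_simps)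
      then show ?thesis by blast
    qed
  qed
  then obtain N where N: "v = R + 2 * hh * of_int N" by blast
  have rho: "v - 2 * hh * of_int \<lfloor>v / (2 * hh)\<rfloor> = R" using mod_rep[OF hh0 Rr(1,2) N] .
  have "key (g, (x, y)) = keyC g i (x - of_int i) y" using key_corr[OF xi] .
  also have "\<dots> = (True, (e1, e2), 0, k)"
  proof -
    have "keyC g i (x - of_int i) y = (True, (fst g, hh < R), 0,
        if hh < R then r + 1 + (if fst g then - i else i) * pp else r - (if fst g then - i else i) * pp)"
      unfolding keyC_def Let_def rr \<tau>_def[symmetric] \<psi>_def[symmetric] xi' v_def[symmetric] rho ..
    also have "\<dots> = (True, (e1, e2), 0, k)"
      using Rr(3) by (cases e1; cases e2) (auto simp: g_def i_def r_def)
    finally show ?thesis .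
  qed
  finally show ?thesis using T e by simp
qed

end


lemma II_not_EE: "0 < A \<Longrightarrow> A < 1 \<Longrightarrow> II A y \<Longrightarrow> \<not> EE A y"
  unfolding II_def EE_def
proof clarify
  fix M N :: int assume h: "0 < A" "A < 1" "of_int M < y" "y < of_int M + A" "y = of_int N \<or> y = of_int N + A"
  show False
  proof (cases "y = of_int N")
    case True
    then have "(of_int M::real) < of_int N" "(of_int N::real) < of_int M + 1" using h by auto
    then have "M < N" "N < M + 1" by linarith+
    then show False by linarith
  next
    case False
    then have "y = of_int N + A" using h by simp
    then have "(of_int M::real) < of_int N + 1" "(of_int N::real) < of_int M" using h by auto
    then have "M - 1 < N" "N < M" by linarith+
    then show False by linarith
  qed
qed

lemma open_not_EE: "0 < A \<Longrightarrow> A < 1 \<Longrightarrow> of_int N + A < y \<Longrightarrow> y < of_int N + 1 \<Longrightarrow> \<not> EE A y"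
  using EE_gen[of A N y] by auto

context wtp begin

definition imgC where "imgC = Phic ` (Ic \<times> UNIV)"
definition imgR where "imgR = Phir ` (Ir \<times> UNIV)"

definition Sl :: "bool \<times> (bool \<times> bool) \<times> int \<times> int \<Rightarrow> wtrep set set" where
  "Sl l = (if fst l then Tc a b (fst (snd l), (0, snd (snd (snd l)))) ` imgR
           else Tc a b (fst (snd l), (fst (snd (snd l)), snd (snd (snd l)))) ` imgC)"

definition Canon :: "(bool \<times> (bool \<times> bool) \<times> int \<times> int) set" where
  "Canon = {l. (fst l \<and> fst (snd (snd l)) = 0) \<or>
     (\<not> fst l \<and> fst (fst (snd l)) = False \<and> 0 \<le> snd (snd (snd l)) \<and> snd (snd (snd l)) < 2 * pp)}"

lemma Sl_strip: "wt_strip a b th (Sl l)"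
  unfolding Sl_def imgC_def imgR_def using strip_Tc Phic_strip Phir_strip by simp

lemma col_nc:
  assumes "a \<le> x0" "x0 \<le> 1" "2 * of_int pp * of_int j < y0 - sg f * s * (x0 - a)"
    "y0 - sg f * s * (x0 - a) < 2 * of_int pp * of_int j + b"
  shows "\<not> is_corner a b (x0, y0)"
proof
  assume "is_corner a b (x0, y0)"
  then have E: "EE a x0" "EE b y0" by (auto simp: is_corner_iff)
  have "x0 = a \<or> x0 = 1" using EE_col[OF assms(1,2) E(1)] .
  then have "\<exists>N::int. of_int N < y0 \<and> y0 < of_int N + b"
  proof
    assume "x0 = a" then show ?thesis using assms(3,4) by (intro exI[of _ "2 * pp * j"]) auto
  next
    assume x1: "x0 = 1"
    have "s * (x0 - a) = of_int pp" using x1 sp by simp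
    show ?thesis
    proof (cases f)
      case True
      then show ?thesis using assms(3,4) \<open>s * (x0 - a) = of_int pp\<close>
        by (intro exI[of _ "2 * pp * j - pp"]) (auto simp: sg_def)
    next
      case False
      then show ?thesis using assms(3,4) \<open>s * (x0 - a) = of_int pp\<close>
        by (intro exI[of _ "2 * pp * j + pp"]) (auto simp: sg_def)
    qed
  qed
  then have "II b y0" by (simp add: II_def)
  then show False using II_not_EE[OF b0 b1] E(2) by blast
qed

lemma mem_Sl:
  assumes C: "C \<in> Sl l" and l: "l \<in> Canon"
  shows "\<exists>z. C = wt_class a b z \<and> z \<in> XR a b \<and> key z = l \<and> \<not> is_corner a b (snd z)"
proof (cases "fst l")
  case False
  obtain e m k where lE: "l = (False, e, m, k)" using False by (cases l) auto
  have e1: "fst e = False" "0 \<le> k" "k < 2 * pp" using l lE by (auto simp: Canon_def)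
  obtain e2 where e: "e = (False, e2)" using e1 by (cases e) auto
  obtain x where x: "x \<in> Ic \<times> UNIV" and Cx: "C = Tc a b (e, (m, k)) (Phic x)"
    using C lE by (auto simp: Sl_def imgC_def)
  define z0 where "z0 = (Gc (PC x), Fc (PC x))"
  obtain j where D: "snd (Gc (PC x)) = False" "a \<le> fst (Fc (PC x))" "fst (Fc (PC x)) \<le> 1"
    "2 * of_int pp * of_int j < snd (Fc (PC x)) - sg (fst (Gc (PC x))) * s * (fst (Fc (PC x)) - a)"
    "snd (Fc (PC x)) - sg (fst (Gc (PC x))) * s * (fst (Fc (PC x)) - a) < 2 * of_int pp * of_int j + b"
    using Phic_desc[OF x] by blast
  have z0: "z0 = ((fst (Gc (PC x)), False), (fst (Fc (PC x)), snd (Fc (PC x))))"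
    using D(1) by (simp add: z0_def prod_eq_iff)
  show ?thesis
  proof (intro exI conjI)
    show "C = wt_class a b (Tz a b (e, (m, k)) z0)" using Cx by (simp add: Phic_def Tc_class z0_def)
    show "Tz a b (e, m, k) z0 \<in> XR a b" using Fc_table[of "PC x"] by (simp add: z0_def XR_def Tz_def)
    show "key (Tz a b (e, m, k) z0) = l" unfolding z0 e lE
      by (rule key_col[OF D(2,3,4,5) e1(2,3)])
    show "\<not> is_corner a b (snd (Tz a b (e, m, k) z0))"
      using col_nc[OF D(2,3,4,5)] by (simp add: z0 Tz_def)
  qed
next
  case True
  obtain e m k where lE: "l = (True, e, m, k)" using True by (cases l) auto
  have m0: "m = 0" using l lE by (auto simp: Canon_def)
  obtain x where x: "x \<in> Ir \<times> UNIV" and Cx: "C = Tc a b (e, (0, k)) (Phir x)"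
    using C lE by (auto simp: Sl_def imgR_def)
  define X where "X = fst (PR x)"
  define \<mu> where "\<mu> = snd (PR x) - s * fst (PR x)"
  have D: "b < \<mu> \<and> \<mu> < 1 \<and>
    ((of_int \<lfloor>X\<rfloor> < X \<and> X < of_int \<lfloor>X\<rfloor> + a \<and>
       FR (PR x) = (X, of_int \<lfloor>X\<rfloor> * of_int pp + b + trw hh (\<mu> - b + s * (X - of_int \<lfloor>X\<rfloor>)))
     \<and> GR (PR x) = (False, tro hh (\<mu> - b + s * (X - of_int \<lfloor>X\<rfloor>))))
   \<or> (\<exists>I::int. of_int I + a \<le> X \<and> X \<le> of_int I + 1 \<and> GR (PR x) = (False, False) \<and>
        FR (PR x) = (X, of_int I * of_int pp + \<mu> + s * (X - of_int I - a))))"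
    unfolding X_def \<mu>_def by (rule Phir_desc[OF x])
  define z0 where "z0 = (GR (PR x), FR (PR x))"
  have C0: "C = wt_class a b (Tz a b (e, (0, k)) z0)" using Cx by (simp add: Phir_def Tc_class z0_def)
  have X0: "Tz a b (e, 0, k) z0 \<in> XR a b" using FR_table[of "PR x"] by (simp add: z0_def XR_def Tz_def)
  show ?thesis
  proof (cases "of_int \<lfloor>X\<rfloor> < X \<and> X < of_int \<lfloor>X\<rfloor> + a")
    case True
    define \<phi> where "\<phi> = \<mu> - b + s * (X - of_int \<lfloor>X\<rfloor>)"
    have nf: "\<not> (of_int I + a \<le> X \<and> X \<le> of_int I + 1)" for I :: int
    proof
      assume h: "of_int I + a \<le> X \<and> X \<le> of_int I + 1"
      then have "(of_int I::real) < of_int \<lfloor>X\<rfloor>" "(of_int \<lfloor>X\<rfloor>::real) < of_int I + 1" using True by linarith+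
      then have "I < \<lfloor>X\<rfloor>" "\<lfloor>X\<rfloor> < I + 1" by linarith+
      then show False by linarith
    qed
    have F: "z0 = ((False, tro hh \<phi>), (X, of_int \<lfloor>X\<rfloor> * of_int pp + b + trw hh \<phi>))"
      using D True nf by (auto simp: z0_def \<phi>_def)
    have "\<not> EE a X" using II_not_EE[OF a0 a1] True by (auto simp: II_def)
    then have "\<not> is_corner a b (X, of_int \<lfloor>X\<rfloor> * of_int pp + b + trw hh \<phi>)" by (simp add: is_corner_iff)
    then have nc: "\<not> is_corner a b (snd (Tz a b (e, 0, k) z0))" by (simp add: Tz_def F)
    show ?thesis using key_cc[OF conjunct1[OF True] conjunct2[OF True] conjunct1[OF D] conjunct1[OF conjunct2[OF D]] \<phi>_def refl, of e k]
      C0 X0 nc unfolding F lE m0 by blast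
  next
    case False
    then obtain I where I: "of_int I + a \<le> X" "X \<le> of_int I + 1" and F: "z0 = ((False, False), (X, of_int I * of_int pp + \<mu> + s * (X - of_int I - a)))"
      using D by (auto simp: z0_def)
    have nc0: "\<not> is_corner a b (X, of_int I * of_int pp + \<mu> + s * (X - of_int I - a))"
    proof
      assume "is_corner a b (X, of_int I * of_int pp + \<mu> + s * (X - of_int I - a))"
      then have E: "EE a X" "EE b (of_int I * of_int pp + \<mu> + s * (X - of_int I - a))" by (auto simp: is_corner_iff)
      have "X = of_int I + a \<or> X = of_int I + 1" using EE_gen[OF a0 a1 I E(1)] .
      then have "\<exists>N::int. of_int N + b < of_int I * of_int pp + \<mu> + s * (X - of_int I - a) \<and>
                      of_int I * of_int pp + \<mu> + s * (X - of_int I - a) < of_int N + 1"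
      proof
        assume "X = of_int I + a" then show ?thesis using D by (intro exI[of _ "I * pp"]) auto
      next
        assume "X = of_int I + 1"
        then have "s * (X - of_int I - a) = of_int pp" using sp by simp
        then show ?thesis using D by (intro exI[of _ "I * pp + pp"]) auto
      qed
      then show False using open_not_EE[OF b0 b1] E(2) by blast
    qed
    then have nc: "\<not> is_corner a b (snd (Tz a b (e, 0, k) z0))" by (simp add: Tz_def F)
    show ?thesis using key_cf[OF I conjunct1[OF D] conjunct1[OF conjunct2[OF D]] refl, of e k]
      C0 X0 nc unfolding F lE m0 by blast
  qed
qed

end


lemma rho_shift: "H > 0 \<Longrightarrow> (v + 2 * H) - 2 * H * of_int \<lfloor>(v + 2 * H) / (2 * H)\<rfloor> = v - 2 * H * of_int \<lfloor>v / (2 * H)\<rfloor>"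
proof -
  assume H: "H > 0"
  have "(v + 2 * H) / (2 * H) = v / (2 * H) + 1" using H by (simp add: field_simps)
  then have "\<lfloor>(v + 2 * H) / (2 * H)\<rfloor> = \<lfloor>v / (2 * H)\<rfloor> + 1" by simp
  then show ?thesis by (simp add: algebra_simps)
qed

context wtp begin

lemma key_wteq:
  assumes w: "wt_eq a b z z'" and nc: "\<not> is_corner a b (snd z)"
  shows "key z = key z'"
proof -
  obtain g x y where z: "z = (g, (x, y))" by (cases z) auto
  obtain g' where z': "z' = (g', (x, y))" using w z by (cases z') (auto simp: wt_eq_def)
  have W: "g = g' \<or> (on_vside a b (x, y) \<and> g' = (\<not> fst g, snd g)) \<or> (on_hside a b (x, y) \<and> g' = (fst g, \<not> snd g))"
    using w nc by (auto simp: wt_eq_def z z')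
  show ?thesis
  proof (cases "g = g'")
    case True then show ?thesis by (simp add: z z')
  next
    case False
    then consider "on_vside a b (x, y)" "g' = (\<not> fst g, snd g)" | "on_hside a b (x, y)" "g' = (fst g, \<not> snd g)"
      using W by blast
    then show ?thesis
    proof cases
      case 1
      then have E: "EE a x" and Iy: "II b y" by (auto simp: on_vside_iff)
      obtain N :: int where N: "of_int N < y" "y < of_int N + b" using Iy by (auto simp: II_def)
      obtain M :: int where M: "x = of_int M \<or> x = of_int M + a" using E by (auto simp: EE_def)
      show ?thesis
      proof (cases "x = of_int M + a")
        case True
        have fl: "\<lfloor>y\<rfloor> = N" using N b1 by (intro floor_unique) auto
        have "key (g, (x, y)) = keyF g M a y" "key (g', (x, y)) = keyF g' M a y"
          using key_free[of M x] True a1 by auto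
        moreover have "keyF g M a y = keyF g' M a y"
          unfolding keyF_def Let_def using fl N 1(2) by simp
        ultimately show ?thesis by (simp add: z z')
      next
        case False
        then have xM: "x = of_int (M - 1) + 1" using M by simp
        have K: "key (g, (x, y)) = keyF g (M - 1) 1 y" "key (g', (x, y)) = keyF g' (M - 1) 1 y"
          using key_free[of "M - 1" x] xM a1 by auto
        define \<sigma> where "\<sigma> = sg (fst g) * sg (snd g)"
        have \<sigma>: "\<sigma> = 1 \<or> \<sigma> = -1" by (auto simp: \<sigma>_def sg_def)
        have L1: "y - sg (fst g) * sg (snd g) * s * (1 - a) = y - \<sigma> * of_int pp" using sp by (simp add: \<sigma>_def)
        have L2: "y - sg (fst g') * sg (snd g') * s * (1 - a) = y + \<sigma> * of_int pp" using sp 1(2) by (simp add: \<sigma>_def sg_def)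
        have "\<exists>d::int. \<sigma> * of_int pp = of_int d"
          using \<sigma> by (metis mult_1 mult_minus_left of_int_minus)
        then obtain d :: int where d: "\<sigma> * of_int pp = of_int d" by blast
        have f1: "\<lfloor>y - of_int d\<rfloor> = N - d" using N b1 by (intro floor_unique) auto
        have f2: "\<lfloor>y + of_int d\<rfloor> = N + d" using N b1 by (intro floor_unique) auto
        have dd: "(N + d) mod (2 * pp) = (N - d) mod (2 * pp)"
        proof -
          have "d = pp \<or> d = - pp" using d \<sigma> by auto
          then have "N + d = (N - d) + 2 * pp * (if d = pp then 1 else -1)" by auto
          then show ?thesis by (metis mod_mult_self2 mult.commute)
        qed
        show ?thesis unfolding z z' K keyF_def Let_def L1 L2 d f1 f2 using N dd 1(2) by simp
      qed
    next
      case 2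
      then have Ix: "II a x" and E: "EE b y" by (auto simp: on_hside_iff)
      obtain M :: int where M: "of_int M < x" "x < of_int M + a" using Ix by (auto simp: II_def)
      obtain N :: int where N: "y = of_int N \<or> y = of_int N + b" using E by (auto simp: EE_def)
      have K: "key (g, (x, y)) = keyC g M (x - of_int M) y" "key (g', (x, y)) = keyC g' M (x - of_int M) y"
        using key_corr[OF M] by auto
      define r where "r = \<lceil>y\<rceil> - 1"
      define \<tau> where "\<tau> = y - of_int r - b"
      have tau: "\<tau> = 0 \<or> \<tau> = hh"
      proof (cases "y = of_int N")
        case True
        then have "r = N - 1" by (simp add: r_def)
        then show ?thesis using True by (simp add: \<tau>_def hh_def)
      next
        case False
        then have yN: "y = of_int N + b" using N by simp
        then have "r = N" using b0 b1 by (simp add: r_def ceil_in)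
        then show ?thesis using yN by (simp add: \<tau>_def)
      qed
      define \<xi>' where "\<xi>' = (if fst g then a - (x - of_int M) else x - of_int M)"
      define \<rho> where "\<rho> = (\<lambda>v. v - 2 * hh * of_int \<lfloor>v / (2 * hh)\<rfloor>)"
      have R: "\<rho> ((if snd g then 2 * hh - \<tau> else \<tau>) - s * \<xi>') = \<rho> ((if snd g' then 2 * hh - \<tau> else \<tau>) - s * \<xi>')"
      proof (cases "\<tau> = 0")
        case True
        then show ?thesis using rho_shift[OF hh0, of "- s * \<xi>'"] 2(2) by (auto simp: \<rho>_def)
      next
        case False
        then have "\<tau> = hh" using tau by simp
        then show ?thesis using 2(2) by (auto simp: \<rho>_def)
      qed
      have "keyC g M (x - of_int M) y = keyC g' M (x - of_int M) y"
        using R 2(2) unfolding keyC_def Let_def r_def[symmetric] \<tau>_def[symmetric] \<rho>_def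
        by (simp add: \<xi>'_def)
      then show ?thesis using K by (simp add: z z')
    qed
  qed
qed

lemma Sl_disj:
  assumes l: "l \<in> Canon" "l' \<in> Canon" and C: "C \<in> Sl l" "C \<in> Sl l'"
  shows "l = l'"
proof -
  obtain z where z: "C = wt_class a b z" "z \<in> XR a b" "key z = l" "\<not> is_corner a b (snd z)"
    using mem_Sl[OF C(1) l(1)] by blast
  obtain z' where z': "C = wt_class a b z'" "z' \<in> XR a b" "key z' = l'" "\<not> is_corner a b (snd z')"
    using mem_Sl[OF C(2) l(2)] by blast
  have "wt_eq a b z z'" using class_eq_D[OF z'(2)] z(1) z'(1) by simp
  then show ?thesis using key_wteq z(3,4) z'(3) by metis
qed

end


lemma trw_per: "L > 0 \<Longrightarrow> trw L (v - 2 * L * of_int N) = trw L v \<and> tro L (v - 2 * L * of_int N) = tro L v"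
proof -
  assume L: "L > 0"
  have h: "(v - 2 * L * of_int N) / L = v / L - of_int (2 * N)" using L by (simp add: field_simps)
  have f: "\<lfloor>(v - 2 * L * of_int N) / L\<rfloor> = \<lfloor>v / L\<rfloor> - 2 * N" by (subst h) (rule floor_diff_of_int)
  have e: "even (\<lfloor>v / L\<rfloor> - 2 * N) = even \<lfloor>v / L\<rfloor>" by simp
  show ?thesis unfolding trw_def tro_def Let_def f e by (simp add: algebra_simps)
qed

context wtp begin

lemma PC_surj: "\<exists>x. PC x = (X, Y) \<and> fst x * kap = Y - s * (X - a)"
proof -
  define t where "t = c * (Y - s * (X - a))"
  define u where "u = (X - a) / c + t * s"
  have tk: "t * kap = Y - s * (X - a)" using ckap by (simp add: t_def)
  have "PC (t, u) = (X, Y)"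
  proof -
    have 1: "a - t * (s * c) + u * c = X" using c0 by (simp add: u_def field_simps)
    have "t * c + u * (s * c) = t * (c * (1 + s * s)) + s * (X - a)" using c0 by (simp add: u_def field_simps)
    then have 2: "t * c + u * (s * c) = Y" using tk by (simp add: kap_def)
    show ?thesis using 1 2 by (simp add: PC_def)
  qed
  then show ?thesis using tk by (intro exI[of _ "(t, u)"]) simp
qed

lemma PR_surj: "\<exists>x. PR x = (X, Y) \<and> fst x * kap = Y - s * X - b"
proof -
  define t where "t = c * (Y - s * X - b)"
  define u where "u = X / c + t * s"
  have tk: "t * kap = Y - s * X - b" using ckap by (simp add: t_def)
  have "PR (t, u) = (X, Y)"
  proof -
    have 1: "- t * (s * c) + u * c = X" using c0 by (simp add: u_def field_simps)
    have "b + t * c + u * (s * c) = b + t * (c * (1 + s * s)) + s * X" using c0 by (simp add: u_def field_simps)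
    then have 2: "b + t * c + u * (s * c) = Y" using tk by (simp add: kap_def)
    show ?thesis using 1 2 by (simp add: PR_def)
  qed
  then show ?thesis using tk by (intro exI[of _ "(t, u)"]) simp
qed

lemma kap_Ic: "0 < t * kap \<Longrightarrow> t * kap < B \<Longrightarrow> 0 < t \<and> t < B * c"
proof -
  assume h: "0 < t * kap" "t * kap < B"
  have E: "t * kap * c = t" using ckap by (metis mult.assoc mult.commute mult_1_right)
  have "0 < t * kap * c" "t * kap * c < B * c" using h c0 by auto
  then show ?thesis unfolding E by simp
qed

lemma col_surj:
  assumes x0: "a < x0" "x0 < 1" and j: "2 * of_int pp * of_int j < y0 - sg f * s * (x0 - a)"
    "y0 - sg f * s * (x0 - a) < 2 * of_int pp * of_int j + b"
  shows "\<exists>x \<in> Ic \<times> UNIV. Phic x = wt_class a b ((f, False), (x0, y0))"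
proof -
  define L where "L = 1 - a"
  have L: "L > 0" using L1 by (simp add: L_def)
  define X where "X = (if f then a + 2 * of_int j * L - (x0 - a) else x0 + 2 * of_int j * L)"
  have "s * (2 * of_int j * L) = 2 * of_int j * (s * (1 - a))" by (simp add: L_def algebra_simps)
  then have sL: "s * (2 * of_int j * L) = 2 * of_int pp * of_int j" using sp by simp
  have lam: "y0 - s * (X - a) = y0 - sg f * s * (x0 - a) - 2 * of_int pp * of_int j"
    using sL by (cases f) (auto simp: X_def sg_def algebra_simps)
  obtain x where x: "PC x = (X, y0)" "fst x * kap = y0 - s * (X - a)" using PC_surj by blast
  have "0 < fst x \<and> fst x < b * c" using kap_Ic[of "fst x" b] x(2) lam j by simp
  then have xI: "x \<in> Ic \<times> UNIV" by (cases x) (auto simp: Ic_def)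
  have FG: "Fc (X, y0) = (x0, y0) \<and> Gc (X, y0) = (f, False)"
  proof (cases f)
    case True
    have r: "of_int (2 * j - 1) * L \<le> X - a" "X - a < (of_int (2 * j - 1) + 1) * L"
      using x0 True by (auto simp: X_def L_def algebra_simps)
    show ?thesis using trw_piece[OF L r(1) less_imp_le[OF r(2)]] tro_piece[OF L r] True
      by (simp add: Fc_def Gc_def L_def[symmetric] X_def algebra_simps)
  next
    case False
    have r: "of_int (2 * j) * L \<le> X - a" "X - a < (of_int (2 * j) + 1) * L"
      using x0 False by (auto simp: X_def L_def algebra_simps)
    show ?thesis using trw_piece[OF L r(1) less_imp_le[OF r(2)]] tro_piece[OF L r] False
      by (simp add: Fc_def Gc_def L_def[symmetric] X_def algebra_simps)
  qed
  show ?thesis using xI x(1) FG by (intro bexI[of _ x]) (simp_all add: Phic_def)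
qed

lemma corfree_surj:
  assumes x0: "of_int I + a < x0" "x0 < of_int I + 1" and mu: "b < y0 - of_int I * of_int pp - s * (x0 - of_int I - a)"
    "y0 - of_int I * of_int pp - s * (x0 - of_int I - a) < 1"
  shows "\<exists>x \<in> Ir \<times> UNIV. Phir x = wt_class a b ((False, False), (x0, y0))"
proof -
  define \<mu> where "\<mu> = y0 - of_int I * of_int pp - s * (x0 - of_int I - a)"
  obtain x where x: "PR x = (x0, \<mu> + s * x0)" "fst x * kap = \<mu> + s * x0 - s * x0 - b" using PR_surj by blast
  have "0 < fst x \<and> fst x < hh * c" using kap_Ic[of "fst x" hh] x(2) mu by (simp add: \<mu>_def hh_def)
  then have xI: "x \<in> Ir \<times> UNIV" by (cases x) (auto simp: Ir_def)
  have "FR (x0, \<mu> + s * x0) = (x0, y0) \<and> GR (x0, \<mu> + s * x0) = (False, False)"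
    using FRm_free[of I "(x0, \<mu> + s * x0)"] x0 by (simp add: \<mu>_def algebra_simps)
  then show ?thesis using xI x(1) by (intro bexI[of _ x]) (simp_all add: Phir_def)
qed

lemma corcorr_surj:
  assumes x0: "of_int M < x0" "x0 < of_int M + a" and y0: "of_int M * of_int pp + b < y0" "y0 < of_int M * of_int pp + 1"
    and R: "0 < R" "R < hh"
    and Rd: "R = v - 2 * hh * of_int \<lfloor>v / (2 * hh)\<rfloor>"
    and vd: "v = (if \<omega> then 2 * hh - (y0 - of_int M * of_int pp - b) else y0 - of_int M * of_int pp - b) - s * (x0 - of_int M)"
  shows "\<exists>x \<in> Ir \<times> UNIV. Phir x = wt_class a b ((False, \<omega>), (x0, y0))"
proof -
  define \<mu> where "\<mu> = b + R"
  define \<tau> where "\<tau> = y0 - of_int M * of_int pp - b"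
  have tau: "0 < \<tau>" "\<tau> < hh" using y0 by (auto simp: \<tau>_def hh_def)
  define \<psi> where "\<psi> = (if \<omega> then 2 * hh - \<tau> else \<tau>)"
  obtain x where x: "PR x = (x0, \<mu> + s * x0)" "fst x * kap = \<mu> + s * x0 - s * x0 - b" using PR_surj by blast
  have "0 < fst x \<and> fst x < hh * c" using kap_Ic[of "fst x" hh] x(2) R by (simp add: \<mu>_def)
  then have xI: "x \<in> Ir \<times> UNIV" by (cases x) (auto simp: Ir_def)
  define \<phi> where "\<phi> = \<mu> - b + s * (x0 - of_int M)"
  define F where "F = \<lfloor>v / (2 * hh)\<rfloor>"
  have v': "v = \<psi> - s * (x0 - of_int M)" using vd by (simp add: \<psi>_def \<tau>_def)
  have R': "R = v - 2 * hh * of_int F" using Rd by (simp only: F_def)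
  have ph0: "\<phi> = \<psi> - 2 * hh * of_int F"
    unfolding \<phi>_def \<mu>_def R' v' by (simp add: algebra_simps)
  have ph: "\<phi> = \<psi> - 2 * hh * of_int \<lfloor>v / (2 * hh)\<rfloor>" using ph0 unfolding F_def .
  have TT: "trw hh \<phi> = \<tau> \<and> tro hh \<phi> = \<omega>"
  proof -
    have P: "trw hh \<phi> = trw hh \<psi> \<and> tro hh \<phi> = tro hh \<psi>" unfolding ph by (rule trw_per[OF hh0])
    show ?thesis
    proof (cases \<omega>)
      case True
      have r: "of_int 1 * hh \<le> \<psi>" "\<psi> < (of_int 1 + 1) * hh" using tau True by (auto simp: \<psi>_def)
      show ?thesis using P trw_piece[OF hh0 r(1) less_imp_le[OF r(2)]] tro_piece[OF hh0 r] True by (simp add: \<psi>_def)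
    next
      case False
      have r: "of_int 0 * hh \<le> \<psi>" "\<psi> < (of_int 0 + 1) * hh" using tau False by (auto simp: \<psi>_def)
      show ?thesis using P trw_piece[OF hh0 r(1) less_imp_le[OF r(2)]] tro_piece[OF hh0 r] False by (simp add: \<psi>_def)
    qed
  qed
  have "FR (x0, \<mu> + s * x0) = (x0, y0) \<and> GR (x0, \<mu> + s * x0) = (False, \<omega>)"
    using FRm_corr[of M "(x0, \<mu> + s * x0)"] x0 TT by (simp add: \<phi>_def \<tau>_def)
  then show ?thesis using xI x(1) by (intro bexI[of _ x]) (simp_all add: Phir_def)
qed

end


context wtp begin

definition LamF :: "bool \<times> bool \<Rightarrow> int \<Rightarrow> real \<Rightarrow> real \<Rightarrow> real" where
  "LamF g i x y = y - sg (fst g) * sg (snd g) * s * (x - of_int i - a)"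

definition vC :: "bool \<times> bool \<Rightarrow> int \<Rightarrow> int \<Rightarrow> real \<Rightarrow> real \<Rightarrow> real" where
  "vC g i r x y = (if snd g then 2 * hh - (y - of_int r - b) else y - of_int r - b)
                  - s * (if fst g then a - (x - of_int i) else x - of_int i)"

definition rhoC :: "real \<Rightarrow> real" where
  "rhoC v = v - 2 * hh * of_int \<lfloor>v / (2 * hh)\<rfloor>"

definition genF :: "int \<Rightarrow> wtrep \<Rightarrow> bool" where
  "genF i z \<longleftrightarrow> of_int i + a < fst (snd z) \<and> fst (snd z) < of_int i + 1 \<and>
     LamF (fst z) i (fst (snd z)) (snd (snd z)) \<noteq> of_int \<lfloor>LamF (fst z) i (fst (snd z)) (snd (snd z))\<rfloor> \<and>
     LamF (fst z) i (fst (snd z)) (snd (snd z)) \<noteq> of_int \<lfloor>LamF (fst z) i (fst (snd z)) (snd (snd z))\<rfloor> + b"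

definition genC :: "int \<Rightarrow> int \<Rightarrow> wtrep \<Rightarrow> bool" where
  "genC i r z \<longleftrightarrow> of_int i < fst (snd z) \<and> fst (snd z) < of_int i + a \<and>
     of_int r + b < snd (snd z) \<and> snd (snd z) < of_int r + 1 \<and>
     rhoC (vC (fst z) i r (fst (snd z)) (snd (snd z))) \<noteq> 0 \<and>
     rhoC (vC (fst z) i r (fst (snd z)) (snd (snd z))) \<noteq> hh"

lemma class_via_T: "wt_class a b z = Tc a b \<tau> (wt_class a b (Tz a b (tinv \<tau>) z))"
  by (simp add: Tc_class)

lemma surjF:
  assumes G: "genF i (g, (x, y))"
  shows "key (g, (x, y)) \<in> Canon \<and> wt_class a b (g, (x, y)) \<in> Sl (key (g, (x, y)))"
proof -
  have xi: "of_int i + a < x" "x < of_int i + 1" using G by (auto simp: genF_def)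
  define \<Lambda> where "\<Lambda> = LamF g i x y"
  define n where "n = \<lfloor>\<Lambda>\<rfloor>"
  define f where "f = \<Lambda> - of_int n"
  have f01: "0 < f" "f < 1" "f \<noteq> b"
  proof -
    have "of_int n \<le> \<Lambda>" "\<Lambda> < of_int n + 1" unfolding n_def by linarith+
    moreover have "\<Lambda> \<noteq> of_int n" "\<Lambda> \<noteq> of_int n + b" using G by (auto simp: genF_def \<Lambda>_def n_def)
    ultimately show "0 < f" "f < 1" "f \<noteq> b" by (auto simp: f_def)
  qed
  have K: "key (g, (x, y)) = keyF g i (x - of_int i) y" using key_free[of i x] xi by simp
  have Lam: "y - sg (fst g) * sg (snd g) * s * (x - of_int i - a) = \<Lambda>" by (simp add: \<Lambda>_def LamF_def)
  show ?thesis
  proof (cases "f < b")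
    case True
    define k where "k = n mod (2 * pp)"
    have kr: "0 \<le> k" "k < 2 * pp" using pp1 by (auto simp: k_def)
    have nk: "n = 2 * pp * (n div (2 * pp)) + k" by (simp add: k_def)
    have Kv: "key (g, (x, y)) = (False, (False, snd g), i, k)"
      unfolding K keyF_def Let_def Lam using True by (simp add: n_def[symmetric] f_def[symmetric] k_def)
    define \<tau> where "\<tau> = ((False, snd g), (i, k))"
    have z0: "Tz a b (tinv \<tau>) (g, (x, y)) = ((fst g, False), (x - of_int i, if snd g then b - y + of_int k else y - of_int k))"
      by (cases g) (auto simp: Tz_def Tp_def tinv_def \<tau>_def gx_def rx_def)
    define j where "j = (if snd g then - (n div (2 * pp)) else n div (2 * pp))"
    have nk': "of_int n = 2 * of_int pp * of_int (n div (2 * pp)) + (of_int k::real)"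
      using nk by (metis of_int_add of_int_mult of_int_numeral mult.assoc)
    have jj: "2 * of_int pp * of_int j < (if snd g then b - y + of_int k else y - of_int k) - sg (fst g) * s * (x - of_int i - a) \<and>
         (if snd g then b - y + of_int k else y - of_int k) - sg (fst g) * s * (x - of_int i - a) < 2 * of_int pp * of_int j + b"
    proof (cases "snd g")
      case True
      have "(b - y + of_int k) - sg (fst g) * s * (x - of_int i - a) = b + of_int k - \<Lambda>"
        using Lam True by (simp add: sg_def algebra_simps)
      then show ?thesis using True f01 \<open>f < b\<close> nk' by (simp add: j_def f_def algebra_simps)
    next
      case False
      have "(y - of_int k) - sg (fst g) * s * (x - of_int i - a) = \<Lambda> - of_int k"
        using Lam False by (simp add: sg_def algebra_simps)
      then show ?thesis using False f01 \<open>f < b\<close> nk' by (simp add: j_def f_def algebra_simps)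
    qed
    obtain xx where xx: "xx \<in> Ic \<times> UNIV" "Phic xx = wt_class a b (Tz a b (tinv \<tau>) (g, (x, y)))"
      using col_surj[of "x - of_int i" j "if snd g then b - y + of_int k else y - of_int k" "fst g"] xi jj z0
      by (auto simp: algebra_simps)
    have "wt_class a b (g, (x, y)) \<in> Sl (key (g, (x, y)))"
      unfolding Kv Sl_def imgC_def using xx class_via_T[of "(g, (x, y))" \<tau>]
      by (auto simp: \<tau>_def intro!: image_eqI[of _ _ "Phic xx"])
    then show ?thesis using Kv kr by (simp add: Canon_def)
  next
    case False
    then have fb: "b < f" using f01 by simp
    define k where "k = n + (if snd g then 1 else 0) - (if fst g = snd g then 1 else -1) * i * pp"
    have Kv: "key (g, (x, y)) = (True, g, 0, k)"
      unfolding K keyF_def Let_def Lam using False by (simp add: n_def[symmetric] f_def[symmetric] k_def)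
    define \<tau> where "\<tau> = (g, (0::int, k))"
    define I where "I = (if fst g then - i - 1 else i)"
    define x0 where "x0 = rx a (fst g) x"
    define y0 where "y0 = rx b (snd g) y + (if snd g then of_int k else - of_int k)"
    have z0: "Tz a b (tinv \<tau>) (g, (x, y)) = ((False, False), (x0, y0))"
      by (cases g) (auto simp: Tz_def Tp_def tinv_def \<tau>_def gx_def x0_def y0_def rx_def)
    have x0r: "of_int I + a < x0" "x0 < of_int I + 1" using xi by (auto simp: I_def x0_def rx_def)
    have mu: "y0 - of_int I * of_int pp - s * (x0 - of_int I - a) = (if snd g then 1 + b - f else f)"
    proof -
      have fe: "f = \<Lambda> - of_int n" by (simp add: f_def)
      show ?thesis
        using Lam sp unfolding fe
        by (cases "fst g"; cases "snd g") (auto simp: y0_def x0_def I_def k_def rx_def sg_def algebra_simps)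
    qed
    have mu': "b < y0 - of_int I * of_int pp - s * (x0 - of_int I - a)" "y0 - of_int I * of_int pp - s * (x0 - of_int I - a) < 1"
      using mu fb f01 by (cases "snd g"; simp)+
    obtain xx where xx: "xx \<in> Ir \<times> UNIV" "Phir xx = wt_class a b ((False, False), (x0, y0))"
      using corfree_surj[OF x0r mu'] by blast
    then have xx: "xx \<in> Ir \<times> UNIV" "Phir xx = wt_class a b (Tz a b (tinv \<tau>) (g, (x, y)))" using z0 by simp_all
    have "wt_class a b (g, (x, y)) \<in> Sl (key (g, (x, y)))"
      unfolding Kv Sl_def imgR_def using xx class_via_T[of "(g, (x, y))" \<tau>]
      by (auto simp: \<tau>_def intro!: image_eqI[of _ _ "Phir xx"])
    then show ?thesis using Kv by (simp add: Canon_def)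
  qed
qed

lemma surjC:
  assumes G: "genC i r (g, (x, y))"
  shows "key (g, (x, y)) \<in> Canon \<and> wt_class a b (g, (x, y)) \<in> Sl (key (g, (x, y)))"
proof -
  have xi: "of_int i < x" "x < of_int i + a" and yr: "of_int r + b < y" "y < of_int r + 1"
    using G by (auto simp: genC_def)
  have rr: "\<lceil>y\<rceil> - 1 = r" using yr b0 by (intro ceil_in) auto
  define v where "v = vC g i r x y"
  define \<rho> where "\<rho> = rhoC v"
  have rho: "0 < \<rho>" "\<rho> < 2 * hh" "\<rho> \<noteq> hh"
  proof -
    have h2: "2 * hh > 0" using hh0 by simp
    have "2 * hh * of_int \<lfloor>v / (2 * hh)\<rfloor> \<le> v" "v < 2 * hh * (of_int \<lfloor>v / (2 * hh)\<rfloor> + 1)"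
      using floor_divide_lower[OF h2, of v] floor_divide_upper[OF h2, of v] by (simp_all add: algebra_simps)
    moreover have "\<rho> \<noteq> 0" "\<rho> \<noteq> hh" using G by (auto simp: genC_def \<rho>_def v_def)
    ultimately show "0 < \<rho>" "\<rho> < 2 * hh" "\<rho> \<noteq> hh" by (auto simp: \<rho>_def rhoC_def algebra_simps)
  qed
  define e2 where "e2 = (hh < \<rho>)"
  define M where "M = (if fst g then - i else i)"
  define k where "k = (if e2 then r + 1 + M * pp else r - M * pp)"
  have K: "key (g, (x, y)) = keyC g i (x - of_int i) y" using key_corr[OF xi] .
  have Kv: "key (g, (x, y)) = (True, (fst g, e2), 0, k)"
    unfolding K keyC_def Let_def rr
    by (simp add: e2_def M_def k_def \<rho>_def rhoC_def v_def vC_def)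
  define \<tau> where "\<tau> = ((fst g, e2), (0::int, k))"
  define x0 where "x0 = rx a (fst g) x"
  define y0 where "y0 = rx b e2 y + (if e2 then of_int k else - of_int k)"
  define \<omega> where "\<omega> = (snd g \<noteq> e2)"
  have z0: "Tz a b (tinv \<tau>) (g, (x, y)) = ((False, \<omega>), (x0, y0))"
    by (cases g) (auto simp: Tz_def Tp_def tinv_def \<tau>_def gx_def x0_def y0_def rx_def \<omega>_def)
  have x0r: "of_int M < x0" "x0 < of_int M + a" using xi by (auto simp: M_def x0_def rx_def)
  have y0r: "of_int M * of_int pp + b < y0" "y0 < of_int M * of_int pp + 1"
    using yr by (auto simp: y0_def k_def rx_def algebra_simps)
  define R where "R = (if e2 then \<rho> - hh else \<rho>)"
  have Rr: "0 < R" "R < hh" using rho by (auto simp: R_def e2_def)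
  define v0 where "v0 = (if \<omega> then 2 * hh - (y0 - of_int M * of_int pp - b) else y0 - of_int M * of_int pp - b) - s * (x0 - of_int M)"
  define F where "F = \<lfloor>v / (2 * hh)\<rfloor>"
  have vF: "v = \<rho> + 2 * hh * of_int F" by (simp add: \<rho>_def rhoC_def F_def)
  have xM: "x0 - of_int M = (if fst g then a - (x - of_int i) else x - of_int i)"
    by (simp add: x0_def M_def rx_def)
  have "\<exists>N::int. v0 = R + 2 * hh * of_int N"
  proof (cases e2)
    case False
    have "v0 = v" using False
      by (simp add: v0_def v_def vC_def xM \<omega>_def y0_def k_def rx_def algebra_simps)
    then show ?thesis using False vF by (auto simp: R_def)
  next
    case True
    show ?thesis
    proof (cases "snd g")
      case True
      have "v0 = v - hh" using True \<open>e2\<close>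
        by (simp add: v0_def v_def vC_def xM \<omega>_def y0_def k_def rx_def hh_def algebra_simps)
      then have "v0 = R + 2 * hh * of_int F" using vF \<open>e2\<close> by (simp add: R_def)
      then show ?thesis by blast
    next
      case False
      have "v0 = v + hh" using False \<open>e2\<close>
        by (simp add: v0_def v_def vC_def xM \<omega>_def y0_def k_def rx_def hh_def algebra_simps)
      then have "v0 = R + 2 * hh * of_int (F + 1)" using vF \<open>e2\<close> by (simp add: R_def algebra_simps)
      then show ?thesis by blast
    qed
  qed
  then obtain N :: int where N: "v0 = R + 2 * hh * of_int N" by blast
  have Rd: "R = v0 - 2 * hh * of_int \<lfloor>v0 / (2 * hh)\<rfloor>"
    using mod_rep[OF hh0 less_imp_le[OF Rr(1)] _ N] Rr hh0 by simp
  obtain xx where xx: "xx \<in> Ir \<times> UNIV" "Phir xx = wt_class a b ((False, \<omega>), (x0, y0))"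
    using corcorr_surj[OF x0r y0r Rr Rd v0_def] by blast
  then have xx: "xx \<in> Ir \<times> UNIV" "Phir xx = wt_class a b (Tz a b (tinv \<tau>) (g, (x, y)))" using z0 by simp_all
  have "wt_class a b (g, (x, y)) \<in> Sl (key (g, (x, y)))"
    unfolding Kv Sl_def imgR_def using xx class_via_T[of "(g, (x, y))" \<tau>]
    by (auto simp: \<tau>_def intro!: image_eqI[of _ _ "Phir xx"])
  then show ?thesis using Kv by (simp add: Canon_def)
qed

end


definition Zi :: "real \<Rightarrow> bool" where "Zi x \<longleftrightarrow> (\<exists>M::int. x = of_int M)"
definition ZA :: "real \<Rightarrow> real \<Rightarrow> bool" where "ZA A x \<longleftrightarrow> (\<exists>M::int. x = of_int M + A)"

lemma small_move:
  fixes \<alpha> d :: real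
  assumes "\<alpha> \<noteq> 0" "d > 0"
  shows "\<exists>\<delta>0>0. \<forall>\<delta>. 0 < \<delta> \<and> \<delta> < \<delta>0 \<longrightarrow> \<bar>\<alpha> * \<delta>\<bar> < d \<and> (\<alpha> > 0 \<longrightarrow> \<alpha> * \<delta> > 0) \<and> (\<alpha> < 0 \<longrightarrow> \<alpha> * \<delta> < 0)"
proof (intro exI[of _ "d / \<bar>\<alpha>\<bar>"] conjI)
  show "d / \<bar>\<alpha>\<bar> > 0" using assms by simp
  show "\<forall>\<delta>. 0 < \<delta> \<and> \<delta> < d / \<bar>\<alpha>\<bar> \<longrightarrow> \<bar>\<alpha> * \<delta>\<bar> < d \<and> (\<alpha> > 0 \<longrightarrow> \<alpha> * \<delta> > 0) \<and> (\<alpha> < 0 \<longrightarrow> \<alpha> * \<delta> < 0)"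
  proof (intro allI impI)
    fix \<delta> :: real assume h: "0 < \<delta> \<and> \<delta> < d / \<bar>\<alpha>\<bar>"
    then have "\<bar>\<alpha>\<bar> * \<delta> < d" using assms by (simp add: less_divide_eq mult.commute)
    then have "\<bar>\<alpha> * \<delta>\<bar> < d" using h by (simp add: abs_mult)
    then show "\<bar>\<alpha> * \<delta>\<bar> < d \<and> (\<alpha> > 0 \<longrightarrow> \<alpha> * \<delta> > 0) \<and> (\<alpha> < 0 \<longrightarrow> \<alpha> * \<delta> < 0)"
      using h by (simp add: mult_neg_pos)
  qed
qed

lemma ray1:
  assumes A: "0 < A" "A < 1" and al: "\<alpha> \<noteq> 0"
  shows "\<exists>\<delta>0>0. \<exists>i::int.
     ((\<forall>\<delta>. 0 < \<delta> \<and> \<delta> < \<delta>0 \<longrightarrow> of_int i < x + \<alpha> * \<delta> \<and> x + \<alpha> * \<delta> < of_int i + A) \<and>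
         (II A x \<or> (Zi x \<and> \<alpha> > 0) \<or> (ZA A x \<and> \<alpha> < 0)))
   \<or> (\<forall>\<delta>. 0 < \<delta> \<and> \<delta> < \<delta>0 \<longrightarrow> of_int i + A < x + \<alpha> * \<delta> \<and> x + \<alpha> * \<delta> < of_int i + 1)"
proof -
  define i0 where "i0 = \<lfloor>x\<rfloor>"
  define f where "f = x - of_int i0"
  have f: "0 \<le> f" "f < 1" unfolding f_def i0_def by linarith+
  have xf: "x = of_int i0 + f" by (simp add: f_def)
  consider "0 < f \<and> f < A" | "A < f" | "f = 0" | "f = A" using f by linarith
  then show ?thesis
  proof cases
    case 1
    obtain \<delta>0 where d: "\<delta>0 > 0" "\<forall>\<delta>. 0 < \<delta> \<and> \<delta> < \<delta>0 \<longrightarrow> \<bar>\<alpha> * \<delta>\<bar> < min f (A - f)"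
      using small_move[OF al, of "min f (A - f)"] 1 by auto
    have "II A x" unfolding II_def using 1 by (intro exI[of _ i0]) (auto simp: xf)
    then show ?thesis using d 1 by (intro exI[of _ \<delta>0] conjI exI[of _ i0] disjI1) (auto simp: xf abs_less_iff)
  next
    case 2
    obtain \<delta>0 where d: "\<delta>0 > 0" "\<forall>\<delta>. 0 < \<delta> \<and> \<delta> < \<delta>0 \<longrightarrow> \<bar>\<alpha> * \<delta>\<bar> < min (f - A) (1 - f)"
      using small_move[OF al, of "min (f - A) (1 - f)"] 2 f by auto
    then show ?thesis using 2 by (intro exI[of _ \<delta>0] conjI exI[of _ i0] disjI2) (auto simp: xf abs_less_iff)
  next
    case 3
    have Z: "Zi x" unfolding Zi_def using 3 by (auto simp: xf)
    show ?thesis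
    proof (cases "\<alpha> > 0")
      case True
      obtain \<delta>0 where d: "\<delta>0 > 0" "\<forall>\<delta>. 0 < \<delta> \<and> \<delta> < \<delta>0 \<longrightarrow> \<bar>\<alpha> * \<delta>\<bar> < A \<and> \<alpha> * \<delta> > 0"
        using small_move[OF al A(1)] True by auto
      then have "\<forall>\<delta>. 0 < \<delta> \<and> \<delta> < \<delta>0 \<longrightarrow> of_int i0 < x + \<alpha> * \<delta> \<and> x + \<alpha> * \<delta> < of_int i0 + A"
        using 3 by (auto simp: xf abs_less_iff)
      then show ?thesis using d(1) Z True by blast
    next
      case False
      then have an: "\<alpha> < 0" using al by simp
      obtain \<delta>0 where d: "\<delta>0 > 0" "\<forall>\<delta>. 0 < \<delta> \<and> \<delta> < \<delta>0 \<longrightarrow> \<bar>\<alpha> * \<delta>\<bar> < 1 - A \<and> \<alpha> * \<delta> < 0"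
        using small_move[OF al, of "1 - A"] A an by auto
      then show ?thesis using 3 an by (intro exI[of _ \<delta>0] conjI exI[of _ "i0 - 1"] disjI2) (auto simp: xf abs_less_iff)
    qed
  next
    case 4
    have Z: "ZA A x" unfolding ZA_def using 4 by (auto simp: xf)
    show ?thesis
    proof (cases "\<alpha> > 0")
      case True
      obtain \<delta>0 where d: "\<delta>0 > 0" "\<forall>\<delta>. 0 < \<delta> \<and> \<delta> < \<delta>0 \<longrightarrow> \<bar>\<alpha> * \<delta>\<bar> < 1 - A \<and> \<alpha> * \<delta> > 0"
        using small_move[OF al, of "1 - A"] True A by auto
      then show ?thesis using 4 True by (intro exI[of _ \<delta>0] conjI exI[of _ i0] disjI2) (auto simp: xf abs_less_iff)
    next
      case False
      then have an: "\<alpha> < 0" using al by simp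
      obtain \<delta>0 where d: "\<delta>0 > 0" "\<forall>\<delta>. 0 < \<delta> \<and> \<delta> < \<delta>0 \<longrightarrow> \<bar>\<alpha> * \<delta>\<bar> < A \<and> \<alpha> * \<delta> < 0"
        using small_move[OF al A(1)] an by auto
      then have "\<forall>\<delta>. 0 < \<delta> \<and> \<delta> < \<delta>0 \<longrightarrow> of_int i0 < x + \<alpha> * \<delta> \<and> x + \<alpha> * \<delta> < of_int i0 + A"
        using 4 by (auto simp: xf abs_less_iff)
      then show ?thesis using d(1) Z an by blast
    qed
  qed
qed



context wtp begin

lemma class_corner: "is_corner a b p \<Longrightarrow> wt_class a b (g', p) = wt_class a b (g, p)"
  by (auto simp: wt_class_def wt_eq_def)

lemma class_vflip: "on_vside a b p \<Longrightarrow> wt_class a b ((\<not> fst g, snd g), p) = wt_class a b (g, p)"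
proof -
  assume v: "on_vside a b p"
  then have nh: "\<not> on_hside a b p" "\<not> is_corner a b p"
    using II_not_EE[OF a0 a1] II_not_EE[OF b0 b1] by (auto simp: on_vside_iff on_hside_iff is_corner_iff)
  show ?thesis using v nh by (cases g) (auto simp: wt_class_def wt_eq_def)
qed

lemma class_hflip: "on_hside a b p \<Longrightarrow> wt_class a b ((fst g, \<not> snd g), p) = wt_class a b (g, p)"
proof -
  assume v: "on_hside a b p"
  then have nh: "\<not> on_vside a b p" "\<not> is_corner a b p"
    using II_not_EE[OF a0 a1] II_not_EE[OF b0 b1] by (auto simp: on_vside_iff on_hside_iff is_corner_iff)
  show ?thesis using v nh by (cases g) (auto simp: wt_class_def wt_eq_def)
qed

lemma Zi_EE: "Zi x \<Longrightarrow> EE A x" by (auto simp: Zi_def EE_def)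
lemma ZA_EE: "ZA A x \<Longrightarrow> EE A x" by (auto simp: ZA_def EE_def)
lemma Zi_ZA: "0 < A \<Longrightarrow> A < 1 \<Longrightarrow> Zi x \<Longrightarrow> \<not> ZA A x"
proof
  assume h: "0 < A" "A < 1" "Zi x" "ZA A x"
  from h(3) obtain M :: int where M: "x = of_int M" unfolding Zi_def by blast
  from h(4) obtain N :: int where N: "x = of_int N + A" unfolding ZA_def by blast
  from M N have "(of_int N::real) < of_int M" "(of_int M::real) < of_int N + 1" using h by auto
  then have "N < M" "M < N + 1" by linarith+
  then show False by linarith
qed

definition wv :: "bool \<times> bool \<Rightarrow> real \<times> real" where
  "wv g = (sg (fst g) * (- (s * c)), sg (snd g) * c)"

lemma sg_sq: "sg e * sg e = 1" by (simp add: sg_def)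

lemma choose_dir:
  assumes p: "p \<in> table_cl a b"
  shows "\<exists>g'. wt_class a b (g', p) = wt_class a b (g, p) \<and>
     (II a (fst p) \<or> (Zi (fst p) \<and> fst (wv g') > 0) \<or> (ZA a (fst p) \<and> fst (wv g') < 0) \<longrightarrow>
      II b (snd p) \<or> (Zi (snd p) \<and> snd (wv g') > 0) \<or> (ZA b (snd p) \<and> snd (wv g') < 0) \<longrightarrow> False)"
proof -
  obtain x y where pxy: "p = (x, y)" by (cases p)
  define cx where "cx = (EE a x \<and> (II b y \<or> EE b y))"
  define cy where "cy = (EE b y \<and> (II a x \<or> EE a x))"
  define g' where "g' = (if cx then ZA a x else fst g, if cy then \<not> ZA b y else snd g)"
  have sc: "s * c > 0" using s0 c0 by simp
  have wx: "fst (wv g') > 0 \<longleftrightarrow> fst g'" using sc by (auto simp: wv_def sg_def)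
  have wx': "fst (wv g') < 0 \<longleftrightarrow> \<not> fst g'" using sc by (auto simp: wv_def sg_def)
  have wy: "snd (wv g') > 0 \<longleftrightarrow> \<not> snd g'" using c0 by (auto simp: wv_def sg_def)
  have wy': "snd (wv g') < 0 \<longleftrightarrow> snd g'" using c0 by (auto simp: wv_def sg_def)
  have cl: "wt_class a b (g', p) = wt_class a b (g, p)"
  proof (cases "is_corner a b p")
    case True then show ?thesis by (rule class_corner)
  next
    case False
    have ncxy: "\<not> (cx \<and> cy)" using False by (auto simp: cx_def cy_def pxy is_corner_iff dest: II_not_EE[OF a0 a1] II_not_EE[OF b0 b1])
    show ?thesis
    proof (cases cx)
      case True
      then have v: "on_vside a b p" using False by (auto simp: cx_def pxy on_vside_iff is_corner_iff)
      have g'e: "g' = (ZA a x, snd g)" using True ncxy by (simp add: g'_def)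
      show ?thesis
      proof (cases "ZA a x = fst g")
        case True then show ?thesis using g'e by (cases g) simp
      next
        case False
        then have "g' = (\<not> fst g, snd g)" using g'e by auto
        then show ?thesis using class_vflip[OF v] by simp
      qed
    next
      case False
      show ?thesis
      proof (cases cy)
        case True
        then have v: "on_hside a b p" using \<open>\<not> is_corner a b p\<close> by (auto simp: cy_def pxy on_hside_iff is_corner_iff)
        have g'e: "g' = (fst g, \<not> ZA b y)" using True False by (simp add: g'_def)
        show ?thesis
        proof (cases "(\<not> ZA b y) = snd g")
          case True then show ?thesis using g'e by (cases g) simp
        next
          case False
          then have "g' = (fst g, \<not> snd g)" using g'e by auto
          then show ?thesis using class_hflip[OF v] by simp
        qed
      next
        case False
        then show ?thesis using \<open>\<not> cx\<close> by (simp add: g'_def)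
      qed
    qed
  qed
  have av: "(II a x \<or> (Zi x \<and> fst (wv g') > 0) \<or> (ZA a x \<and> fst (wv g') < 0) \<longrightarrow>
      II b y \<or> (Zi y \<and> snd (wv g') > 0) \<or> (ZA b y \<and> snd (wv g') < 0) \<longrightarrow> False)"
  proof (intro impI)
    assume X: "II a x \<or> (Zi x \<and> fst (wv g') > 0) \<or> (ZA a x \<and> fst (wv g') < 0)"
      and Y: "II b y \<or> (Zi y \<and> snd (wv g') > 0) \<or> (ZA b y \<and> snd (wv g') < 0)"
    have yc: "II b y \<or> EE b y" using Y by (auto intro: Zi_EE ZA_EE)
    have xc: "II a x \<or> EE a x" using X by (auto intro: Zi_EE ZA_EE)
    show False
    proof (cases "EE a x")
      case True
      then have "cx" using yc by (simp add: cx_def)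
      then have f: "fst g' = ZA a x" by (simp add: g'_def)
      have "\<not> II a x" using II_not_EE[OF a0 a1] True by blast
      then show False using X f wx wx' Zi_ZA[OF a0 a1] by auto
    next
      case False
      then have IIx: "II a x" using xc by simp
      show False
      proof (cases "EE b y")
        case True
        then have "cy" using IIx by (simp add: cy_def)
        then have f: "snd g' = (\<not> ZA b y)" by (simp add: g'_def)
        have "\<not> II b y" using II_not_EE[OF b0 b1] True by blast
        then show False using Y f wy wy' Zi_ZA[OF b0 b1] by auto
      next
        case False
        then have "II b y" using yc by simp
        then show False using IIx p by (simp add: table_cl_def in_obst_iff pxy)
      qed
    qed
  qed
  show ?thesis using cl av by (intro exI[of _ g']) (simp add: pxy)
qed

end


context wtp begin

lemma keyF_eval: "keyF g i (x - of_int i) y = (if LamF g i x y - of_int \<lfloor>LamF g i x y\<rfloor> < b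
     then (False, (False, snd g), i, \<lfloor>LamF g i x y\<rfloor> mod (2 * pp))
     else (True, g, 0, \<lfloor>LamF g i x y\<rfloor> + (if snd g then 1 else 0) - (if fst g = snd g then 1 else -1) * i * pp))"
  by (simp add: keyF_def LamF_def Let_def algebra_simps)

lemma keyC_eval: "\<lceil>y\<rceil> - 1 = r \<Longrightarrow> keyC g i (x - of_int i) y =
   (True, (fst g, hh < rhoC (vC g i r x y)), 0,
    if hh < rhoC (vC g i r x y) then r + 1 + (if fst g then - i else i) * pp else r - (if fst g then - i else i) * pp)"
  by (simp add: keyC_def vC_def rhoC_def Let_def)

lemma LamF_lin: "LamF g i (x + fst (wv g) * d) (y + snd (wv g) * d) = LamF g i x y + sg (snd g) * kap * d"
proof -
  have "LamF g i (x + fst (wv g) * d) (y + snd (wv g) * d) = LamF g i x y + d * sg (snd g) * c * (1 + s * s * (sg (fst g) * sg (fst g)))"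
    by (simp add: LamF_def wv_def algebra_simps)
  then show ?thesis by (simp add: sg_sq kap_def algebra_simps)
qed

lemma vC_lin: "vC g i r (x + fst (wv g) * d) (y + snd (wv g) * d) = vC g i r x y + kap * d"
proof -
  have "vC g i r (x + fst (wv g) * d) (y + snd (wv g) * d) = vC g i r x y + d * c * (sg (snd g) * sg (snd g) + s * s * (sg (fst g) * sg (fst g)))"
    by (cases "fst g"; cases "snd g") (simp_all add: vC_def wv_def sg_def algebra_simps)
  then show ?thesis by (simp add: sg_sq kap_def algebra_simps)
qed

lemma ray_main:
  assumes p: "p \<in> table_cl a b"
  shows "\<exists>g' l \<delta>0. \<delta>0 > 0 \<and> wt_class a b (g', p) = wt_class a b (g, p) \<and> l \<in> Canon \<and>
     (\<forall>\<delta>. 0 < \<delta> \<and> \<delta> < \<delta>0 \<longrightarrow> (fst p + fst (wv g') * \<delta>, snd p + snd (wv g') * \<delta>) \<in> table_cl a b \<and>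
        wt_class a b (g', (fst p + fst (wv g') * \<delta>, snd p + snd (wv g') * \<delta>)) \<in> Sl l)"
proof -
  obtain x y where pxy: "p = (x, y)" by (cases p)
  obtain g' where cl: "wt_class a b (g', p) = wt_class a b (g, p)"
    and av: "II a x \<or> (Zi x \<and> fst (wv g') > 0) \<or> (ZA a x \<and> fst (wv g') < 0) \<Longrightarrow>
      II b y \<or> (Zi y \<and> snd (wv g') > 0) \<or> (ZA b y \<and> snd (wv g') < 0) \<Longrightarrow> False"
    using choose_dir[OF p, of g] pxy by auto
  define \<alpha> where "\<alpha> = fst (wv g')"
  define \<beta> where "\<beta> = snd (wv g')"
  have al: "\<alpha> \<noteq> 0" using s0 c0 by (simp add: \<alpha>_def wv_def sg_def)
  have be: "\<beta> \<noteq> 0" using c0 by (simp add: \<beta>_def wv_def sg_def)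
  obtain \<delta>x i where dx: "\<delta>x > 0" and X: "((\<forall>\<delta>. 0 < \<delta> \<and> \<delta> < \<delta>x \<longrightarrow> of_int i < x + \<alpha> * \<delta> \<and> x + \<alpha> * \<delta> < of_int i + a) \<and>
         (II a x \<or> (Zi x \<and> \<alpha> > 0) \<or> (ZA a x \<and> \<alpha> < 0)))
   \<or> (\<forall>\<delta>. 0 < \<delta> \<and> \<delta> < \<delta>x \<longrightarrow> of_int i + a < x + \<alpha> * \<delta> \<and> x + \<alpha> * \<delta> < of_int i + 1)"
    using ray1[OF a0 a1 al, of x] by blast
  obtain \<delta>y r where dy: "\<delta>y > 0" and Y: "((\<forall>\<delta>. 0 < \<delta> \<and> \<delta> < \<delta>y \<longrightarrow> of_int r < y + \<beta> * \<delta> \<and> y + \<beta> * \<delta> < of_int r + b) \<and>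
         (II b y \<or> (Zi y \<and> \<beta> > 0) \<or> (ZA b y \<and> \<beta> < 0)))
   \<or> (\<forall>\<delta>. 0 < \<delta> \<and> \<delta> < \<delta>y \<longrightarrow> of_int r + b < y + \<beta> * \<delta> \<and> y + \<beta> * \<delta> < of_int r + 1)"
    using ray1[OF b0 b1 be, of y] by blast
  have pd: "\<And>\<delta>. (fst p + fst (wv g') * \<delta>, snd p + snd (wv g') * \<delta>) = (x + \<alpha> * \<delta>, y + \<beta> * \<delta>)"
    by (simp add: pxy \<alpha>_def \<beta>_def)
  show ?thesis
  proof (cases "\<forall>\<delta>. 0 < \<delta> \<and> \<delta> < \<delta>x \<longrightarrow> of_int i + a < x + \<alpha> * \<delta> \<and> x + \<alpha> * \<delta> < of_int i + 1")
    case True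
    define \<Lambda>0 where "\<Lambda>0 = LamF g' i x y"
    have sl: "sg (snd g') * kap \<noteq> 0" using kap0 by (simp add: sg_def)
    obtain \<delta>L n where dL: "\<delta>L > 0" and LL: "((\<forall>\<delta>. 0 < \<delta> \<and> \<delta> < \<delta>L \<longrightarrow> of_int n < \<Lambda>0 + sg (snd g') * kap * \<delta> \<and> \<Lambda>0 + sg (snd g') * kap * \<delta> < of_int n + b) \<and> True)
      \<or> (\<forall>\<delta>. 0 < \<delta> \<and> \<delta> < \<delta>L \<longrightarrow> of_int n + b < \<Lambda>0 + sg (snd g') * kap * \<delta> \<and> \<Lambda>0 + sg (snd g') * kap * \<delta> < of_int n + 1)"
      using ray1[OF b0 b1 sl, of \<Lambda>0] by blast
    define inL where "inL = (\<forall>\<delta>. 0 < \<delta> \<and> \<delta> < \<delta>L \<longrightarrow> of_int n < \<Lambda>0 + sg (snd g') * kap * \<delta> \<and> \<Lambda>0 + sg (snd g') * kap * \<delta> < of_int n + b)"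
    define l where "l = (if inL then (False, (False, snd g'), i, n mod (2 * pp))
       else (True, g', 0, n + (if snd g' then 1 else 0) - (if fst g' = snd g' then 1 else -1) * i * pp))"
    define \<delta>0 where "\<delta>0 = min \<delta>x \<delta>L"
    have d0: "\<delta>0 > 0" using dx dL by (simp add: \<delta>0_def)
    have main: "(x + \<alpha> * \<delta>, y + \<beta> * \<delta>) \<in> table_cl a b \<and> key (g', (x + \<alpha> * \<delta>, y + \<beta> * \<delta>)) \<in> Canon \<and>
        wt_class a b (g', (x + \<alpha> * \<delta>, y + \<beta> * \<delta>)) \<in> Sl (key (g', (x + \<alpha> * \<delta>, y + \<beta> * \<delta>))) \<and>
        key (g', (x + \<alpha> * \<delta>, y + \<beta> * \<delta>)) = l" if d: "0 < \<delta>" "\<delta> < \<delta>0" for \<delta>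
    proof -
      have xr: "of_int i + a < x + \<alpha> * \<delta>" "x + \<alpha> * \<delta> < of_int i + 1" using True d by (auto simp: \<delta>0_def)
      have tb: "(x + \<alpha> * \<delta>, y + \<beta> * \<delta>) \<in> table_cl a b" using xr by (intro table_free_shift[of i]) auto
      have Lm: "LamF g' i (x + \<alpha> * \<delta>) (y + \<beta> * \<delta>) = \<Lambda>0 + sg (snd g') * kap * \<delta>"
        using LamF_lin[of g' i x \<delta> y] by (simp add: \<alpha>_def \<beta>_def \<Lambda>0_def mult.commute)
      have Lr: "(of_int n < \<Lambda>0 + sg (snd g') * kap * \<delta> \<and> \<Lambda>0 + sg (snd g') * kap * \<delta> < of_int n + b \<and> inL) \<or>
                (of_int n + b < \<Lambda>0 + sg (snd g') * kap * \<delta> \<and> \<Lambda>0 + sg (snd g') * kap * \<delta> < of_int n + 1 \<and> \<not> inL)"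
      proof (cases inL)
        case True
        then show ?thesis using d unfolding inL_def \<delta>0_def by auto
      next
        case False
        then have "\<forall>\<delta>. 0 < \<delta> \<and> \<delta> < \<delta>L \<longrightarrow> of_int n + b < \<Lambda>0 + sg (snd g') * kap * \<delta> \<and> \<Lambda>0 + sg (snd g') * kap * \<delta> < of_int n + 1"
          using LL unfolding inL_def by blast
        then show ?thesis using d False unfolding \<delta>0_def by auto
      qed
      have fl: "\<lfloor>\<Lambda>0 + sg (snd g') * kap * \<delta>\<rfloor> = n" using Lr b0 b1 by (intro floor_unique) auto
      have gen: "genF i (g', (x + \<alpha> * \<delta>, y + \<beta> * \<delta>))"
        unfolding genF_def fst_conv snd_conv Lm fl using xr Lr b0 by auto
      have K: "key (g', (x + \<alpha> * \<delta>, y + \<beta> * \<delta>)) = l"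
        using key_free[of i "x + \<alpha> * \<delta>" g' "y + \<beta> * \<delta>"] xr keyF_eval[of g' i "x + \<alpha> * \<delta>" "y + \<beta> * \<delta>"] Lm fl Lr
        by (auto simp: l_def)
      show ?thesis using surjF[OF gen] tb K by simp
    qed
    show ?thesis
    proof (intro exI[of _ g'] exI[of _ l] exI[of _ \<delta>0] conjI allI impI)
      show "\<delta>0 > 0" by (rule d0)
      show "wt_class a b (g', p) = wt_class a b (g, p)" by (rule cl)
      show "l \<in> Canon" using main[of "\<delta>0 / 2"] d0 by auto
      fix \<delta> assume "0 < \<delta> \<and> \<delta> < \<delta>0"
      then show "(fst p + fst (wv g') * \<delta>, snd p + snd (wv g') * \<delta>) \<in> table_cl a b"
        "wt_class a b (g', (fst p + fst (wv g') * \<delta>, snd p + snd (wv g') * \<delta>)) \<in> Sl l"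
        using main[of \<delta>] unfolding pd by auto
    qed
  next
    case False
    then have Xin: "\<forall>\<delta>. 0 < \<delta> \<and> \<delta> < \<delta>x \<longrightarrow> of_int i < x + \<alpha> * \<delta> \<and> x + \<alpha> * \<delta> < of_int i + a"
      and Xinfo: "II a x \<or> (Zi x \<and> \<alpha> > 0) \<or> (ZA a x \<and> \<alpha> < 0)" using X by auto
    have Yout: "\<forall>\<delta>. 0 < \<delta> \<and> \<delta> < \<delta>y \<longrightarrow> of_int r + b < y + \<beta> * \<delta> \<and> y + \<beta> * \<delta> < of_int r + 1"
      using Y av Xinfo unfolding \<alpha>_def \<beta>_def by blast
    define v0 where "v0 = vC g' i r x y"
    have sl: "kap / (2 * hh) \<noteq> 0" using kap0 hh0 by simp
    have half: "(0::real) < 1 / 2" "(1::real) / 2 < 1" by simp_all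
    obtain \<delta>V N where dV: "\<delta>V > 0" and VV: "((\<forall>\<delta>. 0 < \<delta> \<and> \<delta> < \<delta>V \<longrightarrow> of_int N < v0 / (2 * hh) + kap / (2 * hh) * \<delta> \<and> v0 / (2 * hh) + kap / (2 * hh) * \<delta> < of_int N + 1 / 2) \<and> True)
      \<or> (\<forall>\<delta>. 0 < \<delta> \<and> \<delta> < \<delta>V \<longrightarrow> of_int N + 1 / 2 < v0 / (2 * hh) + kap / (2 * hh) * \<delta> \<and> v0 / (2 * hh) + kap / (2 * hh) * \<delta> < of_int N + 1)"
      using ray1[OF half sl, of "v0 / (2 * hh)"] by blast
    define inV where "inV = (\<forall>\<delta>. 0 < \<delta> \<and> \<delta> < \<delta>V \<longrightarrow> of_int N < v0 / (2 * hh) + kap / (2 * hh) * \<delta> \<and> v0 / (2 * hh) + kap / (2 * hh) * \<delta> < of_int N + 1 / 2)"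
    define M where "M = (if fst g' then - i else i)"
    define l where "l = (True, (fst g', \<not> inV), (0::int), if \<not> inV then r + 1 + M * pp else r - M * pp)"
    define \<delta>0 where "\<delta>0 = min \<delta>x (min \<delta>y \<delta>V)"
    have d0: "\<delta>0 > 0" using dx dy dV by (simp add: \<delta>0_def)
    have main: "(x + \<alpha> * \<delta>, y + \<beta> * \<delta>) \<in> table_cl a b \<and> key (g', (x + \<alpha> * \<delta>, y + \<beta> * \<delta>)) \<in> Canon \<and>
        wt_class a b (g', (x + \<alpha> * \<delta>, y + \<beta> * \<delta>)) \<in> Sl (key (g', (x + \<alpha> * \<delta>, y + \<beta> * \<delta>))) \<and>
        key (g', (x + \<alpha> * \<delta>, y + \<beta> * \<delta>)) = l" if d: "0 < \<delta>" "\<delta> < \<delta>0" for \<delta>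
    proof -
      have xr: "of_int i < x + \<alpha> * \<delta>" "x + \<alpha> * \<delta> < of_int i + a" using Xin d by (auto simp: \<delta>0_def)
      have yr: "of_int r + b < y + \<beta> * \<delta>" "y + \<beta> * \<delta> < of_int r + 1" using Yout d by (auto simp: \<delta>0_def)
      have tb: "(x + \<alpha> * \<delta>, y + \<beta> * \<delta>) \<in> table_cl a b" using yr by (intro table_corr[of r]) auto
      have vv: "vC g' i r (x + \<alpha> * \<delta>) (y + \<beta> * \<delta>) = v0 + kap * \<delta>"
        using vC_lin[of g' i r x \<delta> y] by (simp add: \<alpha>_def \<beta>_def v0_def mult.commute)
      have vq: "(v0 + kap * \<delta>) / (2 * hh) = v0 / (2 * hh) + kap / (2 * hh) * \<delta>" by (simp add: add_divide_distrib)
      define w where "w = v0 / (2 * hh) + kap / (2 * hh) * \<delta>"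
      have Vr0: "(of_int N < w \<and> w < of_int N + 1 / 2 \<and> inV) \<or>
                (of_int N + 1 / 2 < w \<and> w < of_int N + 1 \<and> \<not> inV)"
      proof (cases inV)
        case True
        then show ?thesis using d unfolding inV_def \<delta>0_def w_def by auto
      next
        case False
        then have "\<forall>\<delta>. 0 < \<delta> \<and> \<delta> < \<delta>V \<longrightarrow> of_int N + 1 / 2 < v0 / (2 * hh) + kap / (2 * hh) * \<delta> \<and> v0 / (2 * hh) + kap / (2 * hh) * \<delta> < of_int N + 1"
          using VV unfolding inV_def by blast
        then show ?thesis using d False unfolding \<delta>0_def w_def by auto
      qed
      have Vr: "(of_int N < (v0 + kap * \<delta>) / (2 * hh) \<and> (v0 + kap * \<delta>) / (2 * hh) < of_int N + 1 / 2 \<and> inV) \<or>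
                (of_int N + 1 / 2 < (v0 + kap * \<delta>) / (2 * hh) \<and> (v0 + kap * \<delta>) / (2 * hh) < of_int N + 1 \<and> \<not> inV)"
        using Vr0 unfolding w_def vq[symmetric] .
      have fl: "\<lfloor>(v0 + kap * \<delta>) / (2 * hh)\<rfloor> = N" using Vr by (intro floor_unique) auto
      have h2: "2 * hh > 0" using hh0 by simp
      have rho: "(0 < rhoC (v0 + kap * \<delta>) \<and> rhoC (v0 + kap * \<delta>) < hh \<and> inV) \<or> (hh < rhoC (v0 + kap * \<delta>) \<and> rhoC (v0 + kap * \<delta>) < 2 * hh \<and> \<not> inV)"
      proof -
        define u where "u = (v0 + kap * \<delta>) / (2 * hh)"
        define q where "q = u - of_int N"
        have vv2: "v0 + kap * \<delta> = 2 * hh * ((v0 + kap * \<delta>) / (2 * hh))" using hh0 by simp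
        have e: "rhoC (v0 + kap * \<delta>) = 2 * hh * q"
          unfolding rhoC_def fl q_def u_def by (subst vv2) (simp add: algebra_simps)
        have Vr': "(of_int N < u \<and> u < of_int N + 1 / 2 \<and> inV) \<or> (of_int N + 1 / 2 < u \<and> u < of_int N + 1 \<and> \<not> inV)"
          using Vr unfolding u_def[symmetric] .
        have qr: "(0 < q \<and> q < 1 / 2 \<and> inV) \<or> (1 / 2 < q \<and> q < 1 \<and> \<not> inV)"
          using Vr' unfolding q_def by auto
        have m1: "2 * hh * q < 2 * hh * (1 / 2)" if "q < 1 / 2" using that h2 by (rule mult_strict_left_mono)
        have m2: "2 * hh * (1 / 2) < 2 * hh * q" if "1 / 2 < q" using that h2 by (rule mult_strict_left_mono)
        have m3: "2 * hh * q < 2 * hh * 1" if "q < 1" using that h2 by (rule mult_strict_left_mono)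
        have m4: "0 < 2 * hh * q" if "0 < q" using that h2 by simp
        show ?thesis unfolding e using qr m1 m2 m3 m4 by auto
      qed
      have gen: "genC i r (g', (x + \<alpha> * \<delta>, y + \<beta> * \<delta>))"
        unfolding genC_def fst_conv snd_conv vv using xr yr rho by auto
      have rr: "\<lceil>y + \<beta> * \<delta>\<rceil> - 1 = r" using yr b0 by (intro ceil_in) auto
      have K: "key (g', (x + \<alpha> * \<delta>, y + \<beta> * \<delta>)) = l"
        using key_corr[of i "x + \<alpha> * \<delta>" g' "y + \<beta> * \<delta>"] xr keyC_eval[OF rr, of g' i "x + \<alpha> * \<delta>"] vv rho
        by (auto simp: l_def M_def)
      show ?thesis using surjC[OF gen] tb K by simp
    qed
    show ?thesis
    proof (intro exI[of _ g'] exI[of _ l] exI[of _ \<delta>0] conjI allI impI)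
      show "\<delta>0 > 0" by (rule d0)
      show "wt_class a b (g', p) = wt_class a b (g, p)" by (rule cl)
      show "l \<in> Canon" using main[of "\<delta>0 / 2"] d0 by auto
      fix \<delta> assume "0 < \<delta> \<and> \<delta> < \<delta>0"
      then show "(fst p + fst (wv g') * \<delta>, snd p + snd (wv g') * \<delta>) \<in> table_cl a b"
        "wt_class a b (g', (fst p + fst (wv g') * \<delta>, snd p + snd (wv g') * \<delta>)) \<in> Sl l"
        using main[of \<delta>] unfolding pd by auto
    qed
  qed
qed

end


lemma Xtop_is: "istopology (\<lambda>U. U \<subseteq> Xinf a b \<and>
      (\<forall>g. openin (top_of_set (table_cl a b)) {p \<in> table_cl a b. wt_class a b (g, p) \<in> U}))"
  unfolding istopology_def
proof (intro conjI allI impI ballI)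
  fix S T assume S: "S \<subseteq> Xinf a b \<and> (\<forall>g. openin (top_of_set (table_cl a b)) {p \<in> table_cl a b. wt_class a b (g, p) \<in> S})"
    and T: "T \<subseteq> Xinf a b \<and> (\<forall>g. openin (top_of_set (table_cl a b)) {p \<in> table_cl a b. wt_class a b (g, p) \<in> T})"
  show "S \<inter> T \<subseteq> Xinf a b" using S by auto
  fix g
  have eq: "{p \<in> table_cl a b. wt_class a b (g, p) \<in> S \<inter> T} =
        {p \<in> table_cl a b. wt_class a b (g, p) \<in> S} \<inter> {p \<in> table_cl a b. wt_class a b (g, p) \<in> T}" by auto
  have S': "openin (top_of_set (table_cl a b)) {p \<in> table_cl a b. wt_class a b (g, p) \<in> S}" using S by blast
  have T': "openin (top_of_set (table_cl a b)) {p \<in> table_cl a b. wt_class a b (g, p) \<in> T}" using T by blast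
  show "openin (top_of_set (table_cl a b)) {p \<in> table_cl a b. wt_class a b (g, p) \<in> S \<inter> T}"
    unfolding eq using openin_Int[OF S' T'] .
next
  fix K assume K: "\<forall>U\<in>K. U \<subseteq> Xinf a b \<and> (\<forall>g. openin (top_of_set (table_cl a b)) {p \<in> table_cl a b. wt_class a b (g, p) \<in> U})"
  show "\<Union>K \<subseteq> Xinf a b" using K by auto
  fix g
  have eq: "{p \<in> table_cl a b. wt_class a b (g, p) \<in> \<Union>K} = \<Union>((\<lambda>U. {p \<in> table_cl a b. wt_class a b (g, p) \<in> U}) ` K)" by auto
  have "\<forall>V\<in>(\<lambda>U. {p \<in> table_cl a b. wt_class a b (g, p) \<in> U}) ` K. openin (top_of_set (table_cl a b)) V"
    using K by blast
  then show "openin (top_of_set (table_cl a b)) {p \<in> table_cl a b. wt_class a b (g, p) \<in> \<Union>K}"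
    unfolding eq using openin_Union by blast
qed

lemma openin_Xtop: "openin (Xtop a b) U \<longleftrightarrow> U \<subseteq> Xinf a b \<and>
      (\<forall>g. openin (top_of_set (table_cl a b)) {p \<in> table_cl a b. wt_class a b (g, p) \<in> U})"
  unfolding Xtop_def using Xtop_is by simp

lemma Xinf_top: "z \<in> Xinf a b \<Longrightarrow> z \<in> topspace (Xtop a b)"
proof -
  assume z: "z \<in> Xinf a b"
  have "{p \<in> table_cl a b. wt_class a b (g, p) \<in> Xinf a b} = table_cl a b" for g
    by (auto simp: Xinf_def XR_def)
  then have "openin (Xtop a b) (Xinf a b)" by (simp add: openin_Xtop)
  then show ?thesis using z openin_subset by blast
qed

context wtp begin

lemma wv_norm: "sqrt ((fst (wv g))^2 + (snd (wv g))^2) = 1"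
proof -
  have "(fst (wv g))^2 + (snd (wv g))^2 = c * c * (1 + s * s) * (sg (fst g) * sg (fst g))"
    by (cases g) (auto simp: wv_def sg_def power2_eq_square algebra_simps)
  then show ?thesis using cs sg_sq by simp
qed

lemma cover: "z \<in> Xinf a b \<Longrightarrow> \<exists>S \<in> Sl ` Canon. z \<in> Xtop a b closure_of S"
proof -
  assume z: "z \<in> Xinf a b"
  then obtain g p where gp: "z = wt_class a b (g, p)" "p \<in> table_cl a b" by (auto simp: Xinf_def XR_def)
  obtain g' l \<delta>0 where d0: "\<delta>0 > 0" and cl: "wt_class a b (g', p) = wt_class a b (g, p)" and l: "l \<in> Canon"
    and R: "\<forall>\<delta>. 0 < \<delta> \<and> \<delta> < \<delta>0 \<longrightarrow> (fst p + fst (wv g') * \<delta>, snd p + snd (wv g') * \<delta>) \<in> table_cl a b \<and>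
        wt_class a b (g', (fst p + fst (wv g') * \<delta>, snd p + snd (wv g') * \<delta>)) \<in> Sl l"
    using ray_main[OF gp(2), of g] by blast
  have "z \<in> Xtop a b closure_of Sl l"
    unfolding in_closure_of
  proof (intro conjI allI impI)
    show "z \<in> topspace (Xtop a b)" using Xinf_top[OF z] .
    fix T assume T: "z \<in> T \<and> openin (Xtop a b) T"
    then have op: "openin (top_of_set (table_cl a b)) {p \<in> table_cl a b. wt_class a b (g', p) \<in> T}"
      unfolding openin_Xtop by blast
    have "p \<in> {p \<in> table_cl a b. wt_class a b (g', p) \<in> T}" using T gp cl by simp
    then obtain e where e: "e > 0" "\<forall>x'\<in>table_cl a b. dist x' p < e \<longrightarrow> x' \<in> {p \<in> table_cl a b. wt_class a b (g', p) \<in> T}"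
      using op unfolding openin_euclidean_subtopology_iff by blast
    define \<delta> where "\<delta> = min \<delta>0 e / 2"
    have d: "0 < \<delta>" "\<delta> < \<delta>0" "\<delta> < e" using d0 e by (auto simp: \<delta>_def)
    define q where "q = (fst p + fst (wv g') * \<delta>, snd p + snd (wv g') * \<delta>)"
    have dq: "dist q p = \<delta>"
    proof -
      have "dist q p = sqrt ((fst (wv g') * \<delta>)^2 + (snd (wv g') * \<delta>)^2)"
        by (cases p) (simp add: q_def dist_Pair_Pair dist_real_def)
      also have "\<dots> = sqrt (\<delta>^2 * ((fst (wv g'))^2 + (snd (wv g'))^2))" by (simp add: power_mult_distrib algebra_simps)
      also have "\<dots> = \<delta> * sqrt ((fst (wv g'))^2 + (snd (wv g'))^2)" using d by (simp add: real_sqrt_mult)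
      finally show ?thesis using wv_norm by simp
    qed
    have qt: "q \<in> table_cl a b" "wt_class a b (g', q) \<in> Sl l" using R d unfolding q_def by auto
    then have "wt_class a b (g', q) \<in> T" using e dq d by auto
    then show "\<exists>y. y \<in> Sl l \<and> y \<in> T" using qt by blast
  qed
  then show ?thesis using l by blast
qed

lemma decomp: "wt_strip_decomp a b th (Sl ` Canon)"
  unfolding wt_strip_decomp_def
proof (intro conjI ballI)
  show "\<And>S. S \<in> Sl ` Canon \<Longrightarrow> wt_strip a b th S" using Sl_strip by auto
  show "pairwise disjnt (Sl ` Canon)"
    unfolding pairwise_def disjnt_def
  proof (intro ballI impI)
    fix S T assume S: "S \<in> Sl ` Canon" and T: "T \<in> Sl ` Canon" and ne: "S \<noteq> T"
    obtain l where l: "l \<in> Canon" "S = Sl l" using S by blast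
    obtain l' where l': "l' \<in> Canon" "T = Sl l'" using T by blast
    show "S \<inter> T = {}"
    proof (rule ccontr)
      assume "S \<inter> T \<noteq> {}"
      then obtain C where "C \<in> Sl l" "C \<in> Sl l'" using l l' by blast
      then have "l = l'" using Sl_disj l(1) l'(1) by blast
      then show False using ne l l' by simp
    qed
  qed
  show "\<And>z. z \<in> Xinf a b \<Longrightarrow> \<exists>S\<in>Sl ` Canon. z \<in> Xtop a b closure_of S" using cover by blast
qed

end



theorem proposition5p6:
  fixes a b :: real
  assumes "(a, b) \<in> wt_E"
  shows "\<exists>\<theta> :: real. \<exists>\<S>. wt_strip_decomp a b \<theta> \<S>"
proof -
  obtain x y :: real and D :: int where ab: "0 < a" "a < 1" "0 < b" "b < 1"
    and xy: "x \<in> \<rat>" "y \<in> \<rat>" "D > 0"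
    and e1: "1 / (1 - a) = x + y * sqrt (of_int D)" and e2: "1 / (1 - b) = (1 - x) + y * sqrt (of_int D)"
    using assms unfolding wt_E_def by blast
  define r where "r = a / ((1 - a) * (1 - b))"
  have a1: "1 - a \<noteq> 0" "1 - b \<noteq> 0" using ab by auto
  have "a / (1 - a) = 1 / (1 - a) - 1" using a1 by (simp add: field_simps)
  then have ea: "a / (1 - a) = x - 1 + y * sqrt (of_int D)" using e1 by simp
  have "r = (a / (1 - a)) * (1 / (1 - b))" by (simp add: r_def)
  also have "\<dots> = (x - 1 + y * sqrt (of_int D)) * ((1 - x) + y * sqrt (of_int D))" using ea e2 by simp
  also have "\<dots> = y^2 * (sqrt (of_int D))^2 - (x - 1)^2" by (simp add: power2_eq_square algebra_simps)
  also have "\<dots> = y^2 * of_int D - (x - 1)^2" using xy by simp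
  finally have re: "r = y^2 * of_int D - (x - 1)^2" .
  have rQ: "r \<in> \<rat>" unfolding re using xy by (intro Rats_diff Rats_mult Rats_power) auto
  have r0: "r > 0" using ab by (simp add: r_def)
  obtain n d :: int where nd: "d > 0" "r = of_int n / of_int d" using Rats_cases'[OF rQ] by metis
  have n0: "n > 0"
  proof -
    have dd: "(of_int d::real) > 0" using nd by simp
    have "of_int n = r * of_int d" using nd dd by simp
    then have "(of_int n::real) > 0" using r0 dd by simp
    then show ?thesis by simp
  qed
  define pp where "pp = 2 * d"
  define qq where "qq = 2 * n"
  define s where "s = of_int pp / (1 - a)"
  define c where "c = 1 / sqrt (1 + s^2)"
  have sp: "s * (1 - a) = of_int pp" using a1 by (simp add: s_def)
  have sq: "s * a = of_int qq * (1 - b)"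
  proof -
    have "s * a = of_int pp * (a / (1 - a))" by (simp add: s_def)
    also have "a / (1 - a) = r * (1 - b)"
    proof -
      have "r * (1 - b) = a / (1 - a) * ((1 - b) / (1 - b))" by (simp add: r_def)
      then show ?thesis using a1 by simp
    qed
    finally have "s * a = of_int pp * r * (1 - b)" by simp
    also have "of_int pp * r = of_int qq" using nd by (simp add: pp_def qq_def)
    finally show ?thesis .
  qed
  have pos: "1 + s^2 > 0" by (simp add: add_pos_nonneg)
  have cs: "c * c * (1 + s * s) = 1"
  proof -
    have "c * c = (1 / sqrt (1 + s^2))^2" by (simp add: c_def power2_eq_square)
    also have "\<dots> = 1 / (sqrt (1 + s^2))^2" by (simp only: power_divide power_one)
    also have "\<dots> = 1 / (1 + s^2)" using pos by simp
    finally have "c * c = 1 / (1 + s^2)" .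
    then show ?thesis using pos by (simp add: power2_eq_square)
  qed
  interpret W: wtp a b s c "arctan s" pp qq
  proof
    show "0 < a" "a < 1" "0 < b" "b < 1" by (rule ab)+
    show "pp \<ge> 1" using nd by (simp add: pp_def)
    show "even qq" by (simp add: qq_def)
    show "qq > 0" using n0 by (simp add: qq_def)
    show "s * (1 - a) = of_int pp" by (rule sp)
    show "s * a = of_int qq * (1 - b)" by (rule sq)
    show "c > 0" using pos by (simp add: c_def)
    show "c * c * (1 + s * s) = 1" by (rule cs)
    show "cos (arctan s) = c" by (simp add: cos_arctan c_def)
    show "sin (arctan s) = s * c" by (simp add: sin_arctan c_def)
  qed
  show ?thesis using W.decomp by blast
qed


end
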